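(* Let $G$ be a compact Hausdorff group and $\hat G$ a complete set of pairwise non-isomorphic irreducible unitary representations of $G$. Fix data $y^{(1)},\ldots,y^{(n)}\in L^2(G)$ (real-valued), $q\ge1$, $\lambda\ge0$ and real constants $\mu_1,\ldots,\mu_q$. Let $\hat\Phi^{\hat G}$ be an optimal dictionary for the problem $\mathcal P(\hat G)$ and suppose it is canonically unique. Let $\hat H_1\subseteq\hat H_2\subseteq\cdots\subseteq\hat G$ with $\bigcup_k\hat H_k=\hat G$, and for each $k$ let $\hat\Phi^{\hat H_k}$ be an optimal dictionary of $\mathcal P(\hat H_k)$, embedded into $L^2(\hat G)$. Then $D(\hat\Phi^{\hat H_k},\hat\Phi^{\hat G})\to0$ as $k\to\infty$.
   Context: $\mu$ is normalized Haar measure; each $\xi\in\hat G$ is $\rho_\xi:G\to U(V_\xi)$, $d_\xi=\dim V_\xi<\infty$. Fourier coefficients $\hat f_\xi=\int_G f(g)\rho_\xi(g)^*d\mu(g)$; $\|f\|_2^2=\sum_\xi d_\xi^2\|\hat f_\xi\|_F^2$. For $\hat H\subseteq\hat G$, $L^2(\hat H)$ = functions with $\hat f_\xi=0$ for $\xi\notin\hat H$. $B(L^2(\hat H))$ = block-diagonal operators $\ell=(\ell_\xi)_{\xi\in\hat H}$ acting by $\hat f_\xi\mapsto\hat f_\xi\ell_\xi^*$. Atomic norm $\|z\|_{\hat G}=\inf\{t\ge0:z\in t\cdot\mathrm{cl}\,\mathrm{conv}\{\pm(\rho_\xi(g))_{\xi\in\hat G}:g\in G\}\}$; $P_{\hat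 H}(z)=(z_\xi)_{\xi\in\hat H}$; $\|t\|^+_{\hat H}=\inf\{\|z\|_{\hat G}:z\in B(L^2(\hat G)),P_{\hat H}(z)=t\}$. Problem $\mathcal P(\hat H)$: minimize over dictionaries $\hat\Phi=\{\hat\phi_1,\dots,\hat\phi_q\}\subset L^2(\hat H)$ and operators $\ell^{(i)}_j\in B(L^2(\hat H))$ the objective $\sum_{i=1}^n\big(\sum_{\xi\in\hat H}\frac{d_\xi^2}{2}\|\hat y^{(i)}_\xi-\sum_{j}\hat\phi_{j,\xi}(\ell^{(i)}_{j,\xi})^*\|_F^2+\lambda\sum_j\|\ell^{(i)}_j\|^+_{\hat H}\big)+\sum_j\mu_j\sum_{\xi\in\hat H}d_\xi^2\|\hat\phi_{j,\xi}\|_F^2$, with infimum $\mathrm{OPT}\text{-}\hat H$; an optimal dictionary is the dictionary part of a minimizer. Distance between dictionaries: $D(\Phi,\tilde\Phi)=\min_{\pi,\,g_1,\ldots,g_q\in G}\max_j\|\phi_j-\tau(g_j)\tilde\phi_{\pi(j)}\|_2$, where $\pi$ ranges over permutations of $\{1,\dots,q\}$ and $[\tau(g)f](x)=f(g^{-1}x)$. Canonical uniqueness: an optimal dictionary $\hat\Phi$ of $\mathcal P(\hat G)$ is canonically unique if there is a function $\delta$ with $\delta(\epsilon)\downarrow0$ as $\epsilon\downarrow0$ such that every dictionary $\tilde\Phi$ attaining objective value $\mathrm{OPT}\text{-}\hat G+\epsilon$ in $\mathcal P(\hat G)$ (with some choice of operators) satisfies $D(\hat\Phi,\tilde\Phi)\le\delta(\epsilon)$.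 *)

theory Defs
  imports "HOL-Analysis.Analysis" "HOL-Combinatorics.Permutations" "Jordan_Normal_Form.Matrix"
begin

definition compact_hausdorff_group ::
  "('g::t2_space \<Rightarrow> 'g \<Rightarrow> 'g) \<Rightarrow> ('g \<Rightarrow> 'g) \<Rightarrow> 'g \<Rightarrow> bool" where
  "compact_hausdorff_group gmul ginv e \<longleftrightarrow>
     (\<forall>x y z. gmul (gmul x y) z = gmul x (gmul y z)) \<and>
     (\<forall>x. gmul e x = x \<and> gmul x e = x) \<and>
     (\<forall>x. gmul (ginv x) x = e \<and> gmul x (ginv x) = e) \<and>
     continuous_on UNIV (\<lambda>p. gmul (fst p) (snd p)) \<and>
     continuous_on UNIV ginv \<and>
     compact (UNIV :: 'g set)"

text \<open>Normalized Haar measure: a (Radon) Borel probability measure invariant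
  under left translations (on a compact group it is automatically also
  right invariant; we state both).\<close>

definition normalized_haar ::
  "('g::t2_space \<Rightarrow> 'g \<Rightarrow> 'g) \<Rightarrow> 'g measure \<Rightarrow> bool" where
  "normalized_haar gmul M \<longleftrightarrow>
     sets M = sets borel \<and> emeasure M UNIV = 1 \<and>
     (\<forall>g. distr M M (\<lambda>x. gmul g x) = M) \<and>
     (\<forall>g. distr M M (\<lambda>x. gmul x g) = M) \<and>
     (\<forall>A\<in>sets M. emeasure M A = (SUP K\<in>{K. compact K \<and> K \<subseteq> A}. emeasure M K))"

definition cadj :: "complex mat \<Rightarrow> complex mat" where
  "cadj A = mat (dim_col A) (dim_row A) (\<lambda>(i,j). cnj (A $$ (j,i)))"

definition frob_norm :: "complex mat \<Rightarrow> real" where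
  "frob_norm A = sqrt (\<Sum>i<dim_row A. \<Sum>j<dim_col A. (cmod (A $$ (i,j)))\<^sup>2)"

definition cvec_norm :: "complex vec \<Rightarrow> real" where
  "cvec_norm v = sqrt (\<Sum>i<dim_vec v. (cmod (v $ i))\<^sup>2)"

definition unitary_rep ::
  "('g::topological_space \<Rightarrow> 'g \<Rightarrow> 'g) \<Rightarrow> nat \<Rightarrow> ('g \<Rightarrow> complex mat) \<Rightarrow> bool" where
  "unitary_rep gmul n \<sigma> \<longleftrightarrow>
     (\<forall>g. \<sigma> g \<in> carrier_mat n n) \<and>
     (\<forall>g h. \<sigma> (gmul g h) = \<sigma> g * \<sigma> h) \<and>
     (\<forall>g. \<sigma> g * cadj (\<sigma> g) = 1\<^sub>m n \<and> cadj (\<sigma> g) * \<sigma> g = 1\<^sub>m n) \<and>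
     (\<forall>a<n. \<forall>b<n. continuous_on UNIV (\<lambda>g. \<sigma> g $$ (a,b)))"

definition invariant_subspace :: "nat \<Rightarrow> ('g \<Rightarrow> complex mat) \<Rightarrow> complex vec set \<Rightarrow> bool" where
  "invariant_subspace n \<sigma> W \<longleftrightarrow>
     W \<subseteq> carrier_vec n \<and> 0\<^sub>v n \<in> W \<and>
     (\<forall>v\<in>W. \<forall>w\<in>W. v + w \<in> W) \<and> (\<forall>c. \<forall>v\<in>W. c \<cdot>\<^sub>v v \<in> W) \<and>
     (\<forall>g. \<forall>v\<in>W. \<sigma> g *\<^sub>v v \<in> W)"

definition irreducible_rep :: "nat \<Rightarrow> ('g \<Rightarrow> complex mat) \<Rightarrow> bool" where
  "irreducible_rep n \<sigma> \<longleftrightarrow> n \<ge> 1 \<and>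
     (\<forall>W. invariant_subspace n \<sigma> W \<longrightarrow> W = {0\<^sub>v n} \<or> W = carrier_vec n)"

definition rep_iso :: "nat \<Rightarrow> ('g \<Rightarrow> complex mat) \<Rightarrow> nat \<Rightarrow> ('g \<Rightarrow> complex mat) \<Rightarrow> bool" where
  "rep_iso n \<sigma> m \<tau> \<longleftrightarrow> n = m \<and>
     (\<exists>A\<in>carrier_mat n n. invertible_mat A \<and> (\<forall>g. A * \<sigma> g = \<tau> g * A))"

text \<open>\<open>\<rho>\<close>, \<open>d\<close> indexed by the type 'x form a complete set of pairwise
  non-isomorphic irreducible unitary representations (the dual \<open>\<hat>G\<close> = UNIV :: 'x set).
  Irreducible unitary representations of a compact group are finite-dimensional,
  so completeness is stated w.r.t. finite-dimensional ones.\<close>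

definition complete_dual ::
  "('g::topological_space \<Rightarrow> 'g \<Rightarrow> 'g) \<Rightarrow> ('x \<Rightarrow> nat) \<Rightarrow> ('x \<Rightarrow> 'g \<Rightarrow> complex mat) \<Rightarrow> bool" where
  "complete_dual gmul d \<rho> \<longleftrightarrow>
     (\<forall>\<xi>. unitary_rep gmul (d \<xi>) (\<rho> \<xi>) \<and> irreducible_rep (d \<xi>) (\<rho> \<xi>)) \<and>
     (\<forall>\<xi> \<eta>. \<xi> \<noteq> \<eta> \<longrightarrow> \<not> rep_iso (d \<xi>) (\<rho> \<xi>) (d \<eta>) (\<rho> \<eta>)) \<and>
     (\<forall>n \<sigma>. unitary_rep gmul n \<sigma> \<and> irreducible_rep n \<sigma> \<longrightarrow>
        (\<exists>\<xi>. rep_iso (d \<xi>) (\<rho> \<xi>) n \<sigma>))"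

definition in_L2 :: "'g measure \<Rightarrow> ('g \<Rightarrow> complex) \<Rightarrow> bool" where
  "in_L2 M f \<longleftrightarrow> f \<in> borel_measurable M \<and> integrable M (\<lambda>x. (cmod (f x))\<^sup>2)"

definition L2_norm :: "'g measure \<Rightarrow> ('g \<Rightarrow> complex) \<Rightarrow> real" where
  "L2_norm M f = sqrt (\<integral>x. (cmod (f x))\<^sup>2 \<partial>M)"

text \<open>\<open>\<hat>f\<^sub>\<xi> = \<integral> f(g) \<rho>\<^sub>\<xi>(g)\<^sup>* d\<mu>(g)\<close>, entrywise.\<close>

definition fourier ::
  "'g measure \<Rightarrow> ('x \<Rightarrow> nat) \<Rightarrow> ('x \<Rightarrow> 'g \<Rightarrow> complex mat) \<Rightarrow> ('g \<Rightarrow> complex) \<Rightarrow> 'x \<Rightarrow> complex mat" where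
  "fourier M d \<rho> f \<xi> = mat (d \<xi>) (d \<xi>) (\<lambda>(a,b). \<integral>x. f x * cnj (\<rho> \<xi> x $$ (b,a)) \<partial>M)"

text \<open>\<open>L\<^sup>2(\<hat>H)\<close>: functions in \<open>L\<^sup>2(G)\<close> whose Fourier coefficients vanish outside \<open>\<hat>H\<close>.\<close>

definition in_L2_H ::
  "'g measure \<Rightarrow> ('x \<Rightarrow> nat) \<Rightarrow> ('x \<Rightarrow> 'g \<Rightarrow> complex mat) \<Rightarrow> 'x set \<Rightarrow> ('g \<Rightarrow> complex) \<Rightarrow> bool" where
  "in_L2_H M d \<rho> H f \<longleftrightarrow> in_L2 M f \<and> (\<forall>\<xi>. \<xi> \<notin> H \<longrightarrow> fourier M d \<rho> f \<xi> = 0\<^sub>m (d \<xi>) (d \<xi>))"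

definition transl :: "('g \<Rightarrow> 'g \<Rightarrow> 'g) \<Rightarrow> ('g \<Rightarrow> 'g) \<Rightarrow> 'g \<Rightarrow> ('g \<Rightarrow> complex) \<Rightarrow> 'g \<Rightarrow> complex" where
  "transl gmul ginv g f = (\<lambda>x. f (gmul (ginv g) x))"

text \<open>An element of \<open>B(L\<^sup>2(\<hat>H))\<close>: a family of blocks \<open>\<ell>\<^sub>\<xi>\<close> (\<open>d\<^sub>\<xi> \<times> d\<^sub>\<xi>\<close>), indexed by
  \<open>\<xi> \<in> \<hat>H\<close> (blocks outside \<open>\<hat>H\<close> are set to 0 by convention), with uniformly bounded
  operator norms.\<close>

definition block_op :: "('x \<Rightarrow> nat) \<Rightarrow> 'x set \<Rightarrow> ('x \<Rightarrow> complex mat) \<Rightarrow> bool" where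
  "block_op d H l \<longleftrightarrow>
     (\<forall>\<xi>. l \<xi> \<in> carrier_mat (d \<xi>) (d \<xi>)) \<and>
     (\<forall>\<xi>. \<xi> \<notin> H \<longrightarrow> l \<xi> = 0\<^sub>m (d \<xi>) (d \<xi>)) \<and>
     (\<exists>C. \<forall>\<xi>\<in>H. \<forall>v\<in>carrier_vec (d \<xi>). cvec_norm (l \<xi> *\<^sub>v v) \<le> C * cvec_norm v)"

definition atoms :: "('x \<Rightarrow> 'g \<Rightarrow> complex mat) \<Rightarrow> ('x \<Rightarrow> complex mat) set" where
  "atoms \<rho> = {(\<lambda>\<xi>. \<rho> \<xi> g) | g. True} \<union> {(\<lambda>\<xi>. (-1) \<cdot>\<^sub>m \<rho> \<xi> g) | g. True}"

definition block_conv :: "('x \<Rightarrow> nat) \<Rightarrow> ('x \<Rightarrow> complex mat) set \<Rightarrow> ('x \<Rightarrow> complex mat) set" where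
  "block_conv d S = {z. \<exists>(m::nat) c a. (\<forall>k<m. c k \<ge> (0::real) \<and> a k \<in> S) \<and> (\<Sum>k<m. c k) = 1 \<and>
       z = (\<lambda>\<xi>. mat (d \<xi>) (d \<xi>) (\<lambda>(i,j). \<Sum>k<m. complex_of_real (c k) * (a k \<xi> $$ (i,j))))}"

text \<open>Closure in the topology of blockwise (coordinatewise) convergence, which on
  bounded sets coincides with the weak-* topology of \<open>B(L\<^sup>2(\<hat>G))\<close>.\<close>

definition block_closure :: "('x \<Rightarrow> nat) \<Rightarrow> ('x \<Rightarrow> complex mat) set \<Rightarrow> ('x \<Rightarrow> complex mat) set" where
  "block_closure d S = {z. (\<forall>\<xi>. z \<xi> \<in> carrier_mat (d \<xi>) (d \<xi>)) \<and>
       (\<forall>F \<epsilon>. finite F \<and> \<epsilon> > 0 \<longrightarrow>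
          (\<exists>w\<in>S. \<forall>\<xi>\<in>F. \<forall>i<d \<xi>. \<forall>j<d \<xi>. cmod (z \<xi> $$ (i,j) - w \<xi> $$ (i,j)) < \<epsilon>))}"

definition atomic_norm :: "('x \<Rightarrow> nat) \<Rightarrow> ('x \<Rightarrow> 'g \<Rightarrow> complex mat) \<Rightarrow> ('x \<Rightarrow> complex mat) \<Rightarrow> ereal" where
  "atomic_norm d \<rho> z = Inf {ereal t | t. t \<ge> 0 \<and>
       (\<exists>w\<in>block_closure d (block_conv d (atoms \<rho>)). z = (\<lambda>\<xi>. complex_of_real t \<cdot>\<^sub>m w \<xi>))}"

definition plus_norm :: "('x \<Rightarrow> nat) \<Rightarrow> ('x \<Rightarrow> 'g \<Rightarrow> complex mat) \<Rightarrow> 'x set \<Rightarrow> ('x \<Rightarrow> complex mat) \<Rightarrow> ereal" where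
  "plus_norm d \<rho> H t = Inf {atomic_norm d \<rho> z | z. block_op d UNIV z \<and> (\<forall>\<xi>\<in>H. z \<xi> = t \<xi>)}"

text \<open>Dictionaries: \<open>\<phi> j\<close> for \<open>j < q\<close>; operators: \<open>l i j\<close> for \<open>i < n\<close>, \<open>j < q\<close>;
  data: \<open>y i\<close> for \<open>i < n\<close>.\<close>

definition feasible ::
  "'g measure \<Rightarrow> ('x \<Rightarrow> nat) \<Rightarrow> ('x \<Rightarrow> 'g \<Rightarrow> complex mat) \<Rightarrow> nat \<Rightarrow> nat \<Rightarrow> 'x set \<Rightarrow>
   (nat \<Rightarrow> 'g \<Rightarrow> complex) \<Rightarrow> (nat \<Rightarrow> nat \<Rightarrow> 'x \<Rightarrow> complex mat) \<Rightarrow> bool" where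
  "feasible M d \<rho> n q H \<phi> l \<longleftrightarrow>
     (\<forall>j<q. in_L2_H M d \<rho> H (\<phi> j)) \<and> (\<forall>i<n. \<forall>j<q. block_op d H (l i j))"

definition objective ::
  "'g measure \<Rightarrow> ('x \<Rightarrow> nat) \<Rightarrow> ('x \<Rightarrow> 'g \<Rightarrow> complex mat) \<Rightarrow> nat \<Rightarrow> (nat \<Rightarrow> 'g \<Rightarrow> real) \<Rightarrow>
   nat \<Rightarrow> real \<Rightarrow> (nat \<Rightarrow> real) \<Rightarrow> 'x set \<Rightarrow>
   (nat \<Rightarrow> 'g \<Rightarrow> complex) \<Rightarrow> (nat \<Rightarrow> nat \<Rightarrow> 'x \<Rightarrow> complex mat) \<Rightarrow> ereal" where
  "objective M d \<rho> n y q lam \<mu> H \<phi> l =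
     (\<Sum>i<n.
        enn2ereal (\<Sum>\<^sub>\<infinity>\<xi>\<in>H. ennreal ((real (d \<xi>))\<^sup>2 / 2 *
           (frob_norm (mat (d \<xi>) (d \<xi>) (\<lambda>ab.
              fourier M d \<rho> (\<lambda>x. complex_of_real (y i x)) \<xi> $$ ab -
              (\<Sum>j<q. (fourier M d \<rho> (\<phi> j) \<xi> * cadj (l i j \<xi>)) $$ ab))))\<^sup>2))
        + ereal lam * (\<Sum>j<q. plus_norm d \<rho> H (l i j)))
     + (\<Sum>j<q. ereal (\<mu> j) *
          enn2ereal (\<Sum>\<^sub>\<infinity>\<xi>\<in>H. ennreal ((real (d \<xi>))\<^sup>2 * (frob_norm (fourier M d \<rho> (\<phi> j) \<xi>))\<^sup>2)))"

definition OPT ::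
  "'g measure \<Rightarrow> ('x \<Rightarrow> nat) \<Rightarrow> ('x \<Rightarrow> 'g \<Rightarrow> complex mat) \<Rightarrow> nat \<Rightarrow> (nat \<Rightarrow> 'g \<Rightarrow> real) \<Rightarrow>
   nat \<Rightarrow> real \<Rightarrow> (nat \<Rightarrow> real) \<Rightarrow> 'x set \<Rightarrow> ereal" where
  "OPT M d \<rho> n y q lam \<mu> H =
     Inf {objective M d \<rho> n y q lam \<mu> H \<phi> l | \<phi> l. feasible M d \<rho> n q H \<phi> l}"

definition optimal_dictionary ::
  "'g measure \<Rightarrow> ('x \<Rightarrow> nat) \<Rightarrow> ('x \<Rightarrow> 'g \<Rightarrow> complex mat) \<Rightarrow> nat \<Rightarrow> (nat \<Rightarrow> 'g \<Rightarrow> real) \<Rightarrow>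
   nat \<Rightarrow> real \<Rightarrow> (nat \<Rightarrow> real) \<Rightarrow> 'x set \<Rightarrow> (nat \<Rightarrow> 'g \<Rightarrow> complex) \<Rightarrow> bool" where
  "optimal_dictionary M d \<rho> n y q lam \<mu> H \<phi> \<longleftrightarrow>
     (\<exists>l. feasible M d \<rho> n q H \<phi> l \<and>
          objective M d \<rho> n y q lam \<mu> H \<phi> l = OPT M d \<rho> n y q lam \<mu> H)"

definition dict_dist ::
  "('g \<Rightarrow> 'g \<Rightarrow> 'g) \<Rightarrow> ('g \<Rightarrow> 'g) \<Rightarrow> 'g measure \<Rightarrow> nat \<Rightarrow>
   (nat \<Rightarrow> 'g \<Rightarrow> complex) \<Rightarrow> (nat \<Rightarrow> 'g \<Rightarrow> complex) \<Rightarrow> real" where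
  "dict_dist gmul ginv M q \<phi> \<psi> =
     Inf {Max ((\<lambda>j. L2_norm M (\<lambda>x. \<phi> j x - transl gmul ginv (gs j) (\<psi> (\<pi> j)) x)) ` {..<q})
          | \<pi> gs. \<pi> permutes {..<q}}"

definition canonically_unique ::
  "('g \<Rightarrow> 'g \<Rightarrow> 'g) \<Rightarrow> ('g \<Rightarrow> 'g) \<Rightarrow> 'g measure \<Rightarrow> ('x \<Rightarrow> nat) \<Rightarrow> ('x \<Rightarrow> 'g \<Rightarrow> complex mat) \<Rightarrow>
   nat \<Rightarrow> (nat \<Rightarrow> 'g \<Rightarrow> real) \<Rightarrow> nat \<Rightarrow> real \<Rightarrow> (nat \<Rightarrow> real) \<Rightarrow> (nat \<Rightarrow> 'g \<Rightarrow> complex) \<Rightarrow> bool" where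
  "canonically_unique gmul ginv M d \<rho> n y q lam \<mu> \<Phi> \<longleftrightarrow>
     (\<exists>\<delta>::real \<Rightarrow> real. (\<delta> \<longlongrightarrow> 0) (at_right 0) \<and>
        (\<forall>\<epsilon>\<ge>0. \<forall>\<psi> l. feasible M d \<rho> n q UNIV \<psi> l \<and>
            objective M d \<rho> n y q lam \<mu> UNIV \<psi> l = OPT M d \<rho> n y q lam \<mu> UNIV + ereal \<epsilon>
            \<longrightarrow> dict_dist gmul ginv M q \<Phi> \<psi> \<le> \<delta> \<epsilon>))"

end

theory Submission
  imports Defs "Jordan_Normal_Form.Spectral_Radius"
begin

section \<open>Conjugate transpose\<close>

lemma cadj_carrier[simp]: "A \<in> carrier_mat n m \<Longrightarrow> cadj A \<in> carrier_mat m n"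
  by (auto simp: cadj_def)

lemma cadj_dim[simp]: "dim_row (cadj A) = dim_col A" "dim_col (cadj A) = dim_row A"
  by (auto simp: cadj_def)

lemma cadj_index[simp]: "i < dim_col A \<Longrightarrow> j < dim_row A \<Longrightarrow> cadj A $$ (i,j) = cnj (A $$ (j,i))"
  by (auto simp: cadj_def)

lemma cadj_cadj[simp]: "cadj (cadj A) = A"
  by (rule eq_matI) auto

lemma cadj_mult:
  assumes "A \<in> carrier_mat n k" "B \<in> carrier_mat k m"
  shows "cadj (A * B) = cadj B * cadj A"
  using assms by (intro eq_matI) (auto simp: scalar_prod_def row_def col_def mult.commute)

lemma cadj_one[simp]: "cadj (1\<^sub>m n) = 1\<^sub>m n"
  by (rule eq_matI) auto

lemma cadj_zero[simp]: "cadj (0\<^sub>m n m) = 0\<^sub>m m n"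
  by (rule eq_matI) auto

lemma cadj_smult: "cadj (c \<cdot>\<^sub>m A) = cnj c \<cdot>\<^sub>m cadj A"
  by (rule eq_matI) auto



locale chg =
  fixes gmul :: "'g::t2_space \<Rightarrow> 'g \<Rightarrow> 'g" and ginv :: "'g \<Rightarrow> 'g" and e :: 'g
    and M :: "'g measure"
    and d :: "'x \<Rightarrow> nat" and \<rho> :: "'x \<Rightarrow> 'g \<Rightarrow> complex mat"
  assumes grp: "compact_hausdorff_group gmul ginv e"
    and haar: "normalized_haar gmul M"
    and dual: "complete_dual gmul d \<rho>"
begin

lemma assoc: "gmul (gmul x y) z = gmul x (gmul y z)"
  using grp by (simp add: compact_hausdorff_group_def)
lemma lunit[simp]: "gmul e x = x" and runit[simp]: "gmul x e = x"
  using grp by (simp_all add: compact_hausdorff_group_def)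
lemma linv[simp]: "gmul (ginv x) x = e" and rinv[simp]: "gmul x (ginv x) = e"
  using grp by (simp_all add: compact_hausdorff_group_def)

lemma cancel1[simp]: "gmul (ginv g) (gmul g x) = x"
  by (metis assoc linv lunit)
lemma cancel2[simp]: "gmul g (gmul (ginv g) x) = x"
  by (metis assoc rinv lunit)

lemma ginv_mul: "ginv (gmul g h) = gmul (ginv h) (ginv g)"
proof -
  have "gmul (gmul (ginv h) (ginv g)) (gmul g h) = e"
    by (metis assoc cancel1 linv)
  then show ?thesis
    by (metis assoc linv lunit runit rinv)
qed

lemma ginv_ginv[simp]: "ginv (ginv g) = g"
  by (metis assoc linv lunit runit rinv)

lemma sets_M: "sets M = sets borel"
  using haar by (simp add: normalized_haar_def)
lemma space_M[simp]: "space M = UNIV"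
  using sets_eq_imp_space_eq[OF sets_M] by simp
lemma emeasure_UNIV: "emeasure M UNIV = 1"
  using haar by (simp add: normalized_haar_def)

lemma finite_M: "finite_measure M"
  by (rule finite_measureI) (simp add: emeasure_UNIV)

lemma measure_UNIV: "measure M UNIV = 1"
  by (simp add: emeasure_UNIV measure_def)

lemma cont_measurable: "continuous_on UNIV f \<Longrightarrow> f \<in> borel_measurable M"
  using borel_measurable_continuous_onI measurable_cong_sets[OF sets_M refl] by blast

lemma gmul_cont: "continuous_on UNIV (gmul g)"
proof -
  have c: "continuous_on UNIV (\<lambda>p. gmul (fst p) (snd p))"
    using grp by (simp add: compact_hausdorff_group_def)
  have "continuous_on UNIV ((\<lambda>p. gmul (fst p) (snd p)) \<circ> (\<lambda>x. (g, x)))"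
    by (rule continuous_on_compose) (auto intro!: continuous_intros continuous_on_subset[OF c])
  then show ?thesis by (simp add: o_def)
qed

lemma gmul_meas: "gmul g \<in> measurable M M"
proof -
  have "gmul g \<in> measurable borel borel"
    using borel_measurable_continuous_onI[OF gmul_cont] .
  then show ?thesis using measurable_cong_sets[OF sets_M sets_M] by simp
qed

lemma integral_transl:
  fixes f :: "'g \<Rightarrow> 'b::{banach, second_countable_topology}"
  assumes f: "f \<in> borel_measurable M"
  shows "(\<integral>x. f (gmul g x) \<partial>M) = (\<integral>x. f x \<partial>M)"
proof -
  have "distr M M (gmul g) = M" using haar by (simp add: normalized_haar_def)
  then show ?thesis using integral_distr[OF gmul_meas f, of g] by simp
qed

lemma integrable_bounded:
  fixes f :: "'g \<Rightarrow> 'b::{banach, second_countable_topology}"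
  assumes "f \<in> borel_measurable M" "\<And>x. norm (f x) \<le> B"
  shows "integrable M f"
  using finite_measure.integrable_const_bound[OF finite_M, of f B] assms by auto


context
  fixes n :: nat and \<sigma> :: "'g \<Rightarrow> complex mat"
  assumes ur: "unitary_rep gmul n \<sigma>"
begin

lemma ur_carrier[simp]: "\<sigma> g \<in> carrier_mat n n"
  using ur by (simp add: unitary_rep_def)
lemma ur_dims[simp]: "dim_row (\<sigma> g) = n" "dim_col (\<sigma> g) = n"
  using carrier_matD[OF ur_carrier[of g]] by auto
lemma ur_mult: "\<sigma> (gmul g h) = \<sigma> g * \<sigma> h"
  using ur by (simp add: unitary_rep_def)
lemma ur_unit1: "\<sigma> g * cadj (\<sigma> g) = 1\<^sub>m n"
  using ur by (simp add: unitary_rep_def)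
lemma ur_unit2: "cadj (\<sigma> g) * \<sigma> g = 1\<^sub>m n"
  using ur by (simp add: unitary_rep_def)
lemma ur_cont: "a < n \<Longrightarrow> b < n \<Longrightarrow> continuous_on UNIV (\<lambda>g. \<sigma> g $$ (a,b))"
  using ur by (simp add: unitary_rep_def)

lemma ur_e: "\<sigma> e = 1\<^sub>m n"
proof -
  let ?U = "\<sigma> e"
  have eq: "?U * ?U = ?U" using ur_mult[of e e] by simp
  have "?U = ?U * 1\<^sub>m n" by simp
  also have "\<dots> = ?U * (?U * cadj ?U)" by (simp only: ur_unit1)
  also have "\<dots> = (?U * ?U) * cadj ?U" by (rule assoc_mult_mat[symmetric]) auto
  also have "\<dots> = ?U * cadj ?U" by (simp only: eq)
  also have "\<dots> = 1\<^sub>m n" by (rule ur_unit1)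
  finally show ?thesis .
qed

lemma ur_inv: "\<sigma> (ginv g) = cadj (\<sigma> g)"
proof -
  have "\<sigma> (ginv g) * \<sigma> g = 1\<^sub>m n" using ur_mult[of "ginv g" g] ur_e by simp
  then have "\<sigma> (ginv g) * \<sigma> g * cadj (\<sigma> g) = cadj (\<sigma> g)" by simp
  moreover have "\<sigma> (ginv g) * \<sigma> g * cadj (\<sigma> g) = \<sigma> (ginv g) * (\<sigma> g * cadj (\<sigma> g))"
    by (rule assoc_mult_mat) auto
  ultimately show ?thesis using ur_unit1 by simp
qed

lemma ur_row_norm: "a < n \<Longrightarrow> (\<Sum>k<n. (cmod (\<sigma> g $$ (a,k)))\<^sup>2) = 1"
proof -
  assume a: "a < n"
  have "(\<sigma> g * cadj (\<sigma> g)) $$ (a,a) = 1" using ur_unit1 a by simp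
  moreover have "(\<sigma> g * cadj (\<sigma> g)) $$ (a,a) = (\<Sum>k<n. \<sigma> g $$ (a,k) * cnj (\<sigma> g $$ (a,k)))"
    using a by (simp add: scalar_prod_def row_def col_def lessThan_atLeast0)
  ultimately have "(\<Sum>k<n. \<sigma> g $$ (a,k) * cnj (\<sigma> g $$ (a,k))) = 1" by simp
  moreover have "(\<Sum>k<n. \<sigma> g $$ (a,k) * cnj (\<sigma> g $$ (a,k))) = complex_of_real (\<Sum>k<n. (cmod (\<sigma> g $$ (a,k)))\<^sup>2)"
    unfolding of_real_sum by (rule sum.cong[OF refl]) (rule complex_norm_square[symmetric])
  ultimately show ?thesis by (metis of_real_eq_1_iff)
qed

lemma ur_bound: "a < n \<Longrightarrow> b < n \<Longrightarrow> cmod (\<sigma> g $$ (a,b)) \<le> 1"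
proof -
  assume a: "a < n" and b: "b < n"
  have "(cmod (\<sigma> g $$ (a,b)))\<^sup>2 \<le> (\<Sum>k<n. (cmod (\<sigma> g $$ (a,k)))\<^sup>2)"
    by (rule member_le_sum[where f="\<lambda>k. (cmod (\<sigma> g $$ (a,k)))\<^sup>2"]) (use b in auto)
  then have "(cmod (\<sigma> g $$ (a,b)))\<^sup>2 \<le> 1" using ur_row_norm[OF a] by simp
  then show ?thesis by (simp add: power_le_one_iff abs_le_square_iff)
qed

lemma ur_meas: "a < n \<Longrightarrow> b < n \<Longrightarrow> (\<lambda>g. \<sigma> g $$ (a,b)) \<in> borel_measurable M"
  by (rule cont_measurable) (rule ur_cont)

end

lemma rho_ur: "unitary_rep gmul (d \<xi>) (\<rho> \<xi>)"
  using dual by (simp add: complete_dual_def)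
lemma rho_irr: "irreducible_rep (d \<xi>) (\<rho> \<xi>)"
  using dual by (simp add: complete_dual_def)
lemma d_pos: "d \<xi> \<ge> 1"
  using rho_irr by (simp add: irreducible_rep_def)

end


lemma schur_scalar:
  fixes S :: "complex mat"
  assumes irr: "irreducible_rep m \<sigma>" and car: "\<And>g. \<sigma> g \<in> carrier_mat m m"
    and S: "S \<in> carrier_mat m m" and comm: "\<And>g. S * \<sigma> g = \<sigma> g * S"
  shows "\<exists>c. S = c \<cdot>\<^sub>m 1\<^sub>m m"
proof -
  have m: "m > 0" using irr by (simp add: irreducible_rep_def)
  obtain c where "c \<in> spectrum S" using spectrum_non_empty[OF S m] by blast
  then obtain v where v: "v \<in> carrier_vec m" "v \<noteq> 0\<^sub>v m" "S *\<^sub>v v = c \<cdot>\<^sub>v v"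
    using S by (auto simp: spectrum_def eigenvalue_def eigenvector_def)
  define W where "W = {w \<in> carrier_vec m. S *\<^sub>v w = c \<cdot>\<^sub>v w}"
  have inv: "invariant_subspace m \<sigma> W"
    unfolding invariant_subspace_def
  proof (intro conjI ballI allI)
    show "W \<subseteq> carrier_vec m" by (auto simp: W_def)
    show "0\<^sub>v m \<in> W" using S by (auto simp: W_def intro!: eq_vecI)
  next
    fix x y assume "x \<in> W" "y \<in> W"
    then show "x + y \<in> W" using S
      by (auto simp: W_def mult_add_distrib_mat_vec smult_add_distrib_vec)
  next
    fix k x assume "x \<in> W"
    then show "k \<cdot>\<^sub>v x \<in> W" using S
      by (auto simp: W_def mult_mat_vec smult_smult_assoc mult.commute)
  next
    fix g x assume x: "x \<in> W"
    then have xc: "x \<in> carrier_vec m" by (simp add: W_def)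
    have "S *\<^sub>v (\<sigma> g *\<^sub>v x) = (S * \<sigma> g) *\<^sub>v x"
      by (rule assoc_mult_mat_vec[symmetric]) (use S car xc in auto)
    also have "\<dots> = (\<sigma> g * S) *\<^sub>v x" by (simp add: comm)
    also have "\<dots> = \<sigma> g *\<^sub>v (S *\<^sub>v x)" by (rule assoc_mult_mat_vec) (use S car xc in auto)
    also have "\<dots> = \<sigma> g *\<^sub>v (c \<cdot>\<^sub>v x)" using x by (simp add: W_def)
    also have "\<dots> = c \<cdot>\<^sub>v (\<sigma> g *\<^sub>v x)" by (rule mult_mat_vec) (use car xc in auto)
    moreover have "\<sigma> g *\<^sub>v x \<in> carrier_vec m" using car[of g] xc by (metis mult_mat_vec_carrier)
    ultimately show "\<sigma> g *\<^sub>v x \<in> W" by (auto simp: W_def)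
  qed
  have "v \<in> W" using v by (simp add: W_def)
  then have "W = carrier_vec m" using inv irr v(2) by (auto simp: irreducible_rep_def)
  have "S = c \<cdot>\<^sub>m 1\<^sub>m m"
  proof (rule eq_matI)
    fix i j assume ij: "i < dim_row (c \<cdot>\<^sub>m 1\<^sub>m m)" "j < dim_col (c \<cdot>\<^sub>m 1\<^sub>m m)"
    then have "unit_vec m j \<in> W" using \<open>W = carrier_vec m\<close> by simp
    then have "S *\<^sub>v unit_vec m j = c \<cdot>\<^sub>v unit_vec m j" by (simp add: W_def)
    then have "(S *\<^sub>v unit_vec m j) $ i = (c \<cdot>\<^sub>v unit_vec m j) $ i" by simp
    then show "S $$ (i, j) = (c \<cdot>\<^sub>m 1\<^sub>m m) $$ (i, j)"
      using ij S by (auto simp: scalar_prod_right_unit split: if_splits)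
  qed (use S in auto)
  then show ?thesis by blast
qed

lemma mult_entry:
  assumes "A \<in> carrier_mat n k" "B \<in> carrier_mat k m" "i < n" "j < m"
  shows "(A * B) $$ (i,j) = (\<Sum>l<k. A $$ (i,l) * B $$ (l,j))"
  using assms by (auto simp: scalar_prod_def lessThan_atLeast0)

context chg begin

lemma schur_zero:
  assumes u1: "unitary_rep gmul m \<sigma>" and i1: "irreducible_rep m \<sigma>"
    and u2: "unitary_rep gmul n \<tau>" and i2: "irreducible_rep n \<tau>"
    and niso: "\<not> rep_iso m \<sigma> n \<tau>"
    and T: "T \<in> carrier_mat m n" and intw: "\<And>g. \<sigma> g * T = T * \<tau> g"
  shows "T = 0\<^sub>m m n"
proof (rule ccontr)
  assume nz: "T \<noteq> 0\<^sub>m m n"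
  note c1 = ur_carrier[OF u1] and c2 = ur_carrier[OF u2]
  have Tc: "cadj T \<in> carrier_mat n m" using T by simp
  have intw2: "cadj T * \<sigma> g = \<tau> g * cadj T" for g
  proof -
    have "cadj (\<sigma> (ginv g) * T) = cadj (T * \<tau> (ginv g))" by (simp add: intw)
    then have "cadj T * cadj (\<sigma> (ginv g)) = cadj (\<tau> (ginv g)) * cadj T"
      using T c1 c2 by (simp add: cadj_mult[of _ m m _ n] cadj_mult[of _ m n _ n])
    then show ?thesis by (simp add: ur_inv[OF u1] ur_inv[OF u2])
  qed
  define S1 where "S1 = T * cadj T"
  define S2 where "S2 = cadj T * T"
  have S1c: "S1 \<in> carrier_mat m m" and S2c: "S2 \<in> carrier_mat n n" using T by (auto simp: S1_def S2_def)
  have "S1 * \<sigma> g = \<sigma> g * S1" for g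
  proof -
    have "S1 * \<sigma> g = T * (cadj T * \<sigma> g)" unfolding S1_def
      by (rule assoc_mult_mat[OF T Tc c1])
    also have "\<dots> = T * (\<tau> g * cadj T)" by (simp add: intw2)
    also have "\<dots> = (T * \<tau> g) * cadj T" by (rule assoc_mult_mat[symmetric, OF T c2 Tc])
    also have "\<dots> = (\<sigma> g * T) * cadj T" by (simp add: intw)
    also have "\<dots> = \<sigma> g * S1" unfolding S1_def by (rule assoc_mult_mat[OF c1 T Tc])
    finally show ?thesis .
  qed
  then obtain a1 where a1: "S1 = a1 \<cdot>\<^sub>m 1\<^sub>m m"
    using schur_scalar[OF i1 c1 S1c] by blast
  have "S2 * \<tau> g = \<tau> g * S2" for g
  proof -
    have "S2 * \<tau> g = cadj T * (T * \<tau> g)" unfolding S2_def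
      by (rule assoc_mult_mat[OF Tc T c2])
    also have "\<dots> = cadj T * (\<sigma> g * T)" by (simp add: intw)
    also have "\<dots> = (cadj T * \<sigma> g) * T" by (rule assoc_mult_mat[symmetric, OF Tc c1 T])
    also have "\<dots> = (\<tau> g * cadj T) * T" by (simp add: intw2)
    also have "\<dots> = \<tau> g * S2" unfolding S2_def by (rule assoc_mult_mat[OF c2 Tc T])
    finally show ?thesis .
  qed
  then obtain a2 where a2: "S2 = a2 \<cdot>\<^sub>m 1\<^sub>m n"
    using schur_scalar[OF i2 c2 S2c] by blast
  obtain i k where ik: "i < m" "k < n" "T $$ (i,k) \<noteq> 0"
    using nz T by (metis carrier_matD(1,2) eq_matI index_zero_mat(1,2,3))
  have S1e: "S1 $$ (i',i') = (\<Sum>l<n. complex_of_real ((cmod (T $$ (i',l)))\<^sup>2))" if "i' < m" for i'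
    unfolding S1_def using that T
    by (subst mult_entry[OF T Tc]) (auto simp: complex_norm_square simp del: of_real_power intro!: sum.cong)
  have S2e: "S2 $$ (k',k') = (\<Sum>l<m. complex_of_real ((cmod (T $$ (l,k')))\<^sup>2))" if "k' < n" for k'
    unfolding S2_def using that T
    by (subst mult_entry[OF Tc T]) (auto simp: complex_norm_square mult.commute simp del: of_real_power intro!: sum.cong)
  have a1v: "a1 = complex_of_real (\<Sum>l<n. (cmod (T $$ (i,l)))\<^sup>2)"
    using S1e[OF ik(1)] a1 ik by (simp add: of_real_sum)
  have pos: "(\<Sum>l<n. (cmod (T $$ (i,l)))\<^sup>2) > 0"
  proof -
    have "(cmod (T $$ (i,k)))\<^sup>2 \<le> (\<Sum>l<n. (cmod (T $$ (i,l)))\<^sup>2)"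
      by (rule member_le_sum) (use ik in auto)
    moreover have "(cmod (T $$ (i,k)))\<^sup>2 > 0" using ik by simp
    ultimately show ?thesis by linarith
  qed
  have "S1 * T = T * S2" unfolding S1_def S2_def
    by (rule assoc_mult_mat[OF T Tc T])
  then have "(S1 * T) $$ (i,k) = (T * S2) $$ (i,k)" by simp
  then have "a1 * T $$ (i,k) = a2 * T $$ (i,k)" using a1 a2 ik T by simp
  then have a12: "a1 = a2" using ik by simp
  have sumeq: "(\<Sum>i'<m. S1 $$ (i',i')) = (\<Sum>k'<n. S2 $$ (k',k'))"
    using S1e S2e by (simp add: sum.swap[of _ "{..<m}" "{..<n}"])
  have "(\<Sum>i'<m. S1 $$ (i',i')) = of_nat m * a1" using a1 by simp
  moreover have "(\<Sum>k'<n. S2 $$ (k',k')) = of_nat n * a2" using a2 by simp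
  ultimately have "of_nat m * a1 = of_nat n * a1" using sumeq a12 by metis
  moreover have "a1 \<noteq> 0" using a1v pos by (metis less_irrefl of_real_eq_0_iff)
  ultimately have mn: "m = n" by simp
  have "rep_iso m \<sigma> n \<tau>"
    unfolding rep_iso_def
  proof (intro conjI bexI[of _ "cadj T"])
    show "m = n" by fact
    show "cadj T \<in> carrier_mat m m" using Tc mn by simp
    show "\<forall>g. cadj T * \<sigma> g = \<tau> g * cadj T" using intw2 by simp
    show "invertible_mat (cadj T)"
      unfolding invertible_mat_def inverts_mat_def
    proof (intro conjI exI[of _ "(1 / a1) \<cdot>\<^sub>m T"])
      show "square_mat (cadj T)" using T mn by simp
      have "cadj T * ((1 / a1) \<cdot>\<^sub>m T) = (1/a1) \<cdot>\<^sub>m S2" unfolding S2_def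
        by (rule mult_smult_distrib[OF Tc T])
      also have "\<dots> = 1\<^sub>m n" using a2 a12 \<open>a1 \<noteq> 0\<close> by (intro eq_matI) auto
      finally show "cadj T * ((1 / a1) \<cdot>\<^sub>m T) = 1\<^sub>m (dim_row (cadj T))" using T by simp
      have "((1 / a1) \<cdot>\<^sub>m T) * cadj T = (1/a1) \<cdot>\<^sub>m S1" unfolding S1_def
        by (rule mult_smult_assoc_mat[OF T Tc])
      also have "\<dots> = 1\<^sub>m m" using a1 \<open>a1 \<noteq> 0\<close> by (intro eq_matI) auto
      finally show "((1 / a1) \<cdot>\<^sub>m T) * cadj T = 1\<^sub>m (dim_row ((1 / a1) \<cdot>\<^sub>m T))" using T by simp
    qed
  qed
  with niso show False by simp
qed

end


context chg begin

lemma rho_meas: "a < d \<xi> \<Longrightarrow> b < d \<xi> \<Longrightarrow> (\<lambda>x. \<rho> \<xi> x $$ (a,b)) \<in> borel_measurable M"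
  by (rule ur_meas[OF rho_ur])

lemma rho_bound: "a < d \<xi> \<Longrightarrow> b < d \<xi> \<Longrightarrow> cmod (\<rho> \<xi> x $$ (a,b)) \<le> 1"
  by (rule ur_bound[OF rho_ur])

lemma rho_cont: "a < d \<xi> \<Longrightarrow> b < d \<xi> \<Longrightarrow> continuous_on UNIV (\<lambda>x. \<rho> \<xi> x $$ (a,b))"
  by (rule ur_cont[OF rho_ur])

lemma rho_cont_transl: "a < d \<xi> \<Longrightarrow> b < d \<xi> \<Longrightarrow> continuous_on UNIV (\<lambda>x. \<rho> \<xi> (gmul g x) $$ (a,b))"
  using continuous_on_compose[OF gmul_cont[of g] continuous_on_subset[OF rho_cont]] by (auto simp: o_def)

lemma rho_dims[simp]: "dim_row (\<rho> \<xi> g) = d \<xi>" "dim_col (\<rho> \<xi> g) = d \<xi>"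
  by (rule ur_dims[OF rho_ur])+

lemma rho_prod_int:
  assumes "a < d \<xi>" "b < d \<xi>" "c < d \<eta>" "f < d \<eta>"
  shows "integrable M (\<lambda>x. \<rho> \<xi> x $$ (a,b) * cnj (\<rho> \<eta> x $$ (c,f)))"
proof (rule integrable_bounded[where B=1])
  show "(\<lambda>x. \<rho> \<xi> x $$ (a,b) * cnj (\<rho> \<eta> x $$ (c,f))) \<in> borel_measurable M"
    using assms by (intro cont_measurable continuous_intros rho_cont)
  fix x
  have "cmod (\<rho> \<xi> x $$ (a,b)) * cmod (cnj (\<rho> \<eta> x $$ (c,f))) \<le> 1 * 1"
    using rho_bound assms by (intro mult_mono) auto
  then show "norm (\<rho> \<xi> x $$ (a,b) * cnj (\<rho> \<eta> x $$ (c,f))) \<le> 1"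
    by (simp add: norm_mult)
qed

definition Tmat where
  "Tmat \<xi> \<eta> b f = mat (d \<xi>) (d \<eta>) (\<lambda>(a,c). \<integral>x. \<rho> \<xi> x $$ (a,b) * cnj (\<rho> \<eta> x $$ (c,f)) \<partial>M)"

lemma Tmat_carrier: "Tmat \<xi> \<eta> b f \<in> carrier_mat (d \<xi>) (d \<eta>)"
  by (simp add: Tmat_def)

lemma Tmat_intw:
  assumes b: "b < d \<xi>" and f: "f < d \<eta>"
  shows "\<rho> \<xi> g * Tmat \<xi> \<eta> b f = Tmat \<xi> \<eta> b f * \<rho> \<eta> g"
proof (rule eq_matI)
  note u1 = rho_ur[of \<xi>] and u2 = rho_ur[of \<eta>]
  fix a c assume "a < dim_row (Tmat \<xi> \<eta> b f * \<rho> \<eta> g)" "c < dim_col (Tmat \<xi> \<eta> b f * \<rho> \<eta> g)"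
  then have a: "a < d \<xi>" and c: "c < d \<eta>" by (auto simp: Tmat_def)
  have "(\<rho> \<xi> g * Tmat \<xi> \<eta> b f) $$ (a,c)
      = (\<Sum>k<d \<xi>. \<rho> \<xi> g $$ (a,k) * (\<integral>x. \<rho> \<xi> x $$ (k,b) * cnj (\<rho> \<eta> x $$ (c,f)) \<partial>M))"
    using a c by (subst mult_entry[OF ur_carrier[OF u1] Tmat_carrier]) (auto simp: Tmat_def)
  also have "\<dots> = (\<Sum>k<d \<xi>. (\<integral>x. \<rho> \<xi> g $$ (a,k) * (\<rho> \<xi> x $$ (k,b) * cnj (\<rho> \<eta> x $$ (c,f))) \<partial>M))"
    by simp
  also have "\<dots> = (\<integral>x. (\<Sum>k<d \<xi>. \<rho> \<xi> g $$ (a,k) * (\<rho> \<xi> x $$ (k,b) * cnj (\<rho> \<eta> x $$ (c,f)))) \<partial>M)"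
    by (rule Bochner_Integration.integral_sum[symmetric]) (auto intro!: integrable_mult_right rho_prod_int b c f)
  also have "\<dots> = (\<integral>x. \<rho> \<xi> (gmul g x) $$ (a,b) * cnj (\<rho> \<eta> x $$ (c,f)) \<partial>M)"
  proof (rule Bochner_Integration.integral_cong[OF refl])
    fix x
    have "\<rho> \<xi> (gmul g x) $$ (a,b) = (\<Sum>k<d \<xi>. \<rho> \<xi> g $$ (a,k) * \<rho> \<xi> x $$ (k,b))"
      using a b by (simp add: ur_mult[OF u1] scalar_prod_def lessThan_atLeast0)
    then show "(\<Sum>k<d \<xi>. \<rho> \<xi> g $$ (a,k) * (\<rho> \<xi> x $$ (k,b) * cnj (\<rho> \<eta> x $$ (c,f))))
        = \<rho> \<xi> (gmul g x) $$ (a,b) * cnj (\<rho> \<eta> x $$ (c,f))"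
      by (simp add: sum_distrib_right mult.assoc)
  qed
  also have "\<dots> = (\<integral>x. \<rho> \<xi> x $$ (a,b) * cnj (\<rho> \<eta> (gmul (ginv g) x) $$ (c,f)) \<partial>M)"
  proof -
    let ?F = "\<lambda>y. \<rho> \<xi> y $$ (a,b) * cnj (\<rho> \<eta> (gmul (ginv g) y) $$ (c,f))"
    have "?F \<in> borel_measurable M"
      using a b c f by (intro cont_measurable continuous_intros rho_cont rho_cont_transl)
    from integral_transl[OF this, of g] show ?thesis by simp
  qed
  also have "\<dots> = (\<integral>x. (\<Sum>k<d \<eta>. (\<rho> \<xi> x $$ (a,b) * cnj (\<rho> \<eta> x $$ (k,f))) * \<rho> \<eta> g $$ (k,c)) \<partial>M)"
  proof (rule Bochner_Integration.integral_cong[OF refl])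
    fix x
    have "\<rho> \<eta> (gmul (ginv g) x) $$ (c,f) = (\<Sum>k<d \<eta>. cnj (\<rho> \<eta> g $$ (k,c)) * \<rho> \<eta> x $$ (k,f))"
      using c f by (simp add: ur_mult[OF u2] ur_inv[OF u2] scalar_prod_def lessThan_atLeast0)
    then show "\<rho> \<xi> x $$ (a,b) * cnj (\<rho> \<eta> (gmul (ginv g) x) $$ (c,f))
        = (\<Sum>k<d \<eta>. (\<rho> \<xi> x $$ (a,b) * cnj (\<rho> \<eta> x $$ (k,f))) * \<rho> \<eta> g $$ (k,c))"
      by (simp add: sum_distrib_left mult.assoc mult.commute mult.left_commute)
  qed
  also have "\<dots> = (\<Sum>k<d \<eta>. (\<integral>x. (\<rho> \<xi> x $$ (a,b) * cnj (\<rho> \<eta> x $$ (k,f))) * \<rho> \<eta> g $$ (k,c) \<partial>M))"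
    by (rule Bochner_Integration.integral_sum) (auto intro!: integrable_mult_left rho_prod_int a b f)
  also have "\<dots> = (\<Sum>k<d \<eta>. (\<integral>x. \<rho> \<xi> x $$ (a,b) * cnj (\<rho> \<eta> x $$ (k,f)) \<partial>M) * \<rho> \<eta> g $$ (k,c))"
    by simp
  also have "\<dots> = (Tmat \<xi> \<eta> b f * \<rho> \<eta> g) $$ (a,c)"
    using a c by (subst mult_entry[OF Tmat_carrier ur_carrier[OF u2]]) (auto simp: Tmat_def)
  finally show "(\<rho> \<xi> g * Tmat \<xi> \<eta> b f) $$ (a,c) = (Tmat \<xi> \<eta> b f * \<rho> \<eta> g) $$ (a,c)" .
qed (auto simp: Tmat_def)


lemma schur_orth:
  assumes a: "a < d \<xi>" and b: "b < d \<xi>" and c: "c < d \<eta>" and f: "f < d \<eta>"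
  shows "(\<integral>x. \<rho> \<xi> x $$ (a,b) * cnj (\<rho> \<eta> x $$ (c,f)) \<partial>M)
       = (if \<xi> = \<eta> \<and> a = c \<and> b = f then 1 / of_nat (d \<xi>) else 0)"
proof (cases "\<xi> = \<eta>")
  case False
  have niso: "\<not> rep_iso (d \<xi>) (\<rho> \<xi>) (d \<eta>) (\<rho> \<eta>)"
    using dual False by (simp add: complete_dual_def)
  have "Tmat \<xi> \<eta> b f = 0\<^sub>m (d \<xi>) (d \<eta>)"
    by (rule schur_zero[OF rho_ur rho_irr rho_ur rho_irr niso Tmat_carrier Tmat_intw[OF b f]])
  then have "Tmat \<xi> \<eta> b f $$ (a,c) = 0" using a c by simp
  then show ?thesis using False a c by (simp add: Tmat_def)
next
  case True
  then have c': "c < d \<xi>" and f': "f < d \<xi>" using c f by auto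
  obtain s where s: "Tmat \<xi> \<xi> b f = s \<cdot>\<^sub>m 1\<^sub>m (d \<xi>)"
    using schur_scalar[OF rho_irr ur_carrier[OF rho_ur] Tmat_carrier] Tmat_intw[OF b f'] by metis
  have "(\<Sum>i<d \<xi>. Tmat \<xi> \<xi> b f $$ (i,i)) = of_nat (d \<xi>) * s" using s by simp
  moreover have "(\<Sum>i<d \<xi>. Tmat \<xi> \<xi> b f $$ (i,i)) = (\<integral>x. (\<Sum>i<d \<xi>. \<rho> \<xi> x $$ (i,b) * cnj (\<rho> \<xi> x $$ (i,f))) \<partial>M)"
    by (subst Bochner_Integration.integral_sum) (auto simp: Tmat_def intro!: rho_prod_int b f')
  moreover have "(\<Sum>i<d \<xi>. \<rho> \<xi> x $$ (i,b) * cnj (\<rho> \<xi> x $$ (i,f))) = (if b = f then 1 else 0)" for x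
  proof -
    have "(cadj (\<rho> \<xi> x) * \<rho> \<xi> x) $$ (f,b) = (if f = b then 1 else 0)"
      using ur_unit2[OF rho_ur] b f' by simp
    moreover have "(cadj (\<rho> \<xi> x) * \<rho> \<xi> x) $$ (f,b) = (\<Sum>i<d \<xi>. \<rho> \<xi> x $$ (i,b) * cnj (\<rho> \<xi> x $$ (i,f)))"
      using b f' by (simp add: scalar_prod_def lessThan_atLeast0 mult.commute)
    ultimately show ?thesis by auto
  qed
  ultimately have "of_nat (d \<xi>) * s = (if b = f then 1 else 0)"
    by (simp add: measure_UNIV)
  then have sv: "s = (if b = f then 1 / of_nat (d \<xi>) else 0)"
    using d_pos[of \<xi>] by (auto simp: field_simps)
  have "Tmat \<xi> \<xi> b f $$ (a,c) = (if a = c then s else 0)" using s a c' by simp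
  then show ?thesis using True a c' sv by (auto simp: Tmat_def)
qed

end


context chg begin

abbreviation "four \<equiv> fourier M d \<rho>"

lemma fourier_carrier[simp]: "four f \<xi> \<in> carrier_mat (d \<xi>) (d \<xi>)"
  by (simp add: fourier_def)
lemma fourier_dim[simp]: "dim_row (four f \<xi>) = d \<xi>" "dim_col (four f \<xi>) = d \<xi>"
  by (simp_all add: fourier_def)
lemma fourier_index: "a < d \<xi> \<Longrightarrow> b < d \<xi> \<Longrightarrow>
    four f \<xi> $$ (a,b) = (\<integral>x. f x * cnj (\<rho> \<xi> x $$ (b,a)) \<partial>M)"
  by (simp add: fourier_def)

lemma L2_integrable_bounded:
  assumes f: "in_L2 M f" and g: "g \<in> borel_measurable M" and gb: "\<And>x. cmod (g x) \<le> 1"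
  shows "integrable M (\<lambda>x. f x * g x)"
proof (rule Bochner_Integration.integrable_bound[where f="\<lambda>x. 1 + (cmod (f x))\<^sup>2"])
  show "integrable M (\<lambda>x. 1 + (cmod (f x))\<^sup>2)"
    using f finite_measure.integrable_const[OF finite_M] by (intro Bochner_Integration.integrable_add) (auto simp: in_L2_def)
  show "(\<lambda>x. f x * g x) \<in> borel_measurable M" using f g by (auto simp: in_L2_def)
  show "AE x in M. norm (f x * g x) \<le> norm (1 + (cmod (f x))\<^sup>2)"
  proof (rule AE_I2)
    fix x
    have "cmod (f x) * cmod (g x) \<le> cmod (f x) * 1" using gb[of x] by (intro mult_left_mono) auto
    also have "\<dots> \<le> 1 + (cmod (f x))\<^sup>2"
    proof -
      have h: "0 \<le> (cmod (f x) - 1/2)\<^sup>2" by simp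
      have "(cmod (f x) - 1/2)\<^sup>2 = (cmod (f x))\<^sup>2 - cmod (f x) + 1/4"
        by (simp add: power2_eq_square algebra_simps)
      then show ?thesis using h by simp
    qed
    finally show "norm (f x * g x) \<le> norm (1 + (cmod (f x))\<^sup>2)" by (simp add: norm_mult)
  qed
qed

lemma dsum_delta:
  fixes A :: "nat \<Rightarrow> nat \<Rightarrow> 'a::comm_ring_1"
  assumes "a' < n" "b' < n"
  shows "(\<Sum>a<n. \<Sum>b<n. A a b * (if b = b' \<and> a = a' then c else 0)) = A a' b' * c"
proof -
  have "(\<Sum>b<n. A a b * (if b = b' \<and> a = a' then c else 0)) = (if a = a' then A a b' * c else 0)" for a
  proof -
    have "(\<Sum>b<n. A a b * (if b = b' \<and> a = a' then c else 0)) = (\<Sum>b<n. (if b = b' then (if a = a' then A a b * c else 0) else 0))"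
      by (rule sum.cong) auto
    also have "\<dots> = (if a = a' then A a b' * c else 0)" using assms by (simp add: sum.delta)
    finally show ?thesis .
  qed
  then show ?thesis using assms by (simp add: sum.delta)
qed

lemma L2_rho_int: "in_L2 M f \<Longrightarrow> a < d \<xi> \<Longrightarrow> b < d \<xi> \<Longrightarrow> integrable M (\<lambda>x. f x * cnj (\<rho> \<xi> x $$ (b,a)))"
  by (rule L2_integrable_bounded)
     (auto intro!: cont_measurable continuous_intros rho_cont simp: rho_bound)

lemma fourier_add:
  assumes "in_L2 M f" "in_L2 M g"
  shows "four (\<lambda>x. f x + g x) \<xi> = four f \<xi> + four g \<xi>"
  by (rule eq_matI) (auto simp: fourier_index distrib_right L2_rho_int assms)

lemma fourier_scale: "four (\<lambda>x. c * f x) \<xi> = c \<cdot>\<^sub>m four f \<xi>"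
  by (rule eq_matI) (auto simp: fourier_index mult.assoc)

lemma fourier_cong: assumes "\<And>x. f x = g x" shows "four f = four g"
proof -
  have "f = g" using assms by (rule ext)
  then show ?thesis by simp
qed

definition efun :: "'x \<Rightarrow> complex mat \<Rightarrow> 'g \<Rightarrow> complex" where
  "efun \<xi> A x = of_nat (d \<xi>) * (\<Sum>a<d \<xi>. \<Sum>b<d \<xi>. A $$ (a,b) * \<rho> \<xi> x $$ (b,a))"

lemma efun_cont: "continuous_on UNIV (efun \<xi> A)"
  unfolding efun_def by (intro continuous_intros rho_cont) auto

lemma efun_meas: "efun \<xi> A \<in> borel_measurable M"
  by (rule cont_measurable[OF efun_cont])

lemma efun_bounded: "\<exists>B. \<forall>x. cmod (efun \<xi> A x) \<le> B"
proof -
  have "cmod (efun \<xi> A x) \<le> of_nat (d \<xi>) * (\<Sum>a<d \<xi>. \<Sum>b<d \<xi>. cmod (A $$ (a,b)))" for x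
  proof -
    have "cmod (\<Sum>a<d \<xi>. \<Sum>b<d \<xi>. A $$ (a,b) * \<rho> \<xi> x $$ (b,a)) \<le> (\<Sum>a<d \<xi>. \<Sum>b<d \<xi>. cmod (A $$ (a,b) * \<rho> \<xi> x $$ (b,a)))"
      by (rule order_trans[OF norm_sum sum_mono[OF norm_sum]])
    also have "\<dots> \<le> (\<Sum>a<d \<xi>. \<Sum>b<d \<xi>. cmod (A $$ (a,b)))"
      by (intro sum_mono) (auto simp: norm_mult intro!: mult_left_le rho_bound)
    finally show ?thesis unfolding efun_def by (simp add: norm_mult mult_left_mono)
  qed
  then show ?thesis by blast
qed

lemma in_L2_bounded_cont:
  assumes "continuous_on UNIV f" "\<And>x. cmod (f x) \<le> B"
  shows "in_L2 M f"
  unfolding in_L2_def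
proof
  show "f \<in> borel_measurable M" by (rule cont_measurable[OF assms(1)])
  show "integrable M (\<lambda>x. (cmod (f x))\<^sup>2)"
  proof (rule integrable_bounded[where B="B\<^sup>2"])
    show "(\<lambda>x. (cmod (f x))\<^sup>2) \<in> borel_measurable M"
      by (intro cont_measurable continuous_intros assms(1))
    fix x show "norm ((cmod (f x))\<^sup>2) \<le> B\<^sup>2" using assms(2)[of x]
      by (simp add: power_mono)
  qed
qed

lemma efun_L2: "in_L2 M (efun \<xi> A)"
  using efun_bounded[of \<xi> A] in_L2_bounded_cont[OF efun_cont] by blast

lemma fourier_efun:
  assumes A: "A \<in> carrier_mat (d \<xi>) (d \<xi>)"
  shows "four (efun \<xi> A) \<eta> = (if \<eta> = \<xi> then A else 0\<^sub>m (d \<eta>) (d \<eta>))"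
proof (rule eq_matI)
  fix a' b' assume "a' < dim_row (if \<eta> = \<xi> then A else 0\<^sub>m (d \<eta>) (d \<eta>))"
    "b' < dim_col (if \<eta> = \<xi> then A else 0\<^sub>m (d \<eta>) (d \<eta>))"
  then have a': "a' < d \<eta>" and b': "b' < d \<eta>" using A by (auto split: if_splits)
  have "four (efun \<xi> A) \<eta> $$ (a',b') = (\<integral>x. efun \<xi> A x * cnj (\<rho> \<eta> x $$ (b',a')) \<partial>M)"
    using a' b' by (simp add: fourier_index)
  also have "\<dots> = (\<integral>x. of_nat (d \<xi>) * (\<Sum>a<d \<xi>. \<Sum>b<d \<xi>. A $$ (a,b) * (\<rho> \<xi> x $$ (b,a) * cnj (\<rho> \<eta> x $$ (b',a')))) \<partial>M)"
    unfolding efun_def by (simp add: sum_distrib_right mult.assoc)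
  also have "\<dots> = of_nat (d \<xi>) * (\<Sum>a<d \<xi>. \<Sum>b<d \<xi>. A $$ (a,b) * (\<integral>x. \<rho> \<xi> x $$ (b,a) * cnj (\<rho> \<eta> x $$ (b',a')) \<partial>M))"
  proof -
    have i2: "(\<integral>x. (\<Sum>b<d \<xi>. A $$ (a,b) * (\<rho> \<xi> x $$ (b,a) * cnj (\<rho> \<eta> x $$ (b',a')))) \<partial>M)
       = (\<Sum>b<d \<xi>. A $$ (a,b) * (\<integral>x. \<rho> \<xi> x $$ (b,a) * cnj (\<rho> \<eta> x $$ (b',a')) \<partial>M))" if a: "a < d \<xi>" for a
      by (subst Bochner_Integration.integral_sum) (auto intro!: integrable_mult_right rho_prod_int a a' b')
    have i1: "(\<integral>x. (\<Sum>a<d \<xi>. \<Sum>b<d \<xi>. A $$ (a,b) * (\<rho> \<xi> x $$ (b,a) * cnj (\<rho> \<eta> x $$ (b',a')))) \<partial>M)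
       = (\<Sum>a<d \<xi>. (\<integral>x. (\<Sum>b<d \<xi>. A $$ (a,b) * (\<rho> \<xi> x $$ (b,a) * cnj (\<rho> \<eta> x $$ (b',a')))) \<partial>M))"
      by (rule Bochner_Integration.integral_sum) (auto intro!: integrable_sum integrable_mult_right rho_prod_int a' b')
    show ?thesis by (simp only: integral_mult_right_zero i1) (simp add: i2)
  qed
  also have "\<dots> = of_nat (d \<xi>) * (\<Sum>a<d \<xi>. \<Sum>b<d \<xi>. A $$ (a,b) * (if \<xi> = \<eta> \<and> b = b' \<and> a = a' then 1 / of_nat (d \<xi>) else 0))"
    by (simp add: schur_orth a' b')
  also have "\<dots> = (if \<eta> = \<xi> then A $$ (a',b') else 0)"
  proof (cases "\<eta> = \<xi>")
    case True
    then have "(\<Sum>a<d \<xi>. \<Sum>b<d \<xi>. A $$ (a,b) * (if \<xi> = \<eta> \<and> b = b' \<and> a = a' then 1 / of_nat (d \<xi>) else 0))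
        = A $$ (a',b') / of_nat (d \<xi>)"
      using a' b' dsum_delta[of a' "d \<xi>" b' "\<lambda>a b. A $$ (a,b)" "1 / of_nat (d \<xi>)"] by simp
    then show ?thesis using True d_pos[of \<xi>] by simp
  qed simp
  also have "\<dots> = (if \<eta> = \<xi> then A else 0\<^sub>m (d \<eta>) (d \<eta>)) $$ (a',b')" using a' b' by simp
  finally show "four (efun \<xi> A) \<eta> $$ (a',b') = (if \<eta> = \<xi> then A else 0\<^sub>m (d \<eta>) (d \<eta>)) $$ (a',b')" .
qed (use A in auto)

end


context chg begin

section \<open>L2 basics\<close>

lemma L2_meas: "in_L2 M f \<Longrightarrow> f \<in> borel_measurable M"
  by (simp add: in_L2_def)
lemma L2_int: "in_L2 M f \<Longrightarrow> integrable M (\<lambda>x. (cmod (f x))\<^sup>2)"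
  by (simp add: in_L2_def)

lemma L2_norm_nonneg: "L2_norm M f \<ge> 0"
  by (simp add: L2_norm_def)

lemma sq_add_bound: "(cmod (a + b))\<^sup>2 \<le> 2 * (cmod a)\<^sup>2 + 2 * (cmod b)\<^sup>2"
proof -
  have "(cmod (a + b))\<^sup>2 \<le> (cmod a + cmod b)\<^sup>2"
    by (intro power_mono norm_triangle_ineq) auto
  also have "\<dots> \<le> 2 * (cmod a)\<^sup>2 + 2 * (cmod b)\<^sup>2"
    using zero_le_power2[of "cmod a - cmod b"] by (simp add: power2_eq_square algebra_simps)
  finally show ?thesis .
qed

lemma L2_add: assumes "in_L2 M f" "in_L2 M g" shows "in_L2 M (\<lambda>x. f x + g x)"
  unfolding in_L2_def
proof
  show "(\<lambda>x. f x + g x) \<in> borel_measurable M" using assms by (auto simp: in_L2_def)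
  show "integrable M (\<lambda>x. (cmod (f x + g x))\<^sup>2)"
  proof (rule Bochner_Integration.integrable_bound[where f="\<lambda>x. 2 * (cmod (f x))\<^sup>2 + 2 * (cmod (g x))\<^sup>2"])
    show "integrable M (\<lambda>x. 2 * (cmod (f x))\<^sup>2 + 2 * (cmod (g x))\<^sup>2)"
      using assms by (auto simp: in_L2_def)
    show "(\<lambda>x. (cmod (f x + g x))\<^sup>2) \<in> borel_measurable M" using assms by (auto simp: in_L2_def)
    show "AE x in M. norm ((cmod (f x + g x))\<^sup>2) \<le> norm (2 * (cmod (f x))\<^sup>2 + 2 * (cmod (g x))\<^sup>2)"
      using sq_add_bound by (auto intro!: AE_I2 simp del: norm_triangle_ineq)
  qed
qed

lemma L2_scale: assumes "in_L2 M f" shows "in_L2 M (\<lambda>x. c * f x)"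
  using assms by (auto simp: in_L2_def norm_mult power_mult_distrib)

lemma L2_sum: "finite F \<Longrightarrow> (\<And>i. i \<in> F \<Longrightarrow> in_L2 M (f i)) \<Longrightarrow> in_L2 M (\<lambda>x. \<Sum>i\<in>F. f i x)"
proof (induction F rule: finite_induct)
  case empty then show ?case by (simp add: in_L2_def)
next
  case (insert a F) then show ?case by (simp add: L2_add)
qed

lemma L2_zero: "in_L2 M (\<lambda>x. 0)"
  by (simp add: in_L2_def)

lemma L2_norm_scale: "L2_norm M (\<lambda>x. c * f x) = cmod c * L2_norm M f"
  by (simp add: L2_norm_def norm_mult power_mult_distrib real_sqrt_mult)

lemma L2_norm_uminus: "L2_norm M (\<lambda>x. - f x) = L2_norm M f"
  by (simp add: L2_norm_def)

lemma L2_norm_zero_four: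
  assumes f: "in_L2 M f" and z: "L2_norm M f = 0"
  shows "four f \<xi> = 0\<^sub>m (d \<xi>) (d \<xi>)"
proof -
  have "(\<integral>x. (cmod (f x))\<^sup>2 \<partial>M) = 0" using z by (simp add: L2_norm_def)
  then have "AE x in M. (cmod (f x))\<^sup>2 = 0"
    using integral_nonneg_eq_0_iff_AE[OF L2_int[OF f]] by simp
  then have ae: "AE x in M. f x = 0" by simp
  show ?thesis
  proof (rule eq_matI)
    fix a b assume "a < dim_row (0\<^sub>m (d \<xi>) (d \<xi>))" "b < dim_col (0\<^sub>m (d \<xi>) (d \<xi>))"
    then have ab: "a < d \<xi>" "b < d \<xi>" by auto
    have "(\<integral>x. f x * cnj (\<rho> \<xi> x $$ (b,a)) \<partial>M) = 0"
      by (rule integral_eq_zero_AE) (use ae in auto)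
    then show "four f \<xi> $$ (a,b) = 0\<^sub>m (d \<xi>) (d \<xi>) $$ (a,b)" using ab by (simp add: fourier_index)
  qed auto
qed

lemma four_zero_fun: "four (\<lambda>x. 0) \<xi> = 0\<^sub>m (d \<xi>) (d \<xi>)"
  by (rule L2_norm_zero_four[OF L2_zero]) (simp add: L2_norm_def)

section \<open>Minkowski\<close>

lemma L2_cross_int:
  assumes "in_L2 M f" "in_L2 M g"
  shows "integrable M (\<lambda>x. cmod (f x) * cmod (g x))"
proof (rule Bochner_Integration.integrable_bound[where f="\<lambda>x. (cmod (f x))\<^sup>2 + (cmod (g x))\<^sup>2"])
  show "integrable M (\<lambda>x. (cmod (f x))\<^sup>2 + (cmod (g x))\<^sup>2)" using assms by (auto simp: in_L2_def)
  show "(\<lambda>x. cmod (f x) * cmod (g x)) \<in> borel_measurable M" using assms by (auto simp: in_L2_def)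
  show "AE x in M. norm (cmod (f x) * cmod (g x)) \<le> norm ((cmod (f x))\<^sup>2 + (cmod (g x))\<^sup>2)"
  proof (rule AE_I2)
    fix x
    have "2 * (cmod (f x) * cmod (g x)) \<le> (cmod (f x))\<^sup>2 + (cmod (g x))\<^sup>2"
      using zero_le_power2[of "cmod (f x) - cmod (g x)"] by (simp add: power2_eq_square algebra_simps)
    moreover have "0 \<le> cmod (f x) * cmod (g x)" by simp
    moreover have "norm (cmod (f x) * cmod (g x)) = cmod (f x) * cmod (g x)" by simp
    moreover have "norm ((cmod (f x))\<^sup>2 + (cmod (g x))\<^sup>2) = (cmod (f x))\<^sup>2 + (cmod (g x))\<^sup>2" by simp
    ultimately show "norm (cmod (f x) * cmod (g x)) \<le> norm ((cmod (f x))\<^sup>2 + (cmod (g x))\<^sup>2)" by linarith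
  qed
qed

lemma le_all_pos_imp: "(\<And>s::real. s > 0 \<Longrightarrow> C \<le> s * K) \<Longrightarrow> K \<ge> 0 \<Longrightarrow> C \<le> 0"
proof (rule ccontr)
  assume h: "\<And>s. s > 0 \<Longrightarrow> C \<le> s * K" and K: "K \<ge> 0" and "\<not> C \<le> 0"
  then have C: "C > 0" by simp
  have "C \<le> (C / (2 * (K + 1))) * K" using h[of "C / (2 * (K + 1))"] C K by simp
  also have "\<dots> < C"
  proof -
    have "C * K \<ge> 0" using C K by simp
    then have "C * K + C * 2 > 0" using C by linarith
    then show ?thesis using C K by (simp add: field_simps)
  qed
  finally show False by simp
qed

lemma L2_CS:
  assumes f: "in_L2 M f" and g: "in_L2 M g"
  shows "(\<integral>x. cmod (f x) * cmod (g x) \<partial>M) \<le> L2_norm M f * L2_norm M g"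
proof -
  define A where "A = (\<integral>x. (cmod (f x))\<^sup>2 \<partial>M)"
  define B where "B = (\<integral>x. (cmod (g x))\<^sup>2 \<partial>M)"
  define C where "C = (\<integral>x. cmod (f x) * cmod (g x) \<partial>M)"
  have A0: "A \<ge> 0" and B0: "B \<ge> 0" by (auto simp: A_def B_def)
  have key: "2 * C \<le> s * A + B / s" if s: "s > 0" for s
  proof -
    have "(\<integral>x. 2 * (cmod (f x) * cmod (g x)) \<partial>M) \<le> (\<integral>x. s * (cmod (f x))\<^sup>2 + (cmod (g x))\<^sup>2 / s \<partial>M)"
    proof (rule Bochner_Integration.integral_mono)
      show "integrable M (\<lambda>x. 2 * (cmod (f x) * cmod (g x)))" using L2_cross_int[OF f g] by simp
      show "integrable M (\<lambda>x. s * (cmod (f x))\<^sup>2 + (cmod (g x))\<^sup>2 / s)"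
        using L2_int[OF f] L2_int[OF g] by auto
      fix x
      have "0 \<le> (s * cmod (f x) - cmod (g x))\<^sup>2" by simp
      then have "2 * s * (cmod (f x) * cmod (g x)) \<le> s * s * (cmod (f x))\<^sup>2 + (cmod (g x))\<^sup>2"
        by (simp add: power2_eq_square algebra_simps)
      then have "2 * s * (cmod (f x) * cmod (g x)) / s \<le> (s * s * (cmod (f x))\<^sup>2 + (cmod (g x))\<^sup>2) / s"
        using s by (intro divide_right_mono) auto
      then show "2 * (cmod (f x) * cmod (g x)) \<le> s * (cmod (f x))\<^sup>2 + (cmod (g x))\<^sup>2 / s"
        using s by (simp add: field_simps)
    qed
    then show ?thesis using L2_int[OF f] L2_int[OF g] by (simp add: A_def B_def C_def)
  qed
  have "C \<le> sqrt A * sqrt B"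
  proof (cases "A > 0 \<and> B > 0")
    case True
    have "2 * C \<le> (sqrt B / sqrt A) * A + B / (sqrt B / sqrt A)" by (rule key) (simp add: True)
    also have "\<dots> = 2 * (sqrt A * sqrt B)"
    proof -
      have sA: "sqrt A * sqrt A = A" and sB: "sqrt B * sqrt B = B" using True by simp_all
      have pA: "sqrt A > 0" and pB: "sqrt B > 0" using True by simp_all
      have "(sqrt B / sqrt A) * A = sqrt B * sqrt A" using pA by (subst sA[symmetric]) (simp add: field_simps)
      moreover have "B / (sqrt B / sqrt A) = sqrt B * sqrt A" using pA pB by (subst sB[symmetric]) (simp add: field_simps)
      ultimately show ?thesis by simp
    qed
    finally show ?thesis by simp
  next
    case False
    then have "A = 0 \<or> B = 0" using A0 B0 by auto
    then have "C \<le> 0"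
    proof
      assume "A = 0"
      show "C \<le> 0"
      proof (rule le_all_pos_imp[where K="B/2"])
        fix s :: real assume s: "s > 0"
        then have "2 * C \<le> (1/s) * A + B / (1/s)" by (intro key) simp
        then show "C \<le> s * (B/2)" using \<open>A = 0\<close> by (simp add: mult.commute)
      qed (use B0 in simp)
    next
      assume "B = 0"
      show "C \<le> 0"
      proof (rule le_all_pos_imp[where K="A/2"])
        fix s :: real assume s: "s > 0"
        then have "2 * C \<le> s * A + B / s" by (intro key)
        then show "C \<le> s * (A/2)" using \<open>B = 0\<close> by simp
      qed (use A0 in simp)
    qed
    then show ?thesis using A0 B0 by (meson order_trans real_sqrt_ge_zero zero_le_mult_iff)
  qed
  then show ?thesis by (simp add: C_def A_def B_def L2_norm_def)
qed

lemma L2_tri: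
  assumes f: "in_L2 M f" and g: "in_L2 M g"
  shows "L2_norm M (\<lambda>x. f x + g x) \<le> L2_norm M f + L2_norm M g"
proof -
  have "(\<integral>x. (cmod (f x + g x))\<^sup>2 \<partial>M) \<le> (\<integral>x. (cmod (f x))\<^sup>2 + 2 * (cmod (f x) * cmod (g x)) + (cmod (g x))\<^sup>2 \<partial>M)"
  proof (rule Bochner_Integration.integral_mono)
    show "integrable M (\<lambda>x. (cmod (f x + g x))\<^sup>2)" using L2_add[OF f g] by (simp add: in_L2_def)
    show "integrable M (\<lambda>x. (cmod (f x))\<^sup>2 + 2 * (cmod (f x) * cmod (g x)) + (cmod (g x))\<^sup>2)"
      using L2_int[OF f] L2_int[OF g] L2_cross_int[OF f g] by auto
    fix x
    have "(cmod (f x + g x))\<^sup>2 \<le> (cmod (f x) + cmod (g x))\<^sup>2"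
      by (intro power_mono norm_triangle_ineq) auto
    then show "(cmod (f x + g x))\<^sup>2 \<le> (cmod (f x))\<^sup>2 + 2 * (cmod (f x) * cmod (g x)) + (cmod (g x))\<^sup>2"
      by (simp add: power2_eq_square algebra_simps)
  qed
  also have "\<dots> = (\<integral>x. (cmod (f x))\<^sup>2 \<partial>M) + 2 * (\<integral>x. cmod (f x) * cmod (g x) \<partial>M) + (\<integral>x. (cmod (g x))\<^sup>2 \<partial>M)"
    using L2_int[OF f] L2_int[OF g] L2_cross_int[OF f g] by simp
  also have "\<dots> \<le> (L2_norm M f)\<^sup>2 + 2 * (L2_norm M f * L2_norm M g) + (L2_norm M g)\<^sup>2"
    using L2_CS[OF f g] by (simp add: L2_norm_def)
  also have "\<dots> = (L2_norm M f + L2_norm M g)\<^sup>2" by (simp add: power2_eq_square algebra_simps)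
  finally have "(L2_norm M (\<lambda>x. f x + g x))\<^sup>2 \<le> (L2_norm M f + L2_norm M g)\<^sup>2"
    by (simp add: L2_norm_def)
  then show ?thesis using L2_norm_nonneg
    by (meson add_nonneg_nonneg power2_le_imp_le)
qed

end


context chg begin

abbreviation "tr \<equiv> transl gmul ginv"

lemma L2_diff: "in_L2 M f \<Longrightarrow> in_L2 M g \<Longrightarrow> in_L2 M (\<lambda>x. f x - g x)"
  using L2_add[of f "\<lambda>x. (-1) * g x"] L2_scale[of g "-1"] by simp

lemma L2_norm_diff_sym: "L2_norm M (\<lambda>x. f x - g x) = L2_norm M (\<lambda>x. g x - f x)"
  using L2_norm_uminus[of "\<lambda>x. f x - g x"] by simp

lemma L2_tri_diff:
  assumes "in_L2 M f" "in_L2 M g" "in_L2 M h"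
  shows "L2_norm M (\<lambda>x. f x - h x) \<le> L2_norm M (\<lambda>x. f x - g x) + L2_norm M (\<lambda>x. g x - h x)"
  using L2_tri[OF L2_diff[OF assms(1,2)] L2_diff[OF assms(2,3)]] by simp

lemma L2_diff_ge:
  assumes "in_L2 M f" "in_L2 M g"
  shows "L2_norm M g - L2_norm M f \<le> L2_norm M (\<lambda>x. f x - g x)"
proof -
  have "L2_norm M (\<lambda>x. g x - 0) \<le> L2_norm M (\<lambda>x. g x - f x) + L2_norm M (\<lambda>x. f x - 0)"
    by (rule L2_tri_diff) (use assms L2_zero in auto)
  then show ?thesis using L2_norm_diff_sym[of f g] by simp
qed

lemma transl_L2:
  assumes f: "in_L2 M f"
  shows "in_L2 M (tr g f)" "L2_norm M (tr g f) = L2_norm M f"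
proof -
  have fm: "f \<in> borel_measurable M" using f by (simp add: in_L2_def)
  have D: "distr M M (gmul (ginv g)) = M" using haar by (simp add: normalized_haar_def)
  have m: "tr g f \<in> borel_measurable M"
    unfolding transl_def using measurable_comp[OF gmul_meas fm] by (simp add: o_def)
  have fm2: "(\<lambda>x. (cmod (f x))\<^sup>2) \<in> borel_measurable M" using fm by measurable
  have "integrable M (\<lambda>x. (cmod (f (gmul (ginv g) x)))\<^sup>2)"
    using integrable_distr_eq[OF gmul_meas fm2, of "ginv g"] D L2_int[OF f] by simp
  then show "in_L2 M (tr g f)" using m by (simp add: in_L2_def transl_def)
  show "L2_norm M (tr g f) = L2_norm M f"
    using integral_transl[OF fm2, of "ginv g"] by (simp add: L2_norm_def transl_def)
qed

lemma transl_diff: "tr g (\<lambda>x. f x - h x) = (\<lambda>x. tr g f x - tr g h x)"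
  by (simp add: transl_def)

lemma transl_inv: "tr g (tr (ginv g) f) = f"
  by (simp add: transl_def)

section \<open>Dictionary distance\<close>

context fixes q :: nat begin

definition DD :: "(nat \<Rightarrow> 'g \<Rightarrow> complex) \<Rightarrow> (nat \<Rightarrow> 'g \<Rightarrow> complex) \<Rightarrow> (nat \<Rightarrow> nat) \<Rightarrow> (nat \<Rightarrow> 'g) \<Rightarrow> real" where
  "DD A B \<pi> gs = Max ((\<lambda>j. L2_norm M (\<lambda>x. A j x - tr (gs j) (B (\<pi> j)) x)) ` {..<q})"

lemma dict_dist_DD: "dict_dist gmul ginv M q A B = Inf {DD A B \<pi> gs | \<pi> gs. \<pi> permutes {..<q}}"
  by (simp add: dict_dist_def DD_def)

lemma DD_ge_term: "j < q \<Longrightarrow> L2_norm M (\<lambda>x. A j x - tr (gs j) (B (\<pi> j)) x) \<le> DD A B \<pi> gs"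
  unfolding DD_def by (rule Max_ge) auto

lemma DD_nonneg: assumes "q \<ge> 1" shows "DD A B \<pi> gs \<ge> 0"
proof -
  have "0 < q" using assms by simp
  from DD_ge_term[OF this, of A gs B \<pi>] show ?thesis using L2_norm_nonneg order_trans by blast
qed

lemma DD_le: "q \<ge> 1 \<Longrightarrow> (\<And>j. j < q \<Longrightarrow> L2_norm M (\<lambda>x. A j x - tr (gs j) (B (\<pi> j)) x) \<le> c) \<Longrightarrow> DD A B \<pi> gs \<le> c"
  unfolding DD_def by (subst Max_le_iff) (auto simp: lessThan_empty_iff)

lemma perm_lt: "\<pi> permutes {..<q} \<Longrightarrow> j < q \<Longrightarrow> \<pi> j < q"
  using permutes_in_image[of \<pi> "{..<q}" j] by simp

lemma dd_set_ne: "{DD A B \<pi> gs | \<pi> gs. \<pi> permutes {..<q}} \<noteq> {}"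
  using permutes_id by blast

lemma dd_le_DD: assumes q: "q \<ge> 1" and p: "\<pi> permutes {..<q}"
  shows "dict_dist gmul ginv M q A B \<le> DD A B \<pi> gs"
  unfolding dict_dist_DD
proof (rule cInf_lower)
  show "DD A B \<pi> gs \<in> {DD A B \<pi> gs |\<pi> gs. \<pi> permutes {..<q}}" using p by blast
  show "bdd_below {DD A B \<pi> gs |\<pi> gs. \<pi> permutes {..<q}}"
    by (rule bdd_belowI[where m=0]) (use DD_nonneg[OF q] in blast)
qed

lemma dd_ge: "(\<And>\<pi> gs. \<pi> permutes {..<q} \<Longrightarrow> c \<le> DD A B \<pi> gs) \<Longrightarrow> c \<le> dict_dist gmul ginv M q A B"
  unfolding dict_dist_DD by (rule cInf_greatest[OF dd_set_ne]) auto

lemma dd_nonneg: "q \<ge> 1 \<Longrightarrow> dict_dist gmul ginv M q A B \<ge> 0"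
  by (rule dd_ge) (rule DD_nonneg)

lemma dd_sym_le:
  assumes q: "q \<ge> 1" and hA: "\<And>j. j < q \<Longrightarrow> in_L2 M (A j)" and hB: "\<And>j. j < q \<Longrightarrow> in_L2 M (B j)"
  shows "dict_dist gmul ginv M q A B \<le> dict_dist gmul ginv M q B A"
proof (rule dd_ge)
  fix \<pi> gs assume p: "\<pi> permutes {..<q}"
  define \<pi>' where "\<pi>' = inv_into UNIV \<pi>"
  define gs' where "gs' = (\<lambda>j. ginv (gs (\<pi>' j)))"
  have p': "\<pi>' permutes {..<q}" using permutes_inv[OF p] by (simp add: \<pi>'_def)
  have "DD A B \<pi>' gs' \<le> DD B A \<pi> gs"
  proof (rule DD_le[OF q])
    fix j assume j: "j < q"
    define i where "i = \<pi>' j"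
    have i: "i < q" using perm_lt[OF p' j] by (simp add: i_def)
    have pi: "\<pi> i = j" using p by (simp add: i_def \<pi>'_def permutes_inverses(1))
    have "L2_norm M (\<lambda>x. A j x - tr (gs' j) (B (\<pi>' j)) x)
        = L2_norm M (\<lambda>x. A (\<pi> i) x - tr (ginv (gs i)) (B i) x)"
      by (simp add: gs'_def i_def[symmetric] pi)
    also have "\<dots> = L2_norm M (tr (gs i) (\<lambda>x. A (\<pi> i) x - tr (ginv (gs i)) (B i) x))"
      by (rule transl_L2(2)[symmetric]) (intro L2_diff hA hB transl_L2(1) i perm_lt[OF p])
    also have "\<dots> = L2_norm M (\<lambda>x. tr (gs i) (A (\<pi> i)) x - B i x)"
      by (simp add: transl_diff transl_inv)
    also have "\<dots> = L2_norm M (\<lambda>x. B i x - tr (gs i) (A (\<pi> i)) x)"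
      by (rule L2_norm_diff_sym)
    also have "\<dots> \<le> DD B A \<pi> gs" by (rule DD_ge_term[OF i])
    finally show "L2_norm M (\<lambda>x. A j x - tr (gs' j) (B (\<pi>' j)) x) \<le> DD B A \<pi> gs" .
  qed
  then show "dict_dist gmul ginv M q A B \<le> DD B A \<pi> gs"
    using dd_le_DD[OF q p', of A B gs'] by linarith
qed

lemma dd_sym:
  assumes q: "q \<ge> 1" and hA: "\<And>j. j < q \<Longrightarrow> in_L2 M (A j)" and hB: "\<And>j. j < q \<Longrightarrow> in_L2 M (B j)"
  shows "dict_dist gmul ginv M q A B = dict_dist gmul ginv M q B A"
  using dd_sym_le[of A B, OF q hA hB] dd_sym_le[of B A, OF q hB hA] by linarith

lemma dd_perturb:
  assumes q: "q \<ge> 1" and hA: "\<And>j. j < q \<Longrightarrow> in_L2 M (A j)" and hB: "\<And>j. j < q \<Longrightarrow> in_L2 M (B j)"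
    and hB': "\<And>j. j < q \<Longrightarrow> in_L2 M (B' j)"
    and D: "\<And>j. j < q \<Longrightarrow> L2_norm M (\<lambda>x. B' j x - B j x) \<le> D"
  shows "dict_dist gmul ginv M q A B \<le> dict_dist gmul ginv M q A B' + D"
proof -
  have "dict_dist gmul ginv M q A B - D \<le> dict_dist gmul ginv M q A B'"
  proof (rule dd_ge)
    fix \<pi> gs assume p: "\<pi> permutes {..<q}"
    have "DD A B \<pi> gs \<le> DD A B' \<pi> gs + D"
    proof (rule DD_le[OF q])
      fix j assume j: "j < q"
      have pj: "\<pi> j < q" using p j by (rule perm_lt)
      have "L2_norm M (\<lambda>x. A j x - tr (gs j) (B (\<pi> j)) x)
          \<le> L2_norm M (\<lambda>x. A j x - tr (gs j) (B' (\<pi> j)) x) + L2_norm M (\<lambda>x. tr (gs j) (B' (\<pi> j)) x - tr (gs j) (B (\<pi> j)) x)"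
        by (rule L2_tri_diff) (auto intro!: hA hB hB' transl_L2(1) j pj)
      also have "L2_norm M (\<lambda>x. tr (gs j) (B' (\<pi> j)) x - tr (gs j) (B (\<pi> j)) x) = L2_norm M (\<lambda>x. B' (\<pi> j) x - B (\<pi> j) x)"
        using transl_L2(2)[OF L2_diff[OF hB' hB], of "\<pi> j" "\<pi> j" "gs j"] pj by (simp add: transl_diff)
      also have "\<dots> \<le> D" by (rule D[OF pj])
      finally have "L2_norm M (\<lambda>x. A j x - tr (gs j) (B (\<pi> j)) x) \<le> L2_norm M (\<lambda>x. A j x - tr (gs j) (B' (\<pi> j)) x) + D"
        by simp
      also have "\<dots> \<le> DD A B' \<pi> gs + D" using DD_ge_term[OF j] by simp
      finally show "L2_norm M (\<lambda>x. A j x - tr (gs j) (B (\<pi> j)) x) \<le> DD A B' \<pi> gs + D" .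
    qed
    then show "dict_dist gmul ginv M q A B - D \<le> DD A B' \<pi> gs" using dd_le_DD[OF q p, of A B gs] by linarith
  qed
  then show ?thesis by linarith
qed

lemma dd_lower:
  assumes q: "q \<ge> 1" and hA: "\<And>j. j < q \<Longrightarrow> in_L2 M (A j)" and hB: "\<And>j. j < q \<Longrightarrow> in_L2 M (B j)"
    and j0: "j0 < q"
  shows "L2_norm M (B j0) - (\<Sum>j<q. L2_norm M (A j)) \<le> dict_dist gmul ginv M q A B"
proof (rule dd_ge)
  fix \<pi> gs assume p: "\<pi> permutes {..<q}"
  define j where "j = inv_into UNIV \<pi> j0"
  have j: "j < q" using perm_lt[OF permutes_inv[OF p] j0] by (simp add: j_def)
  have pj: "\<pi> j = j0" using p by (simp add: j_def permutes_inverses(1))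
  have "L2_norm M (B j0) - (\<Sum>j<q. L2_norm M (A j)) \<le> L2_norm M (B j0) - L2_norm M (A j)"
    using member_le_sum[of j "{..<q}" "\<lambda>j. L2_norm M (A j)"] j L2_norm_nonneg by auto
  also have "\<dots> = L2_norm M (tr (gs j) (B (\<pi> j))) - L2_norm M (A j)"
    using transl_L2(2)[OF hB[OF j0]] pj by simp
  also have "\<dots> \<le> L2_norm M (\<lambda>x. A j x - tr (gs j) (B (\<pi> j)) x)"
    by (rule L2_diff_ge) (use hA hB j j0 pj transl_L2(1) in auto)
  also have "\<dots> \<le> DD A B \<pi> gs" by (rule DD_ge_term[OF j])
  finally show "L2_norm M (B j0) - (\<Sum>j<q. L2_norm M (A j)) \<le> DD A B \<pi> gs" .
qed

end

end


section \<open>Atomic norm and plus norm\<close>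

lemma atomic_norm_nonneg: "atomic_norm d \<rho> z \<ge> 0"
  unfolding atomic_norm_def by (rule Inf_greatest) auto

lemma plus_norm_nonneg: "plus_norm d \<rho> H t \<ge> 0"
  unfolding plus_norm_def by (rule Inf_greatest) (auto intro: atomic_norm_nonneg)

lemma plus_norm_le_atomic: "block_op d UNIV z \<Longrightarrow> (\<And>\<xi>. \<xi> \<in> H \<Longrightarrow> z \<xi> = t \<xi>) \<Longrightarrow> plus_norm d \<rho> H t \<le> atomic_norm d \<rho> z"
  unfolding plus_norm_def by (rule Inf_lower) auto

lemma plus_norm_restrict:
  assumes "block_op d UNIV l" "\<And>\<xi>. \<xi> \<in> H \<Longrightarrow> l' \<xi> = l \<xi>"
  shows "plus_norm d \<rho> H l' \<le> plus_norm d \<rho> UNIV l"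
  unfolding plus_norm_def by (rule Inf_superset_mono) (use assms in auto)

lemma plus_norm_approx:
  assumes fin: "plus_norm d \<rho> H l < \<infinity>" and \<eta>: "\<eta> > 0"
  shows "\<exists>z. block_op d UNIV z \<and> (\<forall>\<xi>\<in>H. z \<xi> = l \<xi>) \<and> atomic_norm d \<rho> z < plus_norm d \<rho> H l + ereal \<eta>"
proof -
  let ?P = "plus_norm d \<rho> H l"
  have "?P \<noteq> -\<infinity>" using plus_norm_nonneg[of d \<rho> H l] by auto
  then obtain r where r: "?P = ereal r" using fin by (cases ?P) auto
  then have "?P < ?P + ereal \<eta>" using \<eta> by simp
  then have "Inf {atomic_norm d \<rho> z | z. block_op d UNIV z \<and> (\<forall>\<xi>\<in>H. z \<xi> = l \<xi>)} < ?P + ereal \<eta>"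
    by (simp add: plus_norm_def)
  then show ?thesis by (auto simp: Inf_less_iff)
qed

lemma smult_smult_mat': "a \<cdot>\<^sub>m (b \<cdot>\<^sub>m (A :: 'a::comm_ring_1 mat)) = (a * b) \<cdot>\<^sub>m A"
  by (rule eq_matI) (auto simp: mult.assoc)

lemma cvec_norm_smult: "cvec_norm (c \<cdot>\<^sub>v v) = cmod c * cvec_norm v"
proof -
  have "(\<Sum>i<dim_vec v. (cmod (c * v $ i))\<^sup>2) = (cmod c)\<^sup>2 * (\<Sum>i<dim_vec v. (cmod (v $ i))\<^sup>2)"
    by (simp add: norm_mult power_mult_distrib sum_distrib_left)
  then show ?thesis by (simp add: cvec_norm_def real_sqrt_mult)
qed

lemma cvec_norm_nonneg: "cvec_norm v \<ge> 0"
  by (simp add: cvec_norm_def sum_nonneg)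

lemma smult_mat_vec: "A \<in> carrier_mat n m \<Longrightarrow> v \<in> carrier_vec m \<Longrightarrow> (c \<cdot>\<^sub>m A) *\<^sub>v v = c \<cdot>\<^sub>v (A *\<^sub>v v)"
  by (rule eq_vecI) (auto simp: scalar_prod_def sum_distrib_left mult.assoc)

lemma block_op_smult:
  assumes "block_op d H l"
  shows "block_op d H (\<lambda>\<xi>. c \<cdot>\<^sub>m l \<xi>)"
proof -
  obtain C where C: "\<forall>\<xi>\<in>H. \<forall>v\<in>carrier_vec (d \<xi>). cvec_norm (l \<xi> *\<^sub>v v) \<le> C * cvec_norm v"
    using assms by (auto simp: block_op_def)
  have "\<forall>\<xi>\<in>H. \<forall>v\<in>carrier_vec (d \<xi>). cvec_norm ((c \<cdot>\<^sub>m l \<xi>) *\<^sub>v v) \<le> (cmod c * C) * cvec_norm v"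
  proof (intro ballI)
    fix \<xi> and v :: "complex vec" assume "\<xi> \<in> H" "v \<in> carrier_vec (d \<xi>)"
    moreover have "l \<xi> \<in> carrier_mat (d \<xi>) (d \<xi>)" using assms by (simp add: block_op_def)
    ultimately show "cvec_norm ((c \<cdot>\<^sub>m l \<xi>) *\<^sub>v v) \<le> (cmod c * C) * cvec_norm v"
      using C by (auto simp: smult_mat_vec[of _ "d \<xi>" "d \<xi>"] cvec_norm_smult mult.assoc intro!: mult_left_mono)
  qed
  then show ?thesis using assms by (auto simp: block_op_def)
qed

lemma block_op_UNIV:
  assumes "block_op d H l"
  shows "block_op d UNIV l"
proof -
  obtain C where C: "\<forall>\<xi>\<in>H. \<forall>v\<in>carrier_vec (d \<xi>). cvec_norm (l \<xi> *\<^sub>v v) \<le> C * cvec_norm v"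
    using assms by (auto simp: block_op_def)
  have "\<forall>\<xi>. \<forall>v\<in>carrier_vec (d \<xi>). cvec_norm (l \<xi> *\<^sub>v v) \<le> max C 0 * cvec_norm v"
  proof (intro allI ballI)
    fix \<xi> and v :: "complex vec" assume v: "v \<in> carrier_vec (d \<xi>)"
    show "cvec_norm (l \<xi> *\<^sub>v v) \<le> max C 0 * cvec_norm v"
    proof (cases "\<xi> \<in> H")
      case True
      then have "cvec_norm (l \<xi> *\<^sub>v v) \<le> C * cvec_norm v" using C v by auto
      also have "\<dots> \<le> max C 0 * cvec_norm v" by (intro mult_right_mono) (auto simp: cvec_norm_nonneg)
      finally show ?thesis .
    next
      case False
      then have "l \<xi> = 0\<^sub>m (d \<xi>) (d \<xi>)" using assms by (simp add: block_op_def)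
      then have "cvec_norm (l \<xi> *\<^sub>v v) = 0" using v by (simp add: cvec_norm_def)
      then show ?thesis by (simp add: cvec_norm_nonneg)
    qed
  qed
  then show ?thesis using assms by (auto simp: block_op_def)
qed

lemma block_op_restrict:
  assumes "block_op d UNIV l"
  shows "block_op d H (\<lambda>\<xi>. if \<xi> \<in> H then l \<xi> else 0\<^sub>m (d \<xi>) (d \<xi>))"
  using assms by (auto simp: block_op_def)

lemma block_op_zero: "block_op d H (\<lambda>\<xi>. 0\<^sub>m (d \<xi>) (d \<xi>))"
  unfolding block_op_def by (auto intro!: exI[of _ 0] simp: cvec_norm_def)

lemma atomic_norm_scale:
  assumes c: "0 \<le> c" "c \<le> 1"
  shows "atomic_norm d \<rho> (\<lambda>\<xi>. complex_of_real c \<cdot>\<^sub>m z \<xi>) \<le> atomic_norm d \<rho> z"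
  unfolding atomic_norm_def
proof (rule Inf_greatest)
  fix x assume "x \<in> {ereal t |t. 0 \<le> t \<and> (\<exists>w\<in>block_closure d (block_conv d (atoms \<rho>)). z = (\<lambda>\<xi>. complex_of_real t \<cdot>\<^sub>m w \<xi>))}"
  then obtain t w where t: "x = ereal t" "0 \<le> t" "w \<in> block_closure d (block_conv d (atoms \<rho>))"
    "z = (\<lambda>\<xi>. complex_of_real t \<cdot>\<^sub>m w \<xi>)" by blast
  have "(\<lambda>\<xi>. complex_of_real c \<cdot>\<^sub>m z \<xi>) = (\<lambda>\<xi>. complex_of_real (c * t) \<cdot>\<^sub>m w \<xi>)"
    using t by (simp add: smult_smult_mat')
  then have "ereal (c * t) \<in> {ereal t |t. 0 \<le> t \<and> (\<exists>w\<in>block_closure d (block_conv d (atoms \<rho>)). (\<lambda>\<xi>. complex_of_real c \<cdot>\<^sub>m z \<xi>) = (\<lambda>\<xi>. complex_of_real t \<cdot>\<^sub>m w \<xi>))}"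
    using t c by auto
  then have "Inf {ereal t |t. 0 \<le> t \<and> (\<exists>w\<in>block_closure d (block_conv d (atoms \<rho>)). (\<lambda>\<xi>. complex_of_real c \<cdot>\<^sub>m z \<xi>) = (\<lambda>\<xi>. complex_of_real t \<cdot>\<^sub>m w \<xi>))} \<le> ereal (c * t)"
    by (rule Inf_lower)
  also have "ereal (c * t) \<le> x" using t c by (simp add: mult_left_le_one_le)
  finally show "Inf {ereal t |t. 0 \<le> t \<and> (\<exists>w\<in>block_closure d (block_conv d (atoms \<rho>)). (\<lambda>\<xi>. complex_of_real c \<cdot>\<^sub>m z \<xi>) = (\<lambda>\<xi>. complex_of_real t \<cdot>\<^sub>m w \<xi>))} \<le> x" .
qed

lemma plus_norm_scale:
  assumes c: "0 \<le> c" "c \<le> 1"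
  shows "plus_norm d \<rho> H (\<lambda>\<xi>. complex_of_real c \<cdot>\<^sub>m l \<xi>) \<le> plus_norm d \<rho> H l"
  unfolding plus_norm_def
proof (rule Inf_greatest)
  fix x assume "x \<in> {atomic_norm d \<rho> z |z. block_op d UNIV z \<and> (\<forall>\<xi>\<in>H. z \<xi> = l \<xi>)}"
  then obtain z where z: "x = atomic_norm d \<rho> z" "block_op d UNIV z" "\<forall>\<xi>\<in>H. z \<xi> = l \<xi>" by blast
  have "Inf {atomic_norm d \<rho> z |z. block_op d UNIV z \<and> (\<forall>\<xi>\<in>H. z \<xi> = complex_of_real c \<cdot>\<^sub>m l \<xi>)}
      \<le> atomic_norm d \<rho> (\<lambda>\<xi>. complex_of_real c \<cdot>\<^sub>m z \<xi>)"
    by (rule Inf_lower) (auto intro!: exI[of _ "\<lambda>\<xi>. complex_of_real c \<cdot>\<^sub>m z \<xi>"] block_op_smult z(2) simp: z(3))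
  also have "\<dots> \<le> x" using atomic_norm_scale[OF c] z by simp
  finally show "Inf {atomic_norm d \<rho> z |z. block_op d UNIV z \<and> (\<forall>\<xi>\<in>H. z \<xi> = complex_of_real c \<cdot>\<^sub>m l \<xi>)} \<le> x" .
qed

section \<open>Frobenius norms\<close>

lemma frob_sq: "(frob_norm A)\<^sup>2 = (\<Sum>i<dim_row A. \<Sum>j<dim_col A. (cmod (A $$ (i,j)))\<^sup>2)"
proof -
  have "0 \<le> (\<Sum>i<dim_row A. \<Sum>j<dim_col A. (cmod (A $$ (i,j)))\<^sup>2)" by (intro sum_nonneg) auto
  then show ?thesis by (simp add: frob_norm_def)
qed

lemma frob_nonneg: "frob_norm A \<ge> 0"
  unfolding frob_norm_def by (intro real_sqrt_ge_zero sum_nonneg) auto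

lemma frob_mult_cadj:
  assumes X: "X \<in> carrier_mat n n" and L: "L \<in> carrier_mat n n"
    and C: "\<forall>v\<in>carrier_vec n. cvec_norm (L *\<^sub>v v) \<le> C * cvec_norm v"
  shows "(frob_norm (X * cadj L))\<^sup>2 \<le> C\<^sup>2 * (frob_norm X)\<^sup>2"
proof -
  have row: "(\<Sum>b<n. (cmod ((X * cadj L) $$ (a,b)))\<^sup>2) \<le> C\<^sup>2 * (\<Sum>c<n. (cmod (X $$ (a,c)))\<^sup>2)" if a: "a < n" for a
  proof -
    define v where "v = vec n (\<lambda>c. cnj (X $$ (a,c)))"
    have v: "v \<in> carrier_vec n" by (simp add: v_def)
    have ent: "(L *\<^sub>v v) $ b = cnj ((X * cadj L) $$ (a,b))" if b: "b < n" for b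
      using X L a b by (simp add: v_def scalar_prod_def lessThan_atLeast0 mult.commute)
    have "(cvec_norm (L *\<^sub>v v))\<^sup>2 = (\<Sum>b<n. (cmod ((L *\<^sub>v v) $ b))\<^sup>2)"
      using L v by (simp add: cvec_norm_def sum_nonneg del: index_mult_mat_vec)
    also have "\<dots> = (\<Sum>b<n. (cmod ((X * cadj L) $$ (a,b)))\<^sup>2)"
      by (rule sum.cong) (simp_all add: ent del: index_mult_mat_vec)
    finally have "(\<Sum>b<n. (cmod ((X * cadj L) $$ (a,b)))\<^sup>2) = (cvec_norm (L *\<^sub>v v))\<^sup>2" by simp
    also have "\<dots> \<le> (C * cvec_norm v)\<^sup>2"
      using C v by (intro power_mono) (auto simp: cvec_norm_nonneg)
    also have "\<dots> = C\<^sup>2 * (\<Sum>c<n. (cmod (X $$ (a,c)))\<^sup>2)"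
      by (simp add: cvec_norm_def power_mult_distrib sum_nonneg v_def)
    finally show ?thesis .
  qed
  have "(frob_norm (X * cadj L))\<^sup>2 = (\<Sum>a<n. \<Sum>b<n. (cmod ((X * cadj L) $$ (a,b)))\<^sup>2)"
    using X L by (simp add: frob_sq)
  also have "\<dots> \<le> (\<Sum>a<n. C\<^sup>2 * (\<Sum>c<n. (cmod (X $$ (a,c)))\<^sup>2))" by (intro sum_mono row) auto
  also have "\<dots> = C\<^sup>2 * (frob_norm X)\<^sup>2" using X by (simp add: frob_sq sum_distrib_left)
  finally show ?thesis .
qed

lemma sum_sq_le: "(cmod (\<Sum>j<q. z j))\<^sup>2 \<le> real q * (\<Sum>j<q. (cmod (z j))\<^sup>2)"
proof -
  have "(cmod (\<Sum>j<q. z j))\<^sup>2 \<le> (\<Sum>j<q. cmod (z j))\<^sup>2"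
    by (intro power_mono norm_sum) auto
  also have "\<dots> = (\<Sum>j<q. cmod (z j) * 1)\<^sup>2" by simp
  also have "\<dots> \<le> (\<Sum>j<q. (cmod (z j))\<^sup>2) * (\<Sum>j<q. 1\<^sup>2)" by (rule Cauchy_Schwarz_ineq_sum)
  finally show ?thesis by (simp add: mult.commute)
qed



lemma esummable[simp]: "(f :: 'a \<Rightarrow> ennreal) summable_on A"
  by (rule nonneg_summable_on_complete) simp

lemma einfsum_split: "infsum (f :: 'a \<Rightarrow> ennreal) UNIV = infsum f A + infsum f (- A)"
proof -
  have "infsum f (A \<union> - A) = infsum f A + infsum f (- A)"
    by (rule infsum_Un_disjoint) auto
  then show ?thesis by simp
qed

lemma einfsum_split_gen: "A \<subseteq> B \<Longrightarrow> infsum (f :: 'a \<Rightarrow> ennreal) B = infsum f A + infsum f (B - A)"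
proof -
  assume "A \<subseteq> B"
  then have "B = A \<union> (B - A)" by auto
  moreover have "infsum f (A \<union> (B - A)) = infsum f A + infsum f (B - A)"
    by (rule infsum_Un_disjoint) auto
  ultimately show ?thesis by simp
qed

lemma einfsum_mono: "A \<subseteq> B \<Longrightarrow> (\<And>x. x \<in> A \<Longrightarrow> f x \<le> g x) \<Longrightarrow> infsum (f :: 'a \<Rightarrow> ennreal) A \<le> infsum g B"
proof -
  assume AB: "A \<subseteq> B" and fg: "\<And>x. x \<in> A \<Longrightarrow> f x \<le> g x"
  have "infsum f A \<le> infsum g A" by (rule infsum_mono) (auto simp: fg)
  also have "\<dots> \<le> infsum g B" using einfsum_split_gen[OF AB, of g] by simp
  finally show ?thesis .
qed

lemma einfsum_add: "infsum (\<lambda>x. (f x :: ennreal) + g x) A = infsum f A + infsum g A"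
  by (rule infsum_add) auto

lemma einfsum_sum: "finite J \<Longrightarrow> infsum (\<lambda>x. \<Sum>j\<in>J. (f j x :: ennreal)) A = (\<Sum>j\<in>J. infsum (f j) A)"
  by (induction J rule: finite_induct) (auto simp: einfsum_add)

lemma einfsum_cmult: "infsum (\<lambda>x. c * (f x :: ennreal)) A = c * infsum f A"
  by (simp add: nonneg_infsum_complete SUP_mult_left_ennreal sum_distrib_left)

lemma einfsum_zero: "(\<And>x. x \<in> A \<Longrightarrow> f x = 0) \<Longrightarrow> infsum (f :: 'a \<Rightarrow> ennreal) A = 0"
  by (simp add: infsum_0)

lemma einfsum_point: "infsum (f :: 'a \<Rightarrow> ennreal) UNIV = f a + infsum f (- {a})"
  using einfsum_split[of f "{a}"] by simp

lemma einfsum_tail: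
  assumes fin: "infsum (f :: 'a \<Rightarrow> ennreal) UNIV < \<infinity>" and e: "e > 0"
  shows "\<exists>F. finite F \<and> infsum f (- F) < ennreal e"
proof -
  let ?S = "infsum f UNIV"
  obtain s where s: "?S = ennreal s" "s \<ge> 0" using fin
    by (metis ennreal_cases infinity_ennreal_def less_irrefl)
  show ?thesis
  proof (cases "s < e")
    case True
    then show ?thesis using s e by (intro exI[of _ "{}"]) (simp add: ennreal_lessI)
  next
    case False
    have S: "?S = (SUP F\<in>{F. finite F \<and> F \<subseteq> UNIV}. sum f F)"
      by (rule nonneg_infsum_complete) auto
    have "ennreal (s - e) < ?S" using s e False by (simp add: ennreal_lessI)
    then obtain F where F: "finite F" "ennreal (s - e) < sum f F"
      using S by (auto simp: less_SUP_iff)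
    have "sum f F = infsum f F" using F by simp
    then have split: "?S = sum f F + infsum f (- F)" using einfsum_split[of f F] by simp
    have "infsum f (- F) < ennreal e"
    proof (rule ccontr)
      assume "\<not> infsum f (- F) < ennreal e"
      then have "ennreal e \<le> infsum f (- F)" by simp
      then have "sum f F + ennreal e \<le> ?S" using split by (simp add: add_left_mono)
      moreover have "ennreal (s - e) + ennreal e < sum f F + ennreal e"
        using F(2) e by (simp add: ennreal_add_left_cancel_less)
      moreover have "ennreal (s - e) + ennreal e = ennreal s"
        using e False by (simp add: ennreal_plus[symmetric])
      ultimately show False using s by simp
    qed
    then show ?thesis using F(1) by blast
  qed
qed

lemma ereal_add_finite: "\<bar>(x::ereal) + y\<bar> \<noteq> \<infinity> \<Longrightarrow> \<bar>x\<bar> \<noteq> \<infinity> \<and> \<bar>y\<bar> \<noteq> \<infinity>"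
  by (cases x; cases y) auto

lemma ereal_sum_finite: "finite A \<Longrightarrow> \<bar>\<Sum>a\<in>A. (f a :: ereal)\<bar> \<noteq> \<infinity> \<Longrightarrow> a \<in> A \<Longrightarrow> \<bar>f a\<bar> \<noteq> \<infinity>"
proof (induction A rule: finite_induct)
  case empty then show ?case by simp
next
  case (insert b A)
  then have "\<bar>f b + (\<Sum>a\<in>A. f a)\<bar> \<noteq> \<infinity>" by simp
  then have "\<bar>f b\<bar> \<noteq> \<infinity> \<and> \<bar>\<Sum>a\<in>A. f a\<bar> \<noteq> \<infinity>" by (rule ereal_add_finite)
  then show ?case using insert by auto
qed

lemma enn2ereal_add: "enn2ereal (a + b) = enn2ereal a + enn2ereal b"
  by (simp add: plus_ennreal.rep_eq)

lemma enn2ereal_mono: "a \<le> b \<Longrightarrow> enn2ereal a \<le> enn2ereal b"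
  by (simp add: less_eq_ennreal.rep_eq)

lemma enn2ereal_fin: "enn2ereal a \<noteq> \<infinity> \<Longrightarrow> a < \<infinity>"
  by (simp add: top.not_eq_extremum)



lemma ereal_antimono_neg: "c \<le> 0 \<Longrightarrow> (a::ereal) \<le> b \<Longrightarrow> ereal c * b \<le> ereal c * a"
  by (cases a; cases b; cases "c = 0") (auto simp: mult_left_mono_neg)

lemma frob_smult: "(frob_norm (c \<cdot>\<^sub>m A))\<^sup>2 = (cmod c)\<^sup>2 * (frob_norm A)\<^sup>2"
  by (simp add: frob_sq norm_mult power_mult_distrib sum_distrib_left)

lemma frob_zero: "frob_norm (0\<^sub>m m n) = 0"
  by (simp add: frob_norm_def)

locale prb = chg gmul ginv e M d \<rho>
  for gmul :: "'g::t2_space \<Rightarrow> 'g \<Rightarrow> 'g" and ginv e M and d :: "'x \<Rightarrow> nat" and \<rho> +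
  fixes n q :: nat and y :: "nat \<Rightarrow> 'g \<Rightarrow> real" and lam :: real and \<mu> :: "nat \<Rightarrow> real"
  assumes ydat: "\<forall>i<n. y i \<in> borel_measurable M \<and> integrable M (\<lambda>x. (y i x)\<^sup>2)"
    and q1: "q \<ge> 1" and lam0: "lam \<ge> 0"
begin

definition yc :: "nat \<Rightarrow> 'g \<Rightarrow> complex" where "yc i = (\<lambda>x. complex_of_real (y i x))"

lemma yc_L2: "i < n \<Longrightarrow> in_L2 M (yc i)"
  using ydat by (auto simp: in_L2_def yc_def)

definition res where
  "res \<phi> l i \<xi> = mat (d \<xi>) (d \<xi>) (\<lambda>ab.
              fourier M d \<rho> (\<lambda>x. complex_of_real (y i x)) \<xi> $$ ab -
              (\<Sum>j<q. (fourier M d \<rho> (\<phi> j) \<xi> * cadj (l i j \<xi>)) $$ ab))"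

definition dat where
  "dat \<phi> l i \<xi> = (real (d \<xi>))\<^sup>2 / 2 * (frob_norm (res \<phi> l i \<xi>))\<^sup>2"

definition nrm where
  "nrm f \<xi> = (real (d \<xi>))\<^sup>2 * (frob_norm (four f \<xi>))\<^sup>2"

definition Yd where
  "Yd i \<xi> = (real (d \<xi>))\<^sup>2 / 2 * (frob_norm (four (yc i) \<xi>))\<^sup>2"

definition DS where "DS H \<phi> l i = infsum (\<lambda>\<xi>. ennreal (dat \<phi> l i \<xi>)) H"
definition NS where "NS H f = infsum (\<lambda>\<xi>. ennreal (nrm f \<xi>)) H"
definition Yt where "Yt i A = infsum (\<lambda>\<xi>. ennreal (Yd i \<xi>)) A"
definition PP where "PP H l i = (\<Sum>j<q. plus_norm d \<rho> H (l i j))"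

abbreviation "obj \<equiv> objective M d \<rho> n y q lam \<mu>"
abbreviation "feas \<equiv> feasible M d \<rho> n q"
abbreviation "OP \<equiv> OPT M d \<rho> n y q lam \<mu>"

lemma obj_eq: "obj H \<phi> l = (\<Sum>i<n. enn2ereal (DS H \<phi> l i) + ereal lam * PP H l i)
     + (\<Sum>j<q. ereal (\<mu> j) * enn2ereal (NS H (\<phi> j)))"
  unfolding objective_def DS_def NS_def PP_def dat_def nrm_def res_def ..

lemma OP_le: "feas H \<phi> l \<Longrightarrow> OP H \<le> obj H \<phi> l"
  unfolding OPT_def by (rule Inf_lower) blast

lemma dat_nonneg: "dat \<phi> l i \<xi> \<ge> 0" by (simp add: dat_def)
lemma nrm_nonneg: "nrm f \<xi> \<ge> 0" by (simp add: nrm_def)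
lemma Yd_nonneg: "Yd i \<xi> \<ge> 0" by (simp add: Yd_def)

lemma PP_nonneg: "PP H l i \<ge> 0"
  unfolding PP_def by (rule sum_nonneg) (rule plus_norm_nonneg)

lemma res_cong:
  assumes "\<And>j. j < q \<Longrightarrow> four (\<phi> j) \<xi> = four (\<phi>' j) \<xi>" "\<And>j. j < q \<Longrightarrow> l i j \<xi> = l' i j \<xi>"
  shows "res \<phi> l i \<xi> = res \<phi>' l' i \<xi>"
  unfolding res_def using assms by (intro eq_matI) auto

lemma dat_cong:
  assumes "\<And>j. j < q \<Longrightarrow> four (\<phi> j) \<xi> = four (\<phi>' j) \<xi>" "\<And>j. j < q \<Longrightarrow> l i j \<xi> = l' i j \<xi>"
  shows "dat \<phi> l i \<xi> = dat \<phi>' l' i \<xi>"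
  unfolding dat_def using res_cong[of \<phi> \<xi> \<phi>' l i l', OF assms] by simp

lemma dat_zero:
  assumes "\<And>j. j < q \<Longrightarrow> four (\<phi> j) \<xi> = 0\<^sub>m (d \<xi>) (d \<xi>)"
    and "\<And>j. j < q \<Longrightarrow> l i j \<xi> \<in> carrier_mat (d \<xi>) (d \<xi>)"
  shows "dat \<phi> l i \<xi> = Yd i \<xi>"
proof -
  have z: "(four (\<phi> ja) \<xi> * cadj (l i ja \<xi>)) $$ (a,b) = 0" if "ja < q" "a < d \<xi>" "b < d \<xi>" for ja a b
    using assms(1)[OF that(1)] assms(2)[OF that(1)] that by (auto simp: carrier_matD scalar_prod_def intro!: sum.neutral)
  have "res \<phi> l i \<xi> = four (yc i) \<xi>"
    unfolding res_def yc_def using z by (intro eq_matI) auto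
  then show ?thesis by (simp add: dat_def Yd_def)
qed

lemma feas_carrier: "feas H \<phi> l \<Longrightarrow> i < n \<Longrightarrow> j < q \<Longrightarrow> l i j \<xi> \<in> carrier_mat (d \<xi>) (d \<xi>)"
  by (simp add: feasible_def block_op_def)

lemma feas_L2: "feas H \<phi> l \<Longrightarrow> j < q \<Longrightarrow> in_L2 M (\<phi> j)"
  by (simp add: feasible_def in_L2_H_def)

lemma feas_out: "feas H \<phi> l \<Longrightarrow> j < q \<Longrightarrow> \<xi> \<notin> H \<Longrightarrow> four (\<phi> j) \<xi> = 0\<^sub>m (d \<xi>) (d \<xi>)"
  by (simp add: feasible_def in_L2_H_def)

lemma feas_block: "feas H \<phi> l \<Longrightarrow> i < n \<Longrightarrow> j < q \<Longrightarrow> block_op d H (l i j)"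
  by (simp add: feasible_def)

end


lemma smult_cancel_cadj:
  assumes F: "F \<in> carrier_mat m m" and L: "L \<in> carrier_mat m m" and t: "t \<noteq> 0"
  shows "(complex_of_real t \<cdot>\<^sub>m F) * cadj (complex_of_real (1/t) \<cdot>\<^sub>m L) = F * cadj L"
proof -
  have "cadj (complex_of_real (1/t) \<cdot>\<^sub>m L) = complex_of_real (1/t) \<cdot>\<^sub>m cadj L"
    by (simp add: cadj_smult)
  then have "(complex_of_real t \<cdot>\<^sub>m F) * cadj (complex_of_real (1/t) \<cdot>\<^sub>m L)
      = (complex_of_real t \<cdot>\<^sub>m F) * (complex_of_real (1/t) \<cdot>\<^sub>m cadj L)" by simp
  also have "\<dots> = complex_of_real t \<cdot>\<^sub>m (F * (complex_of_real (1/t) \<cdot>\<^sub>m cadj L))"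
    by (rule mult_smult_assoc_mat[OF F, where nc=m]) (use L in simp)
  also have "\<dots> = complex_of_real t \<cdot>\<^sub>m (complex_of_real (1/t) \<cdot>\<^sub>m (F * cadj L))"
    by (subst mult_smult_distrib[OF F, where nc=m]) (use L in simp_all)
  also have "\<dots> = F * cadj L" using t by (intro eq_matI) auto
  finally show ?thesis .
qed

locale mn = prb gmul ginv e M d \<rho> n q y lam \<mu>
  for gmul :: "'g::t2_space \<Rightarrow> 'g \<Rightarrow> 'g" and ginv e M and d :: "'x \<Rightarrow> nat" and \<rho> n q y lam \<mu> +
  fixes \<Phi> :: "nat \<Rightarrow> 'g \<Rightarrow> complex" and l0 :: "nat \<Rightarrow> nat \<Rightarrow> 'x \<Rightarrow> complex mat" and \<delta> :: "real \<Rightarrow> real"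
  assumes f\<Phi>: "feas UNIV \<Phi> l0" and o\<Phi>: "obj UNIV \<Phi> l0 = OP UNIV"
    and \<delta>lim: "(\<delta> \<longlongrightarrow> 0) (at_right 0)"
    and CU: "\<And>\<epsilon> \<psi> l. \<epsilon> \<ge> 0 \<Longrightarrow> feas UNIV \<psi> l \<Longrightarrow> obj UNIV \<psi> l = OP UNIV + ereal \<epsilon> \<Longrightarrow>
               dict_dist gmul ginv M q \<Phi> \<psi> \<le> \<delta> \<epsilon>"
begin

abbreviation "dst \<equiv> dict_dist gmul ginv M q"

lemma delta_small: "\<gamma> > 0 \<Longrightarrow> \<exists>s>0. \<forall>\<epsilon>. 0 < \<epsilon> \<and> \<epsilon> < s \<longrightarrow> \<delta> \<epsilon> < \<gamma>"
proof -
  assume g: "\<gamma> > 0"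
  have "eventually (\<lambda>\<epsilon>. \<delta> \<epsilon> < \<gamma>) (at_right 0)" using order_tendstoD(2)[OF \<delta>lim g] .
  then show ?thesis by (auto simp: eventually_at_right_field)
qed

lemma le_delta_lim: assumes "\<And>\<epsilon>. \<epsilon> > 0 \<Longrightarrow> x \<le> \<delta> \<epsilon>" shows "x \<le> 0"
proof (rule ccontr)
  assume "\<not> x \<le> 0"
  then obtain s where s: "s > 0" "\<forall>\<epsilon>. 0 < \<epsilon> \<and> \<epsilon> < s \<longrightarrow> \<delta> \<epsilon> < x" using delta_small[of x] by auto
  then have "\<delta> (s/2) < x" by simp
  moreover have "x \<le> \<delta> (s/2)" using assms s by simp
  ultimately show False by simp
qed

lemma \<Phi>_L2: "j < q \<Longrightarrow> in_L2 M (\<Phi> j)" by (rule feas_L2[OF f\<Phi>])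

lemma scale_zero:
  assumes j: "j < q" and mu: "\<mu> j \<le> 0"
  shows "L2_norm M (\<Phi> j) = 0"
proof -
  define \<Phi>t where "\<Phi>t t = \<Phi>(j := (\<lambda>x. complex_of_real t * \<Phi> j x))" for t :: real
  define lt where "lt t = (\<lambda>i j'. if j' = j then (\<lambda>\<xi>. complex_of_real (1/t) \<cdot>\<^sub>m l0 i j' \<xi>) else l0 i j')" for t :: real
  define S where "S = (\<Sum>j<q. L2_norm M (\<Phi> j))"
  have bound: "t * L2_norm M (\<Phi> j) \<le> \<delta> 0 + S" if t: "t \<ge> 1" for t
  proof -
    have tpos: "t > 0" "t \<noteq> 0" using t by auto
    have feas: "feas UNIV (\<Phi>t t) (lt t)"
      unfolding feasible_def
    proof (intro conjI allI impI)
      fix j' assume j': "j' < q"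
      show "in_L2_H M d \<rho> UNIV (\<Phi>t t j')"
        using \<Phi>_L2[OF j'] \<Phi>_L2[OF j] by (auto simp: in_L2_H_def \<Phi>t_def L2_scale)
    next
      fix i j' assume i: "i < n" and j': "j' < q"
      show "block_op d UNIV (lt t i j')"
        using feas_block[OF f\<Phi> i j'] by (auto simp: lt_def intro: block_op_smult)
    qed
    have four_t: "four (\<Phi>t t j) \<xi> = complex_of_real t \<cdot>\<^sub>m four (\<Phi> j) \<xi>" for \<xi>
      by (simp add: \<Phi>t_def fourier_scale)
    have dat_eq: "dat (\<Phi>t t) (lt t) i \<xi> = dat \<Phi> l0 i \<xi>" if i: "i < n" for i \<xi>
    proof -
      have "res (\<Phi>t t) (lt t) i \<xi> = res \<Phi> l0 i \<xi>"
        unfolding res_def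
      proof (intro eq_matI, simp_all, intro sum.cong refl)
        fix a b j' assume ab: "a < d \<xi>" "b < d \<xi>" and j': "j' \<in> {..<q}"
        show "(four (\<Phi>t t j') \<xi> * cadj (lt t i j' \<xi>)) $$ (a, b) = (four (\<Phi> j') \<xi> * cadj (l0 i j' \<xi>)) $$ (a, b)"
        proof (cases "j' = j")
          case True
          then show ?thesis using smult_cancel_cadj[OF fourier_carrier feas_carrier[OF f\<Phi> i] tpos(2)] j
            by (simp add: four_t lt_def)
        qed (simp add: \<Phi>t_def lt_def)
      qed
      then show ?thesis by (simp add: dat_def)
    qed
    have "obj UNIV (\<Phi>t t) (lt t) \<le> obj UNIV \<Phi> l0"
      unfolding obj_eq
    proof (rule add_mono; rule sum_mono)
      fix i assume i: "i \<in> {..<n}"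
      have "DS UNIV (\<Phi>t t) (lt t) i = DS UNIV \<Phi> l0 i"
        using dat_eq i by (simp add: DS_def)
      moreover have "PP UNIV (lt t) i \<le> PP UNIV l0 i"
        unfolding PP_def
      proof (rule sum_mono)
        fix j' assume "j' \<in> {..<q}"
        show "plus_norm d \<rho> UNIV (lt t i j') \<le> plus_norm d \<rho> UNIV (l0 i j')"
          using plus_norm_scale[of "1/t"] t by (auto simp: lt_def)
      qed
      ultimately show "enn2ereal (DS UNIV (\<Phi>t t) (lt t) i) + ereal lam * PP UNIV (lt t) i
          \<le> enn2ereal (DS UNIV \<Phi> l0 i) + ereal lam * PP UNIV l0 i"
        using lam0 by (auto intro!: add_left_mono ereal_mult_left_mono)
    next
      fix j' assume j': "j' \<in> {..<q}"
      show "ereal (\<mu> j') * enn2ereal (NS UNIV (\<Phi>t t j')) \<le> ereal (\<mu> j') * enn2ereal (NS UNIV (\<Phi> j'))"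
      proof (cases "j' = j")
        case True
        have "NS UNIV (\<Phi> j) \<le> NS UNIV (\<Phi>t t j)"
          unfolding NS_def
        proof (rule einfsum_mono[OF order_refl])
          fix \<xi>
          have "nrm (\<Phi>t t j) \<xi> = t\<^sup>2 * nrm (\<Phi> j) \<xi>"
            by (simp add: nrm_def four_t frob_smult)
          moreover have "nrm (\<Phi> j) \<xi> \<le> t\<^sup>2 * nrm (\<Phi> j) \<xi>"
            using t nrm_nonneg[of "\<Phi> j" \<xi>] by (simp add: mult_le_cancel_right1 one_le_power)
          ultimately show "ennreal (nrm (\<Phi> j) \<xi>) \<le> ennreal (nrm (\<Phi>t t j) \<xi>)" by (simp add: ennreal_leI)
        qed
        then show ?thesis using True mu by (intro ereal_antimono_neg enn2ereal_mono) auto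
      qed (simp add: \<Phi>t_def)
    qed
    then have "obj UNIV (\<Phi>t t) (lt t) = OP UNIV + ereal 0"
      using OP_le[OF feas] o\<Phi> by simp
    then have "dst \<Phi> (\<Phi>t t) \<le> \<delta> 0" using CU[OF _ feas] by simp
    moreover have "L2_norm M (\<Phi>t t j) - S \<le> dst \<Phi> (\<Phi>t t)"
      unfolding S_def
      by (rule dd_lower[OF q1 _ _ j]) (use \<Phi>_L2 feas feas_L2 in auto)
    moreover have "L2_norm M (\<Phi>t t j) = t * L2_norm M (\<Phi> j)"
      using tpos by (simp add: \<Phi>t_def L2_norm_scale)
    ultimately show ?thesis by simp
  qed
  show ?thesis
  proof (rule ccontr)
    assume "L2_norm M (\<Phi> j) \<noteq> 0"
    then have a: "L2_norm M (\<Phi> j) > 0" using L2_norm_nonneg by (metis less_eq_real_def)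
    define t where "t = (\<bar>\<delta> 0\<bar> + \<bar>S\<bar> + 1) / L2_norm M (\<Phi> j) + 1"
    have t1: "t \<ge> 1" using a by (simp add: t_def)
    have "t * L2_norm M (\<Phi> j) = \<bar>\<delta> 0\<bar> + \<bar>S\<bar> + 1 + L2_norm M (\<Phi> j)"
      using a by (simp add: t_def field_simps)
    then show False using bound[OF t1] a by simp
  qed
qed

lemma scale_zero_four: "j < q \<Longrightarrow> \<mu> j \<le> 0 \<Longrightarrow> four (\<Phi> j) \<xi> = 0\<^sub>m (d \<xi>) (d \<xi>)"
  by (rule L2_norm_zero_four[OF \<Phi>_L2 scale_zero])

lemma scale_zero_NS: "j < q \<Longrightarrow> \<mu> j \<le> 0 \<Longrightarrow> NS A (\<Phi> j) = 0"
  unfolding NS_def by (rule einfsum_zero) (simp add: nrm_def scale_zero_four frob_zero)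

end


context prb begin

lemma Yd_bound:
  assumes f: "feas UNIV \<phi> l" and i: "i < n"
    and C: "\<And>j v. j < q \<Longrightarrow> v \<in> carrier_vec (d \<xi>) \<Longrightarrow> cvec_norm (l i j \<xi> *\<^sub>v v) \<le> C j * cvec_norm v"
  shows "Yd i \<xi> \<le> 2 * dat \<phi> l i \<xi> + real q * (\<Sum>j<q. (C j)\<^sup>2 * nrm (\<phi> j) \<xi>)"
proof -
  let ?D = "d \<xi>"
  let ?Y = "four (yc i) \<xi>"
  let ?R = "res \<phi> l i \<xi>"
  let ?P = "\<lambda>j. four (\<phi> j) \<xi> * cadj (l i j \<xi>)"
  have Pc: "?P j \<in> carrier_mat ?D ?D" if "j < q" for j
    using feas_carrier[OF f i that] by (meson cadj_carrier fourier_carrier mult_carrier_mat)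
  have ent: "?Y $$ (a,b) = ?R $$ (a,b) + (\<Sum>j<q. ?P j $$ (a,b))" if "a < ?D" "b < ?D" for a b
    using that by (simp add: res_def yc_def)
  have pt: "(cmod (?Y $$ (a,b)))\<^sup>2 \<le> 2 * (cmod (?R $$ (a,b)))\<^sup>2 + 2 * real q * (\<Sum>j<q. (cmod (?P j $$ (a,b)))\<^sup>2)"
    if "a < ?D" "b < ?D" for a b
  proof -
    have "(cmod (?Y $$ (a,b)))\<^sup>2 \<le> 2 * (cmod (?R $$ (a,b)))\<^sup>2 + 2 * (cmod (\<Sum>j<q. ?P j $$ (a,b)))\<^sup>2"
      unfolding ent[OF that] by (rule sq_add_bound)
    also have "(cmod (\<Sum>j<q. ?P j $$ (a,b)))\<^sup>2 \<le> real q * (\<Sum>j<q. (cmod (?P j $$ (a,b)))\<^sup>2)"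
      by (rule sum_sq_le)
    finally show ?thesis by simp
  qed
  have "(frob_norm ?Y)\<^sup>2 = (\<Sum>a<?D. \<Sum>b<?D. (cmod (?Y $$ (a,b)))\<^sup>2)" by (simp add: frob_sq)
  also have "\<dots> \<le> (\<Sum>a<?D. \<Sum>b<?D. 2 * (cmod (?R $$ (a,b)))\<^sup>2 + 2 * real q * (\<Sum>j<q. (cmod (?P j $$ (a,b)))\<^sup>2))"
    by (intro sum_mono pt) auto
  also have "\<dots> = 2 * (\<Sum>a<?D. \<Sum>b<?D. (cmod (?R $$ (a,b)))\<^sup>2) + 2 * real q * (\<Sum>j<q. \<Sum>a<?D. \<Sum>b<?D. (cmod (?P j $$ (a,b)))\<^sup>2)"
    by (simp add: sum.distrib sum_distrib_left sum.swap[of _ "{..<q}"])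
  also have "\<dots> = 2 * (frob_norm ?R)\<^sup>2 + 2 * real q * (\<Sum>j<q. (frob_norm (?P j))\<^sup>2)"
  proof -
    have Rc: "?R \<in> carrier_mat ?D ?D" by (simp add: res_def)
    have r: "(frob_norm ?R)\<^sup>2 = (\<Sum>a<?D. \<Sum>b<?D. (cmod (?R $$ (a,b)))\<^sup>2)"
      by (subst frob_sq) (simp only: carrier_matD[OF Rc])
    have p: "(frob_norm (?P j))\<^sup>2 = (\<Sum>a<?D. \<Sum>b<?D. (cmod (?P j $$ (a,b)))\<^sup>2)" if "j < q" for j
      by (subst frob_sq) (simp only: carrier_matD[OF Pc[OF that]])
    have ps: "(\<Sum>j<q. (frob_norm (?P j))\<^sup>2) = (\<Sum>j<q. \<Sum>a<?D. \<Sum>b<?D. (cmod (?P j $$ (a,b)))\<^sup>2)"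
      by (rule sum.cong[OF refl], rule p, simp)
    show ?thesis unfolding r ps ..
  qed
  also have "\<dots> \<le> 2 * (frob_norm ?R)\<^sup>2 + 2 * real q * (\<Sum>j<q. (C j)\<^sup>2 * (frob_norm (four (\<phi> j) \<xi>))\<^sup>2)"
    by (intro add_left_mono mult_left_mono sum_mono frob_mult_cadj[OF fourier_carrier feas_carrier[OF f i]])
       (auto intro: C)
  finally have h: "(frob_norm ?Y)\<^sup>2 \<le> 2 * (frob_norm ?R)\<^sup>2 + 2 * real q * (\<Sum>j<q. (C j)\<^sup>2 * (frob_norm (four (\<phi> j) \<xi>))\<^sup>2)" .
  have "Yd i \<xi> = (real ?D)\<^sup>2 / 2 * (frob_norm ?Y)\<^sup>2" by (simp add: Yd_def)
  also have "\<dots> \<le> (real ?D)\<^sup>2 / 2 * (2 * (frob_norm ?R)\<^sup>2 + 2 * real q * (\<Sum>j<q. (C j)\<^sup>2 * (frob_norm (four (\<phi> j) \<xi>))\<^sup>2))"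
    by (intro mult_left_mono h) auto
  also have "\<dots> = 2 * dat \<phi> l i \<xi> + real q * (\<Sum>j<q. (C j)\<^sup>2 * nrm (\<phi> j) \<xi>)"
    by (simp add: dat_def nrm_def sum_distrib_left algebra_simps)
  finally show ?thesis .
qed

end

context mn begin

lemma obj_j_nonneg: "j < q \<Longrightarrow> ereal (\<mu> j) * enn2ereal (NS UNIV (\<Phi> j)) \<ge> 0"
  by (cases "\<mu> j \<le> 0") (auto simp: scale_zero_NS zero_ennreal.rep_eq intro!: mult_nonneg_nonneg)

lemma OP_nonneg: "OP UNIV \<ge> 0"
proof -
  have "0 \<le> obj UNIV \<Phi> l0"
    unfolding obj_eq
    by (intro add_nonneg_nonneg sum_nonneg obj_j_nonneg ereal_mult_left_mono[of 0, simplified] PP_nonneg)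
       (auto intro: lam0)
  then show ?thesis using o\<Phi> by simp
qed

lemma fin_terms:
  assumes fin: "OP UNIV \<noteq> \<infinity>"
  shows "\<And>i. i < n \<Longrightarrow> DS UNIV \<Phi> l0 i < \<infinity>" "\<And>j. j < q \<Longrightarrow> NS UNIV (\<Phi> j) < \<infinity>"
proof -
  have a: "\<bar>obj UNIV \<Phi> l0\<bar> \<noteq> \<infinity>" using fin OP_nonneg o\<Phi> by (cases "OP UNIV") auto
  then have "\<bar>\<Sum>i<n. enn2ereal (DS UNIV \<Phi> l0 i) + ereal lam * PP UNIV l0 i\<bar> \<noteq> \<infinity> \<and>
     \<bar>\<Sum>j<q. ereal (\<mu> j) * enn2ereal (NS UNIV (\<Phi> j))\<bar> \<noteq> \<infinity>"
    unfolding obj_eq by (rule ereal_add_finite)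
  then have f1: "\<bar>\<Sum>i<n. enn2ereal (DS UNIV \<Phi> l0 i) + ereal lam * PP UNIV l0 i\<bar> \<noteq> \<infinity>" by simp
  fix i assume i: "i < n"
  have "\<bar>enn2ereal (DS UNIV \<Phi> l0 i) + ereal lam * PP UNIV l0 i\<bar> \<noteq> \<infinity>"
    using ereal_sum_finite[OF _ f1] i by auto
  then have "\<bar>enn2ereal (DS UNIV \<Phi> l0 i)\<bar> \<noteq> \<infinity>" by (rule conjunct1[OF ereal_add_finite])
  then show "DS UNIV \<Phi> l0 i < \<infinity>" by (intro enn2ereal_fin) auto
next
  have a: "\<bar>obj UNIV \<Phi> l0\<bar> \<noteq> \<infinity>" using fin OP_nonneg o\<Phi> by (cases "OP UNIV") auto
  then have "\<bar>\<Sum>i<n. enn2ereal (DS UNIV \<Phi> l0 i) + ereal lam * PP UNIV l0 i\<bar> \<noteq> \<infinity> \<and>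
     \<bar>\<Sum>j<q. ereal (\<mu> j) * enn2ereal (NS UNIV (\<Phi> j))\<bar> \<noteq> \<infinity>"
    unfolding obj_eq by (rule ereal_add_finite)
  then have f2: "\<bar>\<Sum>j<q. ereal (\<mu> j) * enn2ereal (NS UNIV (\<Phi> j))\<bar> \<noteq> \<infinity>" by simp
  fix j assume j: "j < q"
  show "NS UNIV (\<Phi> j) < \<infinity>"
  proof (cases "\<mu> j \<le> 0")
    case True then show ?thesis using scale_zero_NS[OF j True] by simp
  next
    case False
    have "\<bar>ereal (\<mu> j) * enn2ereal (NS UNIV (\<Phi> j))\<bar> \<noteq> \<infinity>"
      using ereal_sum_finite[OF _ f2] j by auto
    then have "enn2ereal (NS UNIV (\<Phi> j)) \<noteq> \<infinity>" using False by auto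
    then show ?thesis by (intro enn2ereal_fin) auto
  qed
qed

lemma Yt_fin:
  assumes fin: "OP UNIV \<noteq> \<infinity>" and i: "i < n"
  shows "Yt i UNIV < \<infinity>"
proof -
  have "\<forall>j<q. \<exists>C. \<forall>\<xi>\<in>UNIV. \<forall>v\<in>carrier_vec (d \<xi>). cvec_norm (l0 i j \<xi> *\<^sub>v v) \<le> C * cvec_norm v"
    using feas_block[OF f\<Phi> i] by (simp add: block_op_def)
  then obtain C where C0: "\<And>j. j < q \<Longrightarrow> \<forall>\<xi>\<in>UNIV. \<forall>v\<in>carrier_vec (d \<xi>). cvec_norm (l0 i j \<xi> *\<^sub>v v) \<le> C j * cvec_norm v"
    by metis
  have C: "\<And>j \<xi> v. j < q \<Longrightarrow> v \<in> carrier_vec (d \<xi>) \<Longrightarrow> cvec_norm (l0 i j \<xi> *\<^sub>v v) \<le> C j * cvec_norm v"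
    using C0 by blast
  have "Yt i UNIV \<le> infsum (\<lambda>\<xi>. 2 * ennreal (dat \<Phi> l0 i \<xi>) + ennreal (real q) * (\<Sum>j<q. ennreal ((C j)\<^sup>2) * ennreal (nrm (\<Phi> j) \<xi>))) UNIV"
    unfolding Yt_def
  proof (rule einfsum_mono[OF order_refl])
    fix \<xi>
    have "ennreal (Yd i \<xi>) \<le> ennreal (2 * dat \<Phi> l0 i \<xi> + real q * (\<Sum>j<q. (C j)\<^sup>2 * nrm (\<Phi> j) \<xi>))"
      by (rule ennreal_leI) (rule Yd_bound[OF f\<Phi> i C])
    also have "\<dots> = 2 * ennreal (dat \<Phi> l0 i \<xi>) + ennreal (real q) * (\<Sum>j<q. ennreal ((C j)\<^sup>2) * ennreal (nrm (\<Phi> j) \<xi>))"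
      proof -
      have S0: "0 \<le> (\<Sum>j<q. (C j)\<^sup>2 * nrm (\<Phi> j) \<xi>)" by (intro sum_nonneg mult_nonneg_nonneg nrm_nonneg) auto
      have "ennreal (2 * dat \<Phi> l0 i \<xi> + real q * (\<Sum>j<q. (C j)\<^sup>2 * nrm (\<Phi> j) \<xi>))
          = ennreal (2 * dat \<Phi> l0 i \<xi>) + ennreal (real q * (\<Sum>j<q. (C j)\<^sup>2 * nrm (\<Phi> j) \<xi>))"
        by (rule ennreal_plus) (use S0 dat_nonneg in auto)
      also have "ennreal (2 * dat \<Phi> l0 i \<xi>) = 2 * ennreal (dat \<Phi> l0 i \<xi>)"
        by (simp add: ennreal_mult dat_nonneg)
      also have "ennreal (real q * (\<Sum>j<q. (C j)\<^sup>2 * nrm (\<Phi> j) \<xi>)) = ennreal (real q) * ennreal (\<Sum>j<q. (C j)\<^sup>2 * nrm (\<Phi> j) \<xi>)"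
        by (rule ennreal_mult) (use S0 in auto)
      also have "ennreal (\<Sum>j<q. (C j)\<^sup>2 * nrm (\<Phi> j) \<xi>) = (\<Sum>j<q. ennreal ((C j)\<^sup>2 * nrm (\<Phi> j) \<xi>))"
        by (rule sum_ennreal[symmetric]) (auto intro: mult_nonneg_nonneg nrm_nonneg)
      also have "\<dots> = (\<Sum>j<q. ennreal ((C j)\<^sup>2) * ennreal (nrm (\<Phi> j) \<xi>))"
        by (rule sum.cong[OF refl]) (rule ennreal_mult, auto intro: nrm_nonneg)
      finally show ?thesis .
    qed
    finally show "ennreal (Yd i \<xi>) \<le> 2 * ennreal (dat \<Phi> l0 i \<xi>) + ennreal (real q) * (\<Sum>j<q. ennreal ((C j)\<^sup>2) * ennreal (nrm (\<Phi> j) \<xi>))" .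
  qed
  also have "\<dots> = 2 * DS UNIV \<Phi> l0 i + ennreal (real q) * (\<Sum>j<q. ennreal ((C j)\<^sup>2) * NS UNIV (\<Phi> j))"
    by (simp add: einfsum_add einfsum_cmult einfsum_sum DS_def NS_def)
  also have "\<dots> < \<infinity>"
  proof -
    have a: "2 * DS UNIV \<Phi> l0 i < \<infinity>"
      using fin_terms(1)[OF fin i] by (simp only: ennreal_mult_less_top infinity_ennreal_def) simp
    have b: "ennreal ((C j)\<^sup>2) * NS UNIV (\<Phi> j) < \<infinity>" if "j < q" for j
      using fin_terms(2)[OF fin that] by (simp only: ennreal_mult_less_top infinity_ennreal_def) simp
    have c: "ennreal (real q) * (\<Sum>j<q. ennreal ((C j)\<^sup>2) * NS UNIV (\<Phi> j)) < \<infinity>"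
      using b by (simp only: infinity_ennreal_def ennreal_mult_less_top ennreal_sum_less_top[OF finite_lessThan]) auto
    show ?thesis using a c by (simp only: infinity_ennreal_def ennreal_add_less_top)
  qed
  finally show ?thesis .
qed

end


lemma cmod_lin_sq: "(cmod (r + complex_of_real c * v))\<^sup>2 = (cmod r)\<^sup>2 + c * (2 * Re (r * cnj v)) + c\<^sup>2 * (cmod v)\<^sup>2"
  unfolding cmod_power2 by (simp add: power2_eq_square algebra_simps)

lemma frob_lin:
  assumes R: "R \<in> carrier_mat m m" and V: "V \<in> carrier_mat m m"
  shows "\<exists>B. \<forall>c. (frob_norm (mat m m (\<lambda>ab. R $$ ab + complex_of_real c * V $$ ab)))\<^sup>2
                 = (frob_norm R)\<^sup>2 + c * B + c\<^sup>2 * (frob_norm V)\<^sup>2"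
proof -
  define B where "B = (\<Sum>a<m. \<Sum>b<m. 2 * Re (R $$ (a,b) * cnj (V $$ (a,b))))"
  have "(frob_norm (mat m m (\<lambda>ab. R $$ ab + complex_of_real c * V $$ ab)))\<^sup>2
      = (frob_norm R)\<^sup>2 + c * B + c\<^sup>2 * (frob_norm V)\<^sup>2" for c
    using R V by (simp add: frob_sq cmod_lin_sq sum.distrib sum_distrib_left B_def distrib_left)
  then show ?thesis by blast
qed

lemma quad_nonneg:
  fixes \<alpha> \<beta> :: real
  assumes h: "\<And>c. \<alpha> * c\<^sup>2 + \<beta> * c \<ge> 0"
  shows "\<beta> = 0 \<and> \<alpha> \<ge> 0"
proof -
  have b: "\<beta> = 0"
  proof (rule ccontr)
    assume nz: "\<beta> \<noteq> 0"
    define t where "t = 1 / (\<bar>\<alpha>\<bar> + 1)"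
    have t: "t > 0" "\<bar>\<alpha>\<bar> * t < 1" by (auto simp: t_def field_simps)
    have "\<alpha> * (- \<beta> * t)\<^sup>2 + \<beta> * (- \<beta> * t) = \<beta>\<^sup>2 * t * (\<alpha> * t - 1)"
      by (simp add: power2_eq_square algebra_simps)
    moreover have "\<alpha> * t - 1 < 0" using t by (metis abs_ge_self diff_less_0_iff_less le_less_trans mult_right_mono less_eq_real_def)
    moreover have "\<beta>\<^sup>2 * t > 0" using nz t by simp
    ultimately have "\<alpha> * (- \<beta> * t)\<^sup>2 + \<beta> * (- \<beta> * t) < 0" by (simp add: mult_pos_neg)
    with h[of "- \<beta> * t"] show False by simp
  qed
  have "\<alpha> \<ge> 0" using h[of 1] b by simp
  with b show ?thesis by simp
qed

lemma ereal_point_change: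
  fixes f g :: "'x \<Rightarrow> real"
  assumes f0: "\<And>x. f x \<ge> 0" and g0: "\<And>x. g x \<ge> 0" and eq: "\<And>x. x \<noteq> a \<Longrightarrow> g x = f x"
    and fin: "infsum (\<lambda>x. ennreal (f x)) UNIV < \<infinity>"
  shows "enn2ereal (infsum (\<lambda>x. ennreal (g x)) UNIV) = enn2ereal (infsum (\<lambda>x. ennreal (f x)) UNIV) + ereal (g a - f a)"
proof -
  let ?R = "infsum (\<lambda>x. ennreal (f x)) (- {a})"
  have sf: "infsum (\<lambda>x. ennreal (f x)) UNIV = ennreal (f a) + ?R" by (rule einfsum_point)
  have "infsum (\<lambda>x. ennreal (g x)) (- {a}) = ?R" by (rule infsum_cong) (auto simp: eq)
  then have sg: "infsum (\<lambda>x. ennreal (g x)) UNIV = ennreal (g a) + ?R" using einfsum_point[of "\<lambda>x. ennreal (g x)" a] by simp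
  have "?R < \<infinity>" using fin sf by (metis infinity_ennreal_def le_iff_add le_less_trans add.commute)
  then obtain r where r: "?R = ennreal r" "r \<ge> 0" by (metis ennreal_cases infinity_ennreal_def less_irrefl)
  show ?thesis unfolding sf sg r using f0[of a] g0[of a] r(2)
    by (simp add: ennreal_plus[symmetric] del: ennreal_plus)
qed

context prb begin

lemma obj_fin_terms:
  assumes fin: "\<bar>obj H \<phi> l\<bar> \<noteq> \<infinity>"
  shows "\<And>i. i < n \<Longrightarrow> DS H \<phi> l i < \<infinity>" "\<And>j. j < q \<Longrightarrow> \<mu> j \<noteq> 0 \<Longrightarrow> NS H (\<phi> j) < \<infinity>"
proof -
  have "\<bar>\<Sum>i<n. enn2ereal (DS H \<phi> l i) + ereal lam * PP H l i\<bar> \<noteq> \<infinity> \<and>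
     \<bar>\<Sum>j<q. ereal (\<mu> j) * enn2ereal (NS H (\<phi> j))\<bar> \<noteq> \<infinity>"
    using fin unfolding obj_eq by (rule ereal_add_finite)
  then have f1: "\<bar>\<Sum>i<n. enn2ereal (DS H \<phi> l i) + ereal lam * PP H l i\<bar> \<noteq> \<infinity>"
    and f2: "\<bar>\<Sum>j<q. ereal (\<mu> j) * enn2ereal (NS H (\<phi> j))\<bar> \<noteq> \<infinity>" by simp_all
  fix i assume i: "i < n"
  have "\<bar>enn2ereal (DS H \<phi> l i) + ereal lam * PP H l i\<bar> \<noteq> \<infinity>"
    using ereal_sum_finite[OF _ f1] i by auto
  then have "\<bar>enn2ereal (DS H \<phi> l i)\<bar> \<noteq> \<infinity>" by (rule conjunct1[OF ereal_add_finite])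
  then show "DS H \<phi> l i < \<infinity>" by (intro enn2ereal_fin) auto
next
  have "\<bar>\<Sum>i<n. enn2ereal (DS H \<phi> l i) + ereal lam * PP H l i\<bar> \<noteq> \<infinity> \<and>
     \<bar>\<Sum>j<q. ereal (\<mu> j) * enn2ereal (NS H (\<phi> j))\<bar> \<noteq> \<infinity>"
    using fin unfolding obj_eq by (rule ereal_add_finite)
  then have f2: "\<bar>\<Sum>j<q. ereal (\<mu> j) * enn2ereal (NS H (\<phi> j))\<bar> \<noteq> \<infinity>" by simp
  fix j assume j: "j < q" and mu: "\<mu> j \<noteq> 0"
  have "\<bar>ereal (\<mu> j) * enn2ereal (NS H (\<phi> j))\<bar> \<noteq> \<infinity>"
    using ereal_sum_finite[OF _ f2] j by auto
  then have "enn2ereal (NS H (\<phi> j)) \<noteq> \<infinity>" using mu by (auto split: if_splits)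
  then show "NS H (\<phi> j) < \<infinity>" by (intro enn2ereal_fin) auto
qed

end



context mn begin

lemma lemma_Z:
  assumes f: "feas UNIV \<psi> l" and o\<psi>: "obj UNIV \<psi> l = OP UNIV" and fin: "OP UNIV \<noteq> \<infinity>"
  shows "dst \<Phi> \<psi> \<le> 0"
proof -
  have Ofin: "\<bar>OP UNIV\<bar> \<noteq> \<infinity>" using fin OP_nonneg by auto
  obtain Oval where Oval: "OP UNIV = ereal Oval" using Ofin by (cases "OP UNIV") auto
  define \<xi>0 :: 'x where "\<xi>0 = undefined"
  define D where "D = d \<xi>0"
  define A :: "complex mat" where "A = 1\<^sub>m D"
  define w where "w = efun \<xi>0 A"
  have A: "A \<in> carrier_mat (d \<xi>0) (d \<xi>0)" by (simp add: A_def D_def)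
  have wL2: "in_L2 M w" by (simp add: w_def efun_L2)
  have fw: "four w \<eta> = (if \<eta> = \<xi>0 then A else 0\<^sub>m (d \<eta>) (d \<eta>))" for \<eta>
    using fourier_efun[OF A] by (simp add: w_def)
  define \<psi>c where "\<psi>c c = \<psi>(0 := (\<lambda>x. \<psi> 0 x + complex_of_real c * w x))" for c :: real
  have \<psi>L2: "j < q \<Longrightarrow> in_L2 M (\<psi> j)" for j using feas_L2[OF f] .
  have q0: "0 < q" using q1 by simp
  have \<psi>c_L2: "j < q \<Longrightarrow> in_L2 M (\<psi>c c j)" for c j
    by (auto simp: \<psi>c_def intro!: L2_add L2_scale wL2 \<psi>L2 q0)
  have feasc: "feas UNIV (\<psi>c c) l" for c
    using f \<psi>c_L2 by (auto simp: feasible_def in_L2_H_def)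
  have four_c0: "four (\<psi>c c 0) \<eta> = four (\<psi> 0) \<eta> + complex_of_real c \<cdot>\<^sub>m four w \<eta>" for c \<eta>
    using fourier_add[OF \<psi>L2[OF q0] L2_scale[OF wL2], of "complex_of_real c" \<eta>]
    by (simp add: \<psi>c_def fourier_scale)
  have four_ne: "four (\<psi>c c j) \<eta> = four (\<psi> j) \<eta>" if "\<eta> \<noteq> \<xi>0" for c j \<eta>
  proof (cases "j = 0")
    case True
    then show ?thesis using that by (simp add: four_c0 fw)
  qed (simp add: \<psi>c_def)
  have dat_ne: "dat (\<psi>c c) l i \<eta> = dat \<psi> l i \<eta>" if "\<eta> \<noteq> \<xi>0" for c i \<eta>
    by (rule dat_cong) (simp_all add: four_ne that)
  have nrm_ne: "nrm (\<psi>c c j) \<eta> = nrm (\<psi> j) \<eta>" if "\<eta> \<noteq> \<xi>0" for c j \<eta>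
    by (simp add: nrm_def four_ne that)
  have ofin: "\<bar>obj UNIV \<psi> l\<bar> \<noteq> \<infinity>" using o\<psi> Ofin by simp
  have DSc: "enn2ereal (DS UNIV (\<psi>c c) l i) = enn2ereal (DS UNIV \<psi> l i) + ereal (dat (\<psi>c c) l i \<xi>0 - dat \<psi> l i \<xi>0)"
    if i: "i < n" for c i
    unfolding DS_def
    by (rule ereal_point_change) (use dat_nonneg dat_ne obj_fin_terms(1)[OF ofin i] in \<open>auto simp: DS_def\<close>)
  have NSc: "ereal (\<mu> 0) * enn2ereal (NS UNIV (\<psi>c c 0)) = ereal (\<mu> 0) * enn2ereal (NS UNIV (\<psi> 0)) + ereal (\<mu> 0 * (nrm (\<psi>c c 0) \<xi>0 - nrm (\<psi> 0) \<xi>0))" for c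
  proof (cases "\<mu> 0 = 0")
    case True then show ?thesis by (simp add: zero_ereal_def[symmetric])
  next
    case False
    have fin0: "NS UNIV (\<psi> 0) < \<infinity>" by (rule obj_fin_terms(2)[OF ofin q0 False])
    have e: "enn2ereal (NS UNIV (\<psi>c c 0)) = enn2ereal (NS UNIV (\<psi> 0)) + ereal (nrm (\<psi>c c 0) \<xi>0 - nrm (\<psi> 0) \<xi>0)"
      unfolding NS_def by (rule ereal_point_change) (use nrm_nonneg nrm_ne fin0 in \<open>auto simp: NS_def\<close>)
    obtain a where a: "enn2ereal (NS UNIV (\<psi> 0)) = ereal a"
      using fin0 by (metis enn2ereal_nonneg ennreal_enn2real enn2ereal_ennreal enn2real_nonneg infinity_ennreal_def)
    show ?thesis using e a by (simp add: distrib_left)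
  qed
  define h where "h c = (\<Sum>i<n. dat (\<psi>c c) l i \<xi>0 - dat \<psi> l i \<xi>0) + \<mu> 0 * (nrm (\<psi>c c 0) \<xi>0 - nrm (\<psi> 0) \<xi>0)" for c
  have objc: "obj UNIV (\<psi>c c) l = OP UNIV + ereal (h c)" for c
  proof -
    have s1: "(\<Sum>i<n. enn2ereal (DS UNIV (\<psi>c c) l i) + ereal lam * PP UNIV l i)
        = (\<Sum>i<n. enn2ereal (DS UNIV \<psi> l i) + ereal lam * PP UNIV l i) + ereal (\<Sum>i<n. dat (\<psi>c c) l i \<xi>0 - dat \<psi> l i \<xi>0)"
    proof -
      have "(\<Sum>i<n. enn2ereal (DS UNIV (\<psi>c c) l i) + ereal lam * PP UNIV l i)
          = (\<Sum>i<n. (enn2ereal (DS UNIV \<psi> l i) + ereal lam * PP UNIV l i) + ereal (dat (\<psi>c c) l i \<xi>0 - dat \<psi> l i \<xi>0))"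
        by (rule sum.cong[OF refl]) (simp add: DSc ac_simps)
      also have "\<dots> = (\<Sum>i<n. enn2ereal (DS UNIV \<psi> l i) + ereal lam * PP UNIV l i) + (\<Sum>i<n. ereal (dat (\<psi>c c) l i \<xi>0 - dat \<psi> l i \<xi>0))"
        by (rule sum.distrib)
      finally show ?thesis by simp
    qed
    have s2: "(\<Sum>j<q. ereal (\<mu> j) * enn2ereal (NS UNIV (\<psi>c c j)))
        = (\<Sum>j<q. ereal (\<mu> j) * enn2ereal (NS UNIV (\<psi> j))) + ereal (\<mu> 0 * (nrm (\<psi>c c 0) \<xi>0 - nrm (\<psi> 0) \<xi>0))"
    proof -
      have "(\<Sum>j<q. ereal (\<mu> j) * enn2ereal (NS UNIV (\<psi>c c j)))
          = (\<Sum>j<q. ereal (\<mu> j) * enn2ereal (NS UNIV (\<psi> j)) + ereal (if j = 0 then \<mu> 0 * (nrm (\<psi>c c 0) \<xi>0 - nrm (\<psi> 0) \<xi>0) else 0))"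
      proof (rule sum.cong[OF refl])
        fix j assume "j \<in> {..<q}"
        show "ereal (\<mu> j) * enn2ereal (NS UNIV (\<psi>c c j)) = ereal (\<mu> j) * enn2ereal (NS UNIV (\<psi> j)) + ereal (if j = 0 then \<mu> 0 * (nrm (\<psi>c c 0) \<xi>0 - nrm (\<psi> 0) \<xi>0) else 0)"
        proof (cases "j = 0")
          case True then show ?thesis using NSc[of c] by simp
        next
          case False then show ?thesis by (simp add: \<psi>c_def)
        qed
      qed
      also have "\<dots> = (\<Sum>j<q. ereal (\<mu> j) * enn2ereal (NS UNIV (\<psi> j))) + (\<Sum>j<q. ereal (if j = 0 then \<mu> 0 * (nrm (\<psi>c c 0) \<xi>0 - nrm (\<psi> 0) \<xi>0) else 0))"
        by (rule sum.distrib)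
      also have "(\<Sum>j<q. ereal (if j = 0 then \<mu> 0 * (nrm (\<psi>c c 0) \<xi>0 - nrm (\<psi> 0) \<xi>0) else 0)) = ereal (\<mu> 0 * (nrm (\<psi>c c 0) \<xi>0 - nrm (\<psi> 0) \<xi>0))"
        using q0 by (simp add: sum.delta)
      finally show ?thesis .
    qed
    have "obj UNIV (\<psi>c c) l = ((\<Sum>i<n. enn2ereal (DS UNIV \<psi> l i) + ereal lam * PP UNIV l i) + (\<Sum>j<q. ereal (\<mu> j) * enn2ereal (NS UNIV (\<psi> j))))
        + (ereal (\<Sum>i<n. dat (\<psi>c c) l i \<xi>0 - dat \<psi> l i \<xi>0) + ereal (\<mu> 0 * (nrm (\<psi>c c 0) \<xi>0 - nrm (\<psi> 0) \<xi>0)))"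
      unfolding obj_eq s1 s2 by (simp add: ac_simps)
    also have "\<dots> = OP UNIV + ereal (h c)" using o\<psi> by (simp add: obj_eq h_def)
    finally show ?thesis .
  qed
  have hpos: "h c \<ge> 0" for c
  proof -
    have "OP UNIV \<le> OP UNIV + ereal (h c)" using OP_le[OF feasc[of c]] objc[of c] by simp
    then show ?thesis using Oval by simp
  qed
  \<comment> \<open>quadratic structure of h\<close>
  have Dpos: "D \<ge> 1" using d_pos by (simp add: D_def)
  have fw0: "four w \<xi>0 = A" by (simp add: fw)
  have Lc: "l i j \<xi> \<in> carrier_mat (d \<xi>) (d \<xi>)" if "i < n" "j < q" for i j \<xi>
    by (rule feas_carrier[OF f that])
  define W where "W i = (-1) \<cdot>\<^sub>m cadj (l i 0 \<xi>0)" for i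
  have Wc: "i < n \<Longrightarrow> W i \<in> carrier_mat D D" for i using Lc[OF _ q0] by (simp add: W_def D_def)
  have resc: "res (\<psi>c c) l i \<xi>0 = mat D D (\<lambda>ab. res \<psi> l i \<xi>0 $$ ab + complex_of_real c * W i $$ ab)"
    if i: "i < n" for c i
  proof (rule eq_matI)
    fix a b assume "a < dim_row (mat D D (\<lambda>ab. res \<psi> l i \<xi>0 $$ ab + complex_of_real c * W i $$ ab))"
      "b < dim_col (mat D D (\<lambda>ab. res \<psi> l i \<xi>0 $$ ab + complex_of_real c * W i $$ ab))"
    then have ab: "a < D" "b < D" by auto
    let ?X = "cadj (l i 0 \<xi>0)"
    have Xc: "?X \<in> carrier_mat D D" using Lc[OF i q0] by (simp add: D_def)
    have e0: "((four (\<psi> 0) \<xi>0 + complex_of_real c \<cdot>\<^sub>m A) * ?X) $$ (a,b)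
        = (four (\<psi> 0) \<xi>0 * ?X) $$ (a,b) + complex_of_real c * ?X $$ (a,b)"
    proof -
      have "((four (\<psi> 0) \<xi>0 + complex_of_real c \<cdot>\<^sub>m A) * ?X) $$ (a,b)
          = (\<Sum>k<D. (four (\<psi> 0) \<xi>0 $$ (a,k) + complex_of_real c * A $$ (a,k)) * ?X $$ (k,b))"
        using ab Xc by (subst mult_entry[of _ D D _ D]) (auto simp: A_def D_def)
      also have "\<dots> = (\<Sum>k<D. four (\<psi> 0) \<xi>0 $$ (a,k) * ?X $$ (k,b)) + (\<Sum>k<D. complex_of_real c * A $$ (a,k) * ?X $$ (k,b))"
        by (simp add: distrib_right sum.distrib)
      also have "(\<Sum>k<D. complex_of_real c * A $$ (a,k) * ?X $$ (k,b)) = complex_of_real c * ?X $$ (a,b)"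
      proof -
        have "(\<Sum>k<D. complex_of_real c * A $$ (a,k) * ?X $$ (k,b)) = (\<Sum>k<D. if k = a then complex_of_real c * ?X $$ (a,b) else 0)"
          by (rule sum.cong[OF refl]) (use ab in \<open>auto simp: A_def\<close>)
        then show ?thesis using ab by (simp add: sum.delta)
      qed
      also have "(\<Sum>k<D. four (\<psi> 0) \<xi>0 $$ (a,k) * ?X $$ (k,b)) = (four (\<psi> 0) \<xi>0 * ?X) $$ (a,b)"
        using ab Xc by (subst mult_entry[of _ D D _ D]) (auto simp: D_def)
      finally show ?thesis .
    qed
    have sum_eq: "(\<Sum>j<q. (four (\<psi>c c j) \<xi>0 * cadj (l i j \<xi>0)) $$ (a,b))
        = (\<Sum>j<q. (four (\<psi> j) \<xi>0 * cadj (l i j \<xi>0)) $$ (a,b)) + complex_of_real c * ?X $$ (a,b)"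
    proof -
      have "(\<Sum>j<q. (four (\<psi>c c j) \<xi>0 * cadj (l i j \<xi>0)) $$ (a,b))
          = (\<Sum>j<q. (four (\<psi> j) \<xi>0 * cadj (l i j \<xi>0)) $$ (a,b) + (if j = 0 then complex_of_real c * ?X $$ (a,b) else 0))"
      proof (rule sum.cong[OF refl])
        fix j assume "j \<in> {..<q}"
        show "(four (\<psi>c c j) \<xi>0 * cadj (l i j \<xi>0)) $$ (a,b) = (four (\<psi> j) \<xi>0 * cadj (l i j \<xi>0)) $$ (a,b) + (if j = 0 then complex_of_real c * ?X $$ (a,b) else 0)"
        proof (cases "j = 0")
          case True then show ?thesis using e0 by (simp add: four_c0 fw0)
        next
          case False then show ?thesis by (simp add: \<psi>c_def)
        qed
      qed
      also have "\<dots> = (\<Sum>j<q. (four (\<psi> j) \<xi>0 * cadj (l i j \<xi>0)) $$ (a,b)) + complex_of_real c * ?X $$ (a,b)"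
        using q0 by (simp add: sum.distrib sum.delta)
      finally show ?thesis .
    qed
    show "res (\<psi>c c) l i \<xi>0 $$ (a,b) = mat D D (\<lambda>ab. res \<psi> l i \<xi>0 $$ ab + complex_of_real c * W i $$ ab) $$ (a,b)"
      using ab Xc by (simp add: res_def D_def sum_eq W_def carrier_matD[OF Lc[OF i q0]])
  qed (auto simp: res_def D_def)
  have nrmc: "four (\<psi>c c 0) \<xi>0 = mat D D (\<lambda>ab. four (\<psi> 0) \<xi>0 $$ ab + complex_of_real c * A $$ ab)" for c
    by (rule eq_matI) (auto simp: four_c0 fw0 A_def D_def)
  have "\<forall>i<n. \<exists>B. \<forall>c. (frob_norm (mat D D (\<lambda>ab. res \<psi> l i \<xi>0 $$ ab + complex_of_real c * W i $$ ab)))\<^sup>2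
                 = (frob_norm (res \<psi> l i \<xi>0))\<^sup>2 + c * B + c\<^sup>2 * (frob_norm (W i))\<^sup>2"
    using frob_lin Wc by (auto simp: res_def D_def)
  then obtain B where B: "\<And>i c. i < n \<Longrightarrow> (frob_norm (mat D D (\<lambda>ab. res \<psi> l i \<xi>0 $$ ab + complex_of_real c * W i $$ ab)))\<^sup>2
                 = (frob_norm (res \<psi> l i \<xi>0))\<^sup>2 + c * B i + c\<^sup>2 * (frob_norm (W i))\<^sup>2"
    by metis
  obtain B' where B': "\<And>c. (frob_norm (mat D D (\<lambda>ab. four (\<psi> 0) \<xi>0 $$ ab + complex_of_real c * A $$ ab)))\<^sup>2
                 = (frob_norm (four (\<psi> 0) \<xi>0))\<^sup>2 + c * B' + c\<^sup>2 * (frob_norm A)\<^sup>2"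
    using frob_lin[where R="four (\<psi> 0) \<xi>0" and m=D and V=A] by (auto simp: A_def D_def)
  define \<alpha> where "\<alpha> = (\<Sum>i<n. (real D)\<^sup>2 / 2 * (frob_norm (W i))\<^sup>2) + \<mu> 0 * ((real D)\<^sup>2 * (frob_norm A)\<^sup>2)"
  define \<beta> where "\<beta> = (\<Sum>i<n. (real D)\<^sup>2 / 2 * B i) + \<mu> 0 * ((real D)\<^sup>2 * B')"
  have hq: "h c = \<alpha> * c\<^sup>2 + \<beta> * c" for c
  proof -
    have "dat (\<psi>c c) l i \<xi>0 - dat \<psi> l i \<xi>0 = (real D)\<^sup>2 / 2 * (c * B i + c\<^sup>2 * (frob_norm (W i))\<^sup>2)" if "i < n" for i
      using B[OF that, of c] resc[OF that, of c] by (simp add: dat_def D_def algebra_simps)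
    moreover have "nrm (\<psi>c c 0) \<xi>0 - nrm (\<psi> 0) \<xi>0 = (real D)\<^sup>2 * (c * B' + c\<^sup>2 * (frob_norm A)\<^sup>2)"
      using B'[of c] nrmc[of c] by (simp add: nrm_def D_def algebra_simps)
    ultimately show ?thesis
      by (simp add: h_def \<alpha>_def \<beta>_def sum_distrib_left sum_distrib_right sum.distrib algebra_simps)
  qed
  have qn: "\<beta> = 0 \<and> \<alpha> \<ge> 0" by (rule quad_nonneg) (use hpos hq in auto)
  have wpos: "L2_norm M w > 0"
  proof (rule ccontr)
    assume "\<not> L2_norm M w > 0"
    then have "L2_norm M w = 0" using L2_norm_nonneg[of w] by simp
    then have "four w \<xi>0 = 0\<^sub>m (d \<xi>0) (d \<xi>0)" by (rule L2_norm_zero_four[OF wL2])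
    then have "A $$ (0,0) = 0\<^sub>m (d \<xi>0) (d \<xi>0) $$ (0,0)" using fw0 by simp
    then show False using Dpos by (simp add: A_def D_def)
  qed
  have diff: "L2_norm M (\<lambda>x. \<psi>c c j x - \<psi> j x) \<le> \<bar>c\<bar> * L2_norm M w" for c j
  proof (cases "j = 0")
    case True then show ?thesis by (simp add: \<psi>c_def L2_norm_scale)
  next
    case False then show ?thesis by (simp add: \<psi>c_def L2_norm_def)
  qed
  have pert: "dst \<Phi> \<psi> \<le> dst \<Phi> (\<psi>c c) + \<bar>c\<bar> * L2_norm M w" for c
    by (rule dd_perturb[OF q1]) (use \<Phi>_L2 \<psi>L2 \<psi>c_L2 diff in auto)
  show ?thesis
  proof (cases "\<alpha> > 0")
    case True
    show ?thesis
    proof (rule ccontr)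
      assume "\<not> dst \<Phi> \<psi> \<le> 0"
      then have g: "dst \<Phi> \<psi> > 0" by simp
      obtain s where s: "s > 0" "\<And>\<epsilon>. 0 < \<epsilon> \<Longrightarrow> \<epsilon> < s \<Longrightarrow> \<delta> \<epsilon> < dst \<Phi> \<psi> / 2"
        using delta_small[of "dst \<Phi> \<psi> / 2"] g by auto
      define c where "c = min (sqrt (s / (2 * \<alpha>))) (dst \<Phi> \<psi> / (2 * (L2_norm M w + 1)))"
      have c0: "c > 0" using s g True wpos by (simp add: c_def)
      have "c \<le> sqrt (s / (2 * \<alpha>))" by (simp add: c_def)
      then have "c\<^sup>2 \<le> s / (2 * \<alpha>)" using c0 s True
        by (metis less_eq_real_def real_sqrt_le_iff real_sqrt_pow2 zero_le_divide_iff zero_le_mult_iff zero_le_numeral power_mono)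
      then have "\<alpha> * c\<^sup>2 \<le> s / 2" using True by (simp add: field_simps)
      then have eps: "0 < \<alpha> * c\<^sup>2" "\<alpha> * c\<^sup>2 < s" using True c0 s by auto
      have "obj UNIV (\<psi>c c) l = OP UNIV + ereal (\<alpha> * c\<^sup>2)" using objc[of c] hq[of c] qn by simp
      then have "dst \<Phi> (\<psi>c c) \<le> \<delta> (\<alpha> * c\<^sup>2)" using CU[OF _ feasc] eps by simp
      also have "\<dots> < dst \<Phi> \<psi> / 2" using s(2)[OF eps] .
      finally have a1: "dst \<Phi> (\<psi>c c) < dst \<Phi> \<psi> / 2" .
      have "c \<le> dst \<Phi> \<psi> / (2 * (L2_norm M w + 1))" by (simp add: c_def)
      then have "c * (L2_norm M w + 1) \<le> dst \<Phi> \<psi> / 2" using wpos by (simp add: field_simps)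
      then have a2: "c * L2_norm M w < dst \<Phi> \<psi> / 2" using c0 by (simp add: algebra_simps)
      have "dst \<Phi> \<psi> \<le> dst \<Phi> (\<psi>c c) + \<bar>c\<bar> * L2_norm M w" by (rule pert)
      then show False using a1 a2 c0 by simp
    qed
  next
    case False
    then have a0: "\<alpha> = 0" using qn by simp
    have hz: "h c = 0" for c using hq qn a0 by simp
    define S where "S = (\<Sum>j<q. L2_norm M (\<Phi> j))"
    have bnd: "\<bar>c\<bar> * L2_norm M w - L2_norm M (\<psi> 0) - S \<le> \<delta> 0" for c
    proof -
      have "obj UNIV (\<psi>c c) l = OP UNIV + ereal 0" using objc[of c] hz by simp
      then have "dst \<Phi> (\<psi>c c) \<le> \<delta> 0" using CU[OF _ feasc] by simp
      moreover have "L2_norm M (\<psi>c c 0) - S \<le> dst \<Phi> (\<psi>c c)"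
        unfolding S_def by (rule dd_lower[OF q1 _ _ q0]) (use \<Phi>_L2 \<psi>c_L2 in auto)
      moreover have "\<bar>c\<bar> * L2_norm M w - L2_norm M (\<psi> 0) \<le> L2_norm M (\<psi>c c 0)"
      proof -
        have "L2_norm M (\<lambda>x. complex_of_real c * w x) - L2_norm M (\<lambda>x. - \<psi> 0 x)
            \<le> L2_norm M (\<lambda>x. - \<psi> 0 x - complex_of_real c * w x)"
          by (rule L2_diff_ge) (use L2_scale[OF wL2] L2_scale[OF \<psi>L2[OF q0], of "-1"] in auto)
        moreover have "L2_norm M (\<lambda>x. - \<psi> 0 x - complex_of_real c * w x) = L2_norm M (\<psi>c c 0)"
          using L2_norm_uminus[of "\<lambda>x. \<psi> 0 x + complex_of_real c * w x"] by (simp add: \<psi>c_def)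
        ultimately show ?thesis by (simp add: L2_norm_scale L2_norm_uminus)
      qed
      ultimately show ?thesis by simp
    qed
    define c where "c = (\<bar>\<delta> 0\<bar> + L2_norm M (\<psi> 0) + \<bar>S\<bar> + 1) / L2_norm M w"
    have "\<bar>c\<bar> * L2_norm M w = \<bar>\<delta> 0\<bar> + L2_norm M (\<psi> 0) + \<bar>S\<bar> + 1"
      using wpos L2_norm_nonneg[of "\<psi> 0"] by (simp add: c_def)
    then show ?thesis using bnd[of c] by simp
  qed
qed

end


context chg begin

definition efunF :: "'x set \<Rightarrow> ('x \<Rightarrow> complex mat) \<Rightarrow> 'g \<Rightarrow> complex" where
  "efunF F C x = (\<Sum>\<xi>\<in>F. efun \<xi> (C \<xi>) x)"

lemma efunF_L2: "finite F \<Longrightarrow> in_L2 M (efunF F C)"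
  unfolding efunF_def by (rule L2_sum) (auto intro: efun_L2)

lemma fourier_efunF:
  assumes F: "finite F" and C: "\<And>\<xi>. C \<xi> \<in> carrier_mat (d \<xi>) (d \<xi>)"
  shows "four (efunF F C) \<eta> = (if \<eta> \<in> F then C \<eta> else 0\<^sub>m (d \<eta>) (d \<eta>))"
  using F unfolding efunF_def
proof (induction F rule: finite_induct)
  case empty then show ?case using four_zero_fun by simp
next
  case (insert a F)
  have "four (\<lambda>x. \<Sum>\<xi>\<in>insert a F. efun \<xi> (C \<xi>) x) \<eta> = four (\<lambda>x. efun a (C a) x + (\<Sum>\<xi>\<in>F. efun \<xi> (C \<xi>) x)) \<eta>"
    using insert by simp
  also have "\<dots> = four (efun a (C a)) \<eta> + four (\<lambda>x. \<Sum>\<xi>\<in>F. efun \<xi> (C \<xi>) x) \<eta>"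
    by (rule fourier_add) (auto intro: efun_L2 L2_sum insert)
  also have "\<dots> = (if \<eta> = a then C a else 0\<^sub>m (d \<eta>) (d \<eta>)) + (if \<eta> \<in> F then C \<eta> else 0\<^sub>m (d \<eta>) (d \<eta>))"
    by (simp add: fourier_efun[OF C] insert.IH)
  also have "\<dots> = (if \<eta> \<in> insert a F then C \<eta> else 0\<^sub>m (d \<eta>) (d \<eta>))"
    using insert(2) C[of \<eta>] by (auto intro!: eq_matI)
  finally show ?case .
qed

end

context mn begin

lemma stepA:
  assumes FH: "F \<subseteq> H" and F: "finite F"
  shows "OP H \<le> OP UNIV + (\<Sum>i<n. enn2ereal (Yt i (- F)))"
proof -
  define \<psi> where "\<psi> j = efunF F (\<lambda>\<xi>. four (\<Phi> j) \<xi>)" for j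
  define l' where "l' i j = (\<lambda>\<xi>. if \<xi> \<in> H then l0 i j \<xi> else 0\<^sub>m (d \<xi>) (d \<xi>))" for i j
  have f\<psi>: "four (\<psi> j) \<xi> = (if \<xi> \<in> F then four (\<Phi> j) \<xi> else 0\<^sub>m (d \<xi>) (d \<xi>))" for j \<xi>
    unfolding \<psi>_def by (rule fourier_efunF[OF F]) simp
  have l'c: "l' i j \<xi> \<in> carrier_mat (d \<xi>) (d \<xi>)" if "i < n" "j < q" for i j \<xi>
    using feas_carrier[OF f\<Phi> that] by (simp add: l'_def)
  have feas: "feas H \<psi> l'"
    unfolding feasible_def
  proof (intro conjI allI impI)
    fix j assume j: "j < q"
    show "in_L2_H M d \<rho> H (\<psi> j)"
      using FH by (auto simp: in_L2_H_def \<psi>_def efunF_L2[OF F] f\<psi>[unfolded \<psi>_def])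
  next
    fix i j assume "i < n" "j < q"
    then show "block_op d H (l' i j)"
      unfolding l'_def by (rule block_op_restrict[OF feas_block[OF f\<Phi>]])
  qed
  have DSb: "DS H \<psi> l' i \<le> DS UNIV \<Phi> l0 i + Yt i (- F)" if i: "i < n" for i
  proof -
    have "DS H \<psi> l' i \<le> infsum (\<lambda>\<xi>. ennreal (dat \<Phi> l0 i \<xi>) + (if \<xi> \<in> - F then ennreal (Yd i \<xi>) else 0)) UNIV"
      unfolding DS_def
    proof (rule einfsum_mono)
      fix \<xi> assume \<xi>: "\<xi> \<in> H"
      show "ennreal (dat \<psi> l' i \<xi>) \<le> ennreal (dat \<Phi> l0 i \<xi>) + (if \<xi> \<in> - F then ennreal (Yd i \<xi>) else 0)"
      proof (cases "\<xi> \<in> F")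
        case True
        have "dat \<psi> l' i \<xi> = dat \<Phi> l0 i \<xi>"
          by (rule dat_cong) (use True \<xi> in \<open>simp_all add: f\<psi> l'_def\<close>)
        then show ?thesis using True by simp
      next
        case False
        have "dat \<psi> l' i \<xi> = Yd i \<xi>"
          by (rule dat_zero) (use False f\<psi> l'c i in auto)
        then show ?thesis using False by (simp add: add_increasing)
      qed
    qed simp
    also have "\<dots> = DS UNIV \<Phi> l0 i + infsum (\<lambda>\<xi>. if \<xi> \<in> - F then ennreal (Yd i \<xi>) else 0) UNIV"
      by (simp add: einfsum_add DS_def)
    also have "infsum (\<lambda>\<xi>. if \<xi> \<in> - F then ennreal (Yd i \<xi>) else 0) UNIV = Yt i (- F)"
      unfolding Yt_def by (rule infsum_cong_neutral) auto
    finally show ?thesis .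
  qed
  have PPb: "PP H l' i \<le> PP UNIV l0 i" if i: "i < n" for i
    unfolding PP_def
    by (rule sum_mono, rule plus_norm_restrict) (use feas_block[OF f\<Phi> i] in \<open>auto simp: l'_def\<close>)
  have NSb: "ereal (\<mu> j) * enn2ereal (NS H (\<psi> j)) \<le> ereal (\<mu> j) * enn2ereal (NS UNIV (\<Phi> j))" if j: "j < q" for j
  proof (cases "\<mu> j \<le> 0")
    case True
    have "NS H (\<psi> j) = 0"
      unfolding NS_def by (rule einfsum_zero) (simp add: nrm_def f\<psi> scale_zero_four[OF j True] frob_zero)
    then show ?thesis using scale_zero_NS[OF j True] by simp
  next
    case False
    have "NS H (\<psi> j) \<le> NS UNIV (\<Phi> j)"
      unfolding NS_def by (rule einfsum_mono) (auto simp: nrm_def f\<psi> frob_zero)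
    then show ?thesis using False by (intro ereal_mult_left_mono enn2ereal_mono) auto
  qed
  have "OP H \<le> obj H \<psi> l'" by (rule OP_le[OF feas])
  also have "\<dots> \<le> (\<Sum>i<n. (enn2ereal (DS UNIV \<Phi> l0 i) + ereal lam * PP UNIV l0 i) + enn2ereal (Yt i (- F)))
                 + (\<Sum>j<q. ereal (\<mu> j) * enn2ereal (NS UNIV (\<Phi> j)))"
    unfolding obj_eq
  proof (rule add_mono; rule sum_mono)
    fix i assume i: "i \<in> {..<n}"
    have "enn2ereal (DS H \<psi> l' i) \<le> enn2ereal (DS UNIV \<Phi> l0 i) + enn2ereal (Yt i (- F))"
      using enn2ereal_mono[OF DSb] i by (simp add: enn2ereal_add)
    moreover have "ereal lam * PP H l' i \<le> ereal lam * PP UNIV l0 i"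
      using PPb i lam0 by (intro ereal_mult_left_mono) auto
    ultimately show "enn2ereal (DS H \<psi> l' i) + ereal lam * PP H l' i
        \<le> enn2ereal (DS UNIV \<Phi> l0 i) + ereal lam * PP UNIV l0 i + enn2ereal (Yt i (- F))"
      by (metis (no_types, lifting) add.commute add.left_commute add_mono)
  next
    fix j assume "j \<in> {..<q}" then show "ereal (\<mu> j) * enn2ereal (NS H (\<psi> j)) \<le> ereal (\<mu> j) * enn2ereal (NS UNIV (\<Phi> j))"
      using NSb by simp
  qed
  also have "\<dots> = obj UNIV \<Phi> l0 + (\<Sum>i<n. enn2ereal (Yt i (- F)))"
    unfolding obj_eq sum.distrib by (simp add: ac_simps)
  finally show ?thesis using o\<Phi> by simp
qed

lemma exists_z:
  assumes b: "block_op d H l" and \<eta>: "\<eta> > 0"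
  shows "\<exists>z. block_op d UNIV z \<and> (\<forall>\<xi>\<in>H. z \<xi> = l \<xi>) \<and> atomic_norm d \<rho> z \<le> plus_norm d \<rho> H l + ereal \<eta>"
proof (cases "plus_norm d \<rho> H l < \<infinity>")
  case True
  then show ?thesis using plus_norm_approx[OF True \<eta>] by (auto intro: less_imp_le)
next
  case False
  then have "plus_norm d \<rho> H l = \<infinity>" by (simp add: top.not_eq_extremum)
  then show ?thesis using block_op_UNIV[OF b] by (intro exI[of _ l]) auto
qed

lemma stepB:
  assumes fk: "feas H \<psi> l" and \<eta>: "\<eta> > 0"
  shows "\<exists>z. feas UNIV \<psi> z \<and> obj UNIV \<psi> z \<le> obj H \<psi> l + (\<Sum>i<n. enn2ereal (Yt i (- H))) + ereal (real n * (lam * (real q * \<eta>)))"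
proof -
  define P where "P i j z \<longleftrightarrow> block_op d UNIV z \<and> (\<forall>\<xi>\<in>H. z \<xi> = l i j \<xi>) \<and> atomic_norm d \<rho> z \<le> plus_norm d \<rho> H (l i j) + ereal \<eta>" for i j z
  define Z where "Z i j = (SOME z. P i j z)" for i j
  have PZ: "P i j (Z i j)" if "i < n" "j < q" for i j
  proof -
    have "\<exists>z. P i j z" using exists_z[OF feas_block[OF fk that] \<eta>] by (simp add: P_def)
    then show ?thesis unfolding Z_def by (rule someI_ex)
  qed
  have feas: "feas UNIV \<psi> Z"
    using fk PZ by (auto simp: feasible_def in_L2_H_def P_def)
  have Zc: "Z i j \<xi> \<in> carrier_mat (d \<xi>) (d \<xi>)" if "i < n" "j < q" for i j \<xi>
    using PZ[OF that] by (simp add: P_def block_op_def)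
  have DSe: "DS UNIV \<psi> Z i = DS H \<psi> l i + Yt i (- H)" if i: "i < n" for i
  proof -
    have "DS UNIV \<psi> Z i = infsum (\<lambda>\<xi>. ennreal (dat \<psi> Z i \<xi>)) H + infsum (\<lambda>\<xi>. ennreal (dat \<psi> Z i \<xi>)) (- H)"
      unfolding DS_def by (rule einfsum_split)
    also have "infsum (\<lambda>\<xi>. ennreal (dat \<psi> Z i \<xi>)) H = DS H \<psi> l i"
      unfolding DS_def
      by (rule infsum_cong, rule arg_cong[where f=ennreal], rule dat_cong) (use PZ[OF i] in \<open>auto simp: P_def\<close>)
    also have "infsum (\<lambda>\<xi>. ennreal (dat \<psi> Z i \<xi>)) (- H) = Yt i (- H)"
      unfolding Yt_def
      by (rule infsum_cong, rule arg_cong[where f=ennreal], rule dat_zero) (use feas_out[OF fk] Zc[OF i] in auto)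
    finally show ?thesis .
  qed
  have NSe: "NS UNIV (\<psi> j) = NS H (\<psi> j)" if j: "j < q" for j
  proof -
    have "NS UNIV (\<psi> j) = NS H (\<psi> j) + infsum (\<lambda>\<xi>. ennreal (nrm (\<psi> j) \<xi>)) (- H)"
      unfolding NS_def by (rule einfsum_split)
    also have "infsum (\<lambda>\<xi>. ennreal (nrm (\<psi> j) \<xi>)) (- H) = 0"
      by (rule einfsum_zero) (simp add: nrm_def feas_out[OF fk j] frob_zero)
    finally show ?thesis by simp
  qed
  have PPb: "PP UNIV Z i \<le> PP H l i + ereal (real q * \<eta>)" if i: "i < n" for i
  proof -
    have "PP UNIV Z i \<le> (\<Sum>j<q. plus_norm d \<rho> H (l i j) + ereal \<eta>)"
      unfolding PP_def
    proof (rule sum_mono)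
      fix j assume "j \<in> {..<q}"
      then have P: "P i j (Z i j)" using PZ i by simp
      have "plus_norm d \<rho> UNIV (Z i j) \<le> atomic_norm d \<rho> (Z i j)"
        by (rule plus_norm_le_atomic) (use P in \<open>auto simp: P_def\<close>)
      also have "\<dots> \<le> plus_norm d \<rho> H (l i j) + ereal \<eta>" using P by (simp add: P_def)
      finally show "plus_norm d \<rho> UNIV (Z i j) \<le> plus_norm d \<rho> H (l i j) + ereal \<eta>" .
    qed
    also have "\<dots> = PP H l i + ereal (real q * \<eta>)" by (simp add: PP_def sum.distrib)
    finally show ?thesis .
  qed
  have "obj UNIV \<psi> Z \<le> (\<Sum>i<n. (enn2ereal (DS H \<psi> l i) + ereal lam * PP H l i) + (enn2ereal (Yt i (- H)) + ereal (lam * (real q * \<eta>))))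
      + (\<Sum>j<q. ereal (\<mu> j) * enn2ereal (NS H (\<psi> j)))"
    unfolding obj_eq
  proof (rule add_mono; rule sum_mono)
    fix i assume "i \<in> {..<n}"
    then have i: "i < n" by simp
    have "ereal lam * PP UNIV Z i \<le> ereal lam * (PP H l i + ereal (real q * \<eta>))"
      using PPb[OF i] lam0 by (intro ereal_mult_left_mono) auto
    also have "\<dots> = ereal lam * PP H l i + ereal (lam * (real q * \<eta>))"
      using PP_nonneg[of H l i] \<eta> by (simp add: ereal_right_distrib)
    finally have "ereal lam * PP UNIV Z i \<le> ereal lam * PP H l i + ereal (lam * (real q * \<eta>))" .
    then have "(enn2ereal (DS H \<psi> l i) + enn2ereal (Yt i (- H))) + ereal lam * PP UNIV Z i
        \<le> (enn2ereal (DS H \<psi> l i) + enn2ereal (Yt i (- H))) + (ereal lam * PP H l i + ereal (lam * (real q * \<eta>)))"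
      by (rule add_left_mono)
    moreover have "enn2ereal (DS UNIV \<psi> Z i) = enn2ereal (DS H \<psi> l i) + enn2ereal (Yt i (- H))"
      using DSe[OF i] by (simp add: enn2ereal_add)
    ultimately show "enn2ereal (DS UNIV \<psi> Z i) + ereal lam * PP UNIV Z i
        \<le> enn2ereal (DS H \<psi> l i) + ereal lam * PP H l i + (enn2ereal (Yt i (- H)) + ereal (lam * (real q * \<eta>)))"
      by (simp add: ac_simps)
  next
    fix j assume "j \<in> {..<q}" then show "ereal (\<mu> j) * enn2ereal (NS UNIV (\<psi> j)) \<le> ereal (\<mu> j) * enn2ereal (NS H (\<psi> j))"
      using NSe by simp
  qed
  also have "\<dots> = obj H \<psi> l + (\<Sum>i<n. enn2ereal (Yt i (- H))) + ereal (real n * (lam * (real q * \<eta>)))"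
    unfolding obj_eq sum.distrib by (simp add: ac_simps)
  finally show ?thesis using feas by blast
qed

end


context mn begin

lemma eventually_sub:
  assumes Hmono: "\<And>k. H k \<subseteq> H (Suc k)" and Hun: "(\<Union>k. H k) = UNIV" and F: "finite F"
  shows "\<exists>K. \<forall>k\<ge>K. F \<subseteq> H k"
  using F
proof (induction F rule: finite_induct)
  case empty then show ?case by simp
next
  case (insert a F)
  obtain K where K: "\<forall>k\<ge>K. F \<subseteq> H k" using insert by blast
  obtain Ka where Ka: "a \<in> H Ka" using Hun by blast
  have mono: "k \<le> k' \<Longrightarrow> H k \<subseteq> H k'" for k k' using lift_Suc_mono_le[of H, OF Hmono] by blast
  have "\<forall>k\<ge>max K Ka. insert a F \<subseteq> H k" using K Ka mono by (meson insert_subset max.boundedE subsetD)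
  then show ?case by blast
qed

theorem main_conv:
  fixes H :: "nat \<Rightarrow> 'x set" and \<Phi>H :: "nat \<Rightarrow> nat \<Rightarrow> 'g \<Rightarrow> complex" and lk :: "nat \<Rightarrow> nat \<Rightarrow> nat \<Rightarrow> 'x \<Rightarrow> complex mat"
  assumes Hmono: "\<And>k. H k \<subseteq> H (Suc k)" and Hun: "(\<Union>k. H k) = UNIV"
    and fk: "\<And>k. feas (H k) (\<Phi>H k) (lk k)" and ok: "\<And>k. obj (H k) (\<Phi>H k) (lk k) = OP (H k)"
  shows "(\<lambda>k. dst (\<Phi>H k) \<Phi>) \<longlonglongrightarrow> 0"
proof -
  have L2k: "j < q \<Longrightarrow> in_L2 M (\<Phi>H k j)" for k j using feas_L2[OF fk] .
  have sym: "dst (\<Phi>H k) \<Phi> = dst \<Phi> (\<Phi>H k)" for k by (rule dd_sym[OF q1]) (use L2k \<Phi>_L2 in auto)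
  have nn: "dst \<Phi> (\<Phi>H k) \<ge> 0" for k by (rule dd_nonneg[OF q1])
  show ?thesis
  proof (cases "OP UNIV = \<infinity>")
    case True
    have le0: "dst \<Phi> (\<Phi>H k) \<le> 0" for k
    proof (rule le_delta_lim)
      fix \<epsilon> :: real assume \<epsilon>: "\<epsilon> > 0"
      define z where "z = (\<lambda>(i::nat) (j::nat) (\<xi>::'x). 0\<^sub>m (d \<xi>) (d \<xi>) :: complex mat)"
      have fz: "feas UNIV (\<Phi>H k) z"
        using L2k by (auto simp: feasible_def in_L2_H_def z_def block_op_zero)
      have "obj UNIV (\<Phi>H k) z = OP UNIV + ereal \<epsilon>" using OP_le[OF fz] True by simp
      then show "dst \<Phi> (\<Phi>H k) \<le> \<delta> \<epsilon>" using CU[OF _ fz] \<epsilon> by simp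
    qed
    have "dst (\<Phi>H k) \<Phi> = 0" for k using le0[of k] nn[of k] sym[of k] by linarith
    then show ?thesis by simp
  next
    case False
    note Ofin = False
    have O0: "OP UNIV \<ge> 0" by (rule OP_nonneg)
    obtain Oval where Oval: "OP UNIV = ereal Oval" using Ofin O0 by (cases "OP UNIV") auto
    have Ytf: "i < n \<Longrightarrow> Yt i UNIV < \<infinity>" for i by (rule Yt_fin[OF Ofin])
    define c where "c k = real n * (lam * (real q * (1 / real (Suc k))))" for k
    have "\<forall>k. \<exists>z. feas UNIV (\<Phi>H k) z \<and> obj UNIV (\<Phi>H k) z \<le> OP (H k) + (\<Sum>i<n. enn2ereal (Yt i (- H k))) + ereal (c k)"
    proof
      fix k
      have "(1::real) / real (Suc k) > 0" by simp
      from stepB[OF fk this] show "\<exists>z. feas UNIV (\<Phi>H k) z \<and> obj UNIV (\<Phi>H k) z \<le> OP (H k) + (\<Sum>i<n. enn2ereal (Yt i (- H k))) + ereal (c k)"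
        unfolding ok c_def .
    qed
    from choice[OF this] obtain z where z0: "\<forall>k. feas UNIV (\<Phi>H k) (z k) \<and> obj UNIV (\<Phi>H k) (z k) \<le> OP (H k) + (\<Sum>i<n. enn2ereal (Yt i (- H k))) + ereal (c k)"
      by (rule exE)
    have z: "\<And>k. feas UNIV (\<Phi>H k) (z k)"
      "\<And>k. obj UNIV (\<Phi>H k) (z k) \<le> OP (H k) + (\<Sum>i<n. enn2ereal (Yt i (- H k))) + ereal (c k)"
      using z0 by blast+
    have c0: "c k \<ge> 0" for k using lam0 by (simp add: c_def)
    have upper: "obj UNIV (\<Phi>H k) (z k) \<le> OP UNIV + (\<Sum>i<n. enn2ereal (Yt i (- F))) + (\<Sum>i<n. enn2ereal (Yt i (- H k))) + ereal (c k)"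
      if "F \<subseteq> H k" "finite F" for F k
    proof -
      have "OP (H k) \<le> OP UNIV + (\<Sum>i<n. enn2ereal (Yt i (- F)))" by (rule stepA[OF that])
      then have "OP (H k) + (\<Sum>i<n. enn2ereal (Yt i (- H k))) + ereal (c k)
          \<le> OP UNIV + (\<Sum>i<n. enn2ereal (Yt i (- F))) + (\<Sum>i<n. enn2ereal (Yt i (- H k))) + ereal (c k)"
        by (intro add_right_mono)
      then show ?thesis using z(2)[of k] by simp
    qed
    have Ytle: "Yt i A \<le> Yt i UNIV" for i A unfolding Yt_def by (rule einfsum_mono) auto
    have Ytfin: "enn2ereal (Yt i A) = ereal (enn2real (Yt i A))" if "i < n" for i A
    proof -
      have "Yt i A < \<infinity>" using Ytle[of i A] Ytf[OF that] by (simp add: le_less_trans)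
      then have "Yt i A = ennreal (enn2real (Yt i A))" by (simp add: infinity_ennreal_def)
      then show ?thesis by (metis enn2ereal_ennreal enn2real_nonneg)
    qed
    have "\<forall>k. \<exists>r. obj UNIV (\<Phi>H k) (z k) = OP UNIV + ereal r \<and> r \<ge> 0"
    proof
      fix k
      have lo: "OP UNIV \<le> obj UNIV (\<Phi>H k) (z k)" by (rule OP_le[OF z(1)])
      have "obj UNIV (\<Phi>H k) (z k) \<le> OP UNIV + (\<Sum>i<n. enn2ereal (Yt i (- {}))) + (\<Sum>i<n. enn2ereal (Yt i (- H k))) + ereal (c k)"
        by (rule upper) auto
      also have "\<dots> = ereal (Oval + (\<Sum>i<n. enn2real (Yt i UNIV)) + (\<Sum>i<n. enn2real (Yt i (- H k))) + c k)"
        using Ytfin Oval by simp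
      finally have up: "obj UNIV (\<Phi>H k) (z k) < \<infinity>" using le_less_trans by fastforce
      have "obj UNIV (\<Phi>H k) (z k) \<noteq> - \<infinity>" using lo Oval by auto
      then obtain r where r: "obj UNIV (\<Phi>H k) (z k) = ereal r" using up by (cases "obj UNIV (\<Phi>H k) (z k)") auto
      show "\<exists>r. obj UNIV (\<Phi>H k) (z k) = OP UNIV + ereal r \<and> r \<ge> 0"
        using lo r Oval by (intro exI[of _ "r - Oval"]) auto
    qed
    from choice[OF this] obtain \<epsilon> where \<epsilon>0: "\<forall>k. obj UNIV (\<Phi>H k) (z k) = OP UNIV + ereal (\<epsilon> k) \<and> \<epsilon> k \<ge> 0"
      by (rule exE)
    have \<epsilon>: "\<And>k. obj UNIV (\<Phi>H k) (z k) = OP UNIV + ereal (\<epsilon> k)" "\<And>k. \<epsilon> k \<ge> 0" using \<epsilon>0 by blast+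
    have dbound: "dst \<Phi> (\<Phi>H k) \<le> (if \<epsilon> k > 0 then \<delta> (\<epsilon> k) else 0)" for k
    proof (cases "\<epsilon> k > 0")
      case True then show ?thesis using CU[OF _ z(1) \<epsilon>(1)] by simp
    next
      case False
      then have "\<epsilon> k = 0" using \<epsilon>(2)[of k] by simp
      then have "obj UNIV (\<Phi>H k) (z k) = OP UNIV" using \<epsilon>(1)[of k] by simp
      then show ?thesis using lemma_Z[OF z(1) _ Ofin] \<open>\<epsilon> k = 0\<close> by simp
    qed
    show ?thesis
    proof (rule LIMSEQ_I)
      fix \<gamma> :: real assume \<gamma>: "\<gamma> > 0"
      obtain s where s: "s > 0" "\<And>\<epsilon>. 0 < \<epsilon> \<Longrightarrow> \<epsilon> < s \<Longrightarrow> \<delta> \<epsilon> < \<gamma>" using delta_small[OF \<gamma>] by auto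
      define ee where "ee = s / (4 * (real n + 1))"
      have ee: "ee > 0" using s by (simp add: ee_def)
      have "\<forall>i. \<exists>F. i < n \<longrightarrow> finite F \<and> Yt i (- F) < ennreal ee"
        using einfsum_tail[OF Ytf[unfolded Yt_def] ee] by (simp add: Yt_def)
      from choice[OF this] obtain FF where FF0: "\<forall>i. i < n \<longrightarrow> finite (FF i) \<and> Yt i (- FF i) < ennreal ee"
        by (rule exE)
      have FF: "\<And>i. i < n \<Longrightarrow> finite (FF i)" "\<And>i. i < n \<Longrightarrow> Yt i (- FF i) < ennreal ee" using FF0 by blast+
      define F where "F = (\<Union>i<n. FF i)"
      have Ff: "finite F" using FF(1) by (simp add: F_def)
      have YtF: "Yt i A \<le> ennreal ee" if "i < n" "A \<subseteq> - F" for i A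
      proof -
        have "A \<subseteq> - FF i" using that by (auto simp: F_def)
        then have "Yt i A \<le> Yt i (- FF i)" unfolding Yt_def by (rule einfsum_mono) auto
        then show ?thesis using FF(2)[OF that(1)] by simp
      qed
      have sumE: "(\<Sum>i<n. enn2ereal (Yt i A)) \<le> ereal (real n * ee)" if "A \<subseteq> - F" for A
      proof -
        have "(\<Sum>i<n. enn2ereal (Yt i A)) \<le> (\<Sum>i<n. ereal ee)"
          by (rule sum_mono) (use YtF[OF _ that] ee enn2ereal_mono in \<open>fastforce\<close>)
        then show ?thesis by simp
      qed
      obtain K1 where K1: "\<And>k. k \<ge> K1 \<Longrightarrow> F \<subseteq> H k" using eventually_sub[OF Hmono Hun Ff] by blast
      obtain K2 :: nat where K2: "real K2 > 2 * real n * lam * real q / s" using reals_Archimedean2 by blast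
      show "\<exists>no. \<forall>k\<ge>no. norm (dst (\<Phi>H k) \<Phi> - 0) < \<gamma>"
      proof (intro exI allI impI)
        fix k assume k: "k \<ge> max K1 K2"
        have FHk: "F \<subseteq> H k" using K1 k by simp
        have "ereal (Oval + \<epsilon> k) = obj UNIV (\<Phi>H k) (z k)" using \<epsilon>(1)[of k] Oval by simp
        also have "\<dots> \<le> OP UNIV + (\<Sum>i<n. enn2ereal (Yt i (- F))) + (\<Sum>i<n. enn2ereal (Yt i (- H k))) + ereal (c k)"
          by (rule upper[OF FHk Ff])
        also have "\<dots> \<le> ereal Oval + ereal (real n * ee) + ereal (real n * ee) + ereal (c k)"
          unfolding Oval using FHk by (intro add_mono sumE order_refl) auto
        finally have "\<epsilon> k \<le> 2 * (real n * ee) + c k" by (simp add: mult.commute)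
        moreover have "2 * (real n * ee) < s / 2"
          using s by (simp add: ee_def field_simps)
        moreover have "c k < s / 2"
        proof -
          have "real (Suc k) > 2 * real n * lam * real q / s" using K2 k by simp
          then have "2 * real n * lam * real q < s * real (Suc k)" using s by (simp add: field_simps)
          then show ?thesis using s by (simp add: c_def field_simps)
        qed
        ultimately have es: "\<epsilon> k < s" by simp
        have "dst \<Phi> (\<Phi>H k) < \<gamma>"
        proof (cases "\<epsilon> k > 0")
          case True then show ?thesis using dbound[of k] s(2)[OF True es] by simp
        next
          case False then show ?thesis using dbound[of k] \<gamma> by simp
        qed
        then show "norm (dst (\<Phi>H k) \<Phi> - 0) < \<gamma>" using nn[of k] sym[of k] by simp
      qed
    qed
  qed
qed

end


theorem theorem3:
  fixes gmul :: "'g::t2_space \<Rightarrow> 'g \<Rightarrow> 'g" and ginv :: "'g \<Rightarrow> 'g" and e :: 'g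
    and M :: "'g measure"
    and d :: "'x \<Rightarrow> nat" and \<rho> :: "'x \<Rightarrow> 'g \<Rightarrow> complex mat"
    and n q :: nat and y :: "nat \<Rightarrow> 'g \<Rightarrow> real" and lam :: real and \<mu> :: "nat \<Rightarrow> real"
    and \<Phi> :: "nat \<Rightarrow> 'g \<Rightarrow> complex"
    and H :: "nat \<Rightarrow> 'x set" and \<Phi>H :: "nat \<Rightarrow> nat \<Rightarrow> 'g \<Rightarrow> complex"
  assumes "compact_hausdorff_group gmul ginv e"
    and "normalized_haar gmul M"
    and "complete_dual gmul d \<rho>"
    and "\<forall>i<n. y i \<in> borel_measurable M \<and> integrable M (\<lambda>x. (y i x)\<^sup>2)"
    and "q \<ge> 1" and "lam \<ge> 0"
    and "optimal_dictionary M d \<rho> n y q lam \<mu> UNIV \<Phi>"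
    and "canonically_unique gmul ginv M d \<rho> n y q lam \<mu> \<Phi>"
    and "\<And>k. H k \<subseteq> H (Suc k)"
    and "(\<Union>k. H k) = UNIV"
    and "\<And>k. optimal_dictionary M d \<rho> n y q lam \<mu> (H k) (\<Phi>H k)"
  shows "(\<lambda>k. dict_dist gmul ginv M q (\<Phi>H k) \<Phi>) \<longlonglongrightarrow> 0"
proof -
  interpret prb gmul ginv e M d \<rho> n q y lam \<mu>
    by unfold_locales (use assms(1-6) in auto)
  obtain l0 where l0: "feasible M d \<rho> n q UNIV \<Phi> l0" "objective M d \<rho> n y q lam \<mu> UNIV \<Phi> l0 = OPT M d \<rho> n y q lam \<mu> UNIV"
    using assms(7) by (auto simp: optimal_dictionary_def)
  obtain \<delta> where \<delta>: "(\<delta> \<longlongrightarrow> 0) (at_right 0)"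
    "\<forall>\<epsilon>\<ge>0. \<forall>\<psi> l. feasible M d \<rho> n q UNIV \<psi> l \<and>
            objective M d \<rho> n y q lam \<mu> UNIV \<psi> l = OPT M d \<rho> n y q lam \<mu> UNIV + ereal \<epsilon>
            \<longrightarrow> dict_dist gmul ginv M q \<Phi> \<psi> \<le> \<delta> \<epsilon>"
    using assms(8) by (auto simp: canonically_unique_def)
  interpret mn gmul ginv e M d \<rho> n q y lam \<mu> \<Phi> l0 \<delta>
    by unfold_locales (use l0 \<delta> in auto)
  have "\<forall>k. \<exists>l. feasible M d \<rho> n q (H k) (\<Phi>H k) l \<and> objective M d \<rho> n y q lam \<mu> (H k) (\<Phi>H k) l = OPT M d \<rho> n y q lam \<mu> (H k)"
    using assms(11) by (simp add: optimal_dictionary_def)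
  from choice[OF this] obtain lk where lk: "\<forall>k. feasible M d \<rho> n q (H k) (\<Phi>H k) (lk k) \<and> objective M d \<rho> n y q lam \<mu> (H k) (\<Phi>H k) (lk k) = OPT M d \<rho> n y q lam \<mu> (H k)"
    by (rule exE)
  show ?thesis
    by (rule main_conv[OF assms(9) assms(10)]) (use lk in auto)
qed

end
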